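(* Let $n\ge 2k$. The map $\beta\mapsto\phi(\beta)|_{eM}$ restricted to $bB_{k,k}(n)b$ is an algebra isomorphism from $bB_{k,k}(n)b$ onto $\mathrm{End}_{\mathfrak g}(eM)\cong\mathrm{End}_{\mathfrak{sl}_n}(\mathfrak{sl}_n^{\otimes k})$. Moreover, the set of all elements $bdb$, as $d$ ranges over all walled Brauer diagrams in $B_{k,k}(n)$ with no forbidden pairs, is a basis of $bB_{k,k}(n)b$.
   Context: $\mathfrak g=\mathfrak{gl}_n(\mathbb{C})$; $V=\mathbb{C}^n$ (column vectors, basis $v_1,\dots,v_n$), $V^*$ row vectors (dual basis $v_1^*,\dots,v_n^*$), $\mathfrak g$ acting on $V$ by left multiplication and on $V^*$ by $w^*\mapsto-w^*x$; $M=V^{\otimes k}\otimes(V^* )^{\otimes k}$ with the tensor product action. For $1\le i,j\le k$, $c_{i,j}:M\to M$ is $c_{i,j}(u_1\otimes\cdots\otimes u_k\otimes w_1^*\otimes\cdots\otimes w_k^* )=(w_j^*u_i)\sum_{\ell=1}^n(\text{same tensor with }u_i\text{ replaced by }v_\ell\text{ and }w_j^*\text{ by }v_\ell^* )$; $p_i=\frac1nc_{i,i}$; $e=(\mathrm{id}-p_1)\cdots(\mathrm{id}-p_k)$; $eM\cong\mathfrak{sl}_n^{\otimes k}$ as $\mathfrak g$-modules ($\mathfrak g$ acting adjointly on $\mathfrak{sl}_n$), via $V\otimes V^*\cong\mathfrak{gl}_n$, $u\otimes w^*\mapsto uw^*$. Walled Brauer algebra $B_{k,k}(n)$: the vector space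 with basis all diagrams consisting of a top row and a bottom row of $2k$ vertices each, positioned $1,\dots,2k$, with a wall between positions $k$ and $k+1$, and a set of edges pairing all $4k$ vertices, such that every edge joining two vertices of the same row (horizontal edge) joins a vertex in positions $1,\dots,k$ to one in positions $k+1,\dots,2k$, and every edge joining the two rows (vertical edge) joins vertices on the same side of the wall. The product $d_1d_2$ is obtained by placing $d_1$ above $d_2$, identifying the bottom row of $d_1$ with the top row of $d_2$, following paths, deleting the closed cycles formed in the middle, and multiplying by $n^{\#\text{cycles}}$. The representation $\phi:B_{k,k}(n)\to\mathrm{End}(M)$ is defined by $\phi(d)(v_{a_1}\otimes\cdots\otimes v_{a_k}\otimes v^*_{a_{k+1}}\otimes\cdots\otimes v^*_{a_{2k}})=\sum_{b}\delta_d(a,b)\,v_{b_1}\otimes\cdots\otimes v_{b_k}\otimes v^*_{b_{k+1}}\otimes\cdots\otimes v^*_{b_{2k}}$, summing over $b\in\{1,\dots,n\}^{2k}$, where $\delta_d(a,b)=1$ if, labelling bottom vertex $i$ by $a_i$ and top vertex $i$ by $b_i$, every edge of $d$ joins two equal labels, and $0$ otherwise. Its image lies in $\mathrm{End}_{\mathfrak g}(M)$. For $1\le j\le k$, $c_j$ is $\frac1n$ times the diagram whose horizontal edges are top $j$–top $k+j$ and bottom $j$–bottom $k+j$, all other vertices being joined vertically to the vertex directly below; so $\phi(c_j)=p_j$. Let $b=\prod_{j=1}^k(1-c_j)$ (with $1$ the identity diagram), so $\phi(b)=e$ and $\phi(bB_{k,k}(n)b)$ preserves $eM$. A diagram $d$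 has a forbidden pair if for some $i\in\{1,\dots,k\}$ vertex $i$ is joined to vertex $k+i$ in the top row or in the bottom row of $d$. *)

theory Defs
  imports Complex_Main "HOL-Library.FuncSet"
begin

text \<open>Vertices: (True,i) is top vertex at position i, (False,i) bottom vertex at
position i; positions are 0-indexed, 0..k-1 left of the wall, k..2k-1 right of it.
A diagram is its partner function (identity outside the vertex set).\<close>

type_synonym vtx = "bool \<times> nat"
type_synonym diagram = "vtx \<Rightarrow> vtx"

definition verts :: "nat \<Rightarrow> vtx set" where
  "verts k = UNIV \<times> {..<2*k}"

definition is_wb :: "nat \<Rightarrow> diagram \<Rightarrow> bool" where
  "is_wb k d \<longleftrightarrow>
     (\<forall>v\<in>verts k. d v \<in> verts k \<and> d v \<noteq> v \<and> d (d v) = v \<and>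
        (fst (d v) = fst v \<longrightarrow> (snd v < k \<longleftrightarrow> k \<le> snd (d v))) \<and>
        (fst (d v) \<noteq> fst v \<longrightarrow> (snd v < k \<longleftrightarrow> snd (d v) < k))) \<and>
     (\<forall>v. v \<notin> verts k \<longrightarrow> d v = v)"

definition WB :: "nat \<Rightarrow> diagram set" where
  "WB k = {d. is_wb k d}"

text \<open>Stacking d1 above d2: level 0 = top row of d1, level 1 = middle
(bottom of d1 = top of d2), level 2 = bottom row of d2.\<close>

definition stack_edges :: "nat \<Rightarrow> diagram \<Rightarrow> diagram \<Rightarrow> ((nat \<times> nat) \<times> (nat \<times> nat)) set" where
  "stack_edges k d1 d2 =
     {((if fst v then 0 else 1, snd v), (if fst (d1 v) then 0 else 1, snd (d1 v))) | v. v \<in> verts k}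
   \<union> {((if fst v then 1 else 2, snd v), (if fst (d2 v) then 1 else 2, snd (d2 v))) | v. v \<in> verts k}"

definition stack_conn :: "nat \<Rightarrow> diagram \<Rightarrow> diagram \<Rightarrow> ((nat \<times> nat) \<times> (nat \<times> nat)) set" where
  "stack_conn k d1 d2 = (stack_edges k d1 d2 \<union> (stack_edges k d1 d2)\<inverse>)\<^sup>*"

definition lift :: "vtx \<Rightarrow> nat \<times> nat" where
  "lift v = (if fst v then 0 else 2, snd v)"

definition compose :: "nat \<Rightarrow> diagram \<Rightarrow> diagram \<Rightarrow> diagram" where
  "compose k d1 d2 v =
     (if v \<in> verts k then (THE w. w \<in> verts k \<and> w \<noteq> v \<and> (lift v, lift w) \<in> stack_conn k d1 d2)
      else v)"

text \<open>Number of closed cycles: connected components lying entirely in the middle row.\<close>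
definition cycles :: "nat \<Rightarrow> diagram \<Rightarrow> diagram \<Rightarrow> nat" where
  "cycles k d1 d2 = card {C. \<exists>i<2*k. C = stack_conn k d1 d2 `` {(1, i)} \<and> C \<subseteq> {1} \<times> {..<2*k}}"

section \<open>The walled Brauer algebra B_{k,k}(n) (elements = coefficient functions on diagrams)\<close>

definition Alg :: "nat \<Rightarrow> (diagram \<Rightarrow> complex) set" where
  "Alg k = {x. \<forall>d. d \<notin> WB k \<longrightarrow> x d = 0}"

definition dbas :: "diagram \<Rightarrow> diagram \<Rightarrow> complex" where
  "dbas d = (\<lambda>d'. if d' = d then 1 else 0)"

definition dmul :: "nat \<Rightarrow> nat \<Rightarrow> (diagram \<Rightarrow> complex) \<Rightarrow> (diagram \<Rightarrow> complex) \<Rightarrow> diagram \<Rightarrow> complex" where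
  "dmul k n x y = (\<lambda>d. \<Sum>d1\<in>WB k. \<Sum>d2\<in>WB k.
      if compose k d1 d2 = d then x d1 * y d2 * of_nat n ^ cycles k d1 d2 else 0)"

definition idd :: "nat \<Rightarrow> diagram" where
  "idd k v = (if v \<in> verts k then (\<not> fst v, snd v) else v)"

text \<open>The diagram underlying c_j (j 0-indexed, 0 \<le> j < k).\<close>
definition cdiag :: "nat \<Rightarrow> nat \<Rightarrow> diagram" where
  "cdiag k j v = (if v \<in> verts k then
      (if snd v = j then (fst v, k + j) else if snd v = k + j then (fst v, j) else (\<not> fst v, snd v))
    else v)"

definition c_elem :: "nat \<Rightarrow> nat \<Rightarrow> nat \<Rightarrow> diagram \<Rightarrow> complex" where
  "c_elem k n j = (\<lambda>d. if d = cdiag k j then 1 / of_nat n else 0)"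

fun bprod :: "nat \<Rightarrow> nat \<Rightarrow> nat \<Rightarrow> diagram \<Rightarrow> complex" where
  "bprod k n 0 = dbas (idd k)"
| "bprod k n (Suc j) = dmul k n (bprod k n j) (\<lambda>d. dbas (idd k) d - c_elem k n j d)"

definition b_elem :: "nat \<Rightarrow> nat \<Rightarrow> diagram \<Rightarrow> complex" where
  "b_elem k n = bprod k n k"

definition bBb :: "nat \<Rightarrow> nat \<Rightarrow> (diagram \<Rightarrow> complex) set" where
  "bBb k n = {dmul k n (dmul k n (b_elem k n) x) (b_elem k n) | x. x \<in> Alg k}"

definition has_forbidden :: "nat \<Rightarrow> diagram \<Rightarrow> bool" where
  "has_forbidden k d \<longleftrightarrow> (\<exists>i<k. d (True, i) = (True, k + i) \<or> d (False, i) = (False, k + i))"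

section \<open>The module M = V^{\<otimes>k} \<otimes> (V^*)^{\<otimes>k}\<close>

text \<open>Basis tensors indexed by a : positions 0..2k-1 \<rightarrow> {0..n-1} (extended by 0);
vectors are coefficient functions vanishing off the index set.\<close>

definition Idx :: "nat \<Rightarrow> nat \<Rightarrow> (nat \<Rightarrow> nat) set" where
  "Idx n k = {a. (\<forall>i<2*k. a i < n) \<and> (\<forall>i. 2*k \<le> i \<longrightarrow> a i = 0)}"

definition Mvec :: "nat \<Rightarrow> nat \<Rightarrow> ((nat \<Rightarrow> nat) \<Rightarrow> complex) set" where
  "Mvec n k = {v. \<forall>a. a \<notin> Idx n k \<longrightarrow> v a = 0}"

definition vlab :: "(nat \<Rightarrow> nat) \<Rightarrow> (nat \<Rightarrow> nat) \<Rightarrow> vtx \<Rightarrow> nat" where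
  "vlab a b v = (if fst v then b (snd v) else a (snd v))"

definition delta :: "nat \<Rightarrow> diagram \<Rightarrow> (nat \<Rightarrow> nat) \<Rightarrow> (nat \<Rightarrow> nat) \<Rightarrow> bool" where
  "delta k d a b \<longleftrightarrow> (\<forall>v\<in>verts k. vlab a b (d v) = vlab a b v)"

definition phi :: "nat \<Rightarrow> nat \<Rightarrow> (diagram \<Rightarrow> complex) \<Rightarrow> ((nat \<Rightarrow> nat) \<Rightarrow> complex) \<Rightarrow> (nat \<Rightarrow> nat) \<Rightarrow> complex" where
  "phi k n x v = (\<lambda>b. if b \<in> Idx n k then
       (\<Sum>a\<in>Idx n k. (\<Sum>d\<in>WB k. x d * (if delta k d a b then 1 else 0)) * v a) else 0)"

text \<open>p_i = c_{i,i}/n (i 0-indexed, paired with position k+i).\<close>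
definition pmap :: "nat \<Rightarrow> nat \<Rightarrow> nat \<Rightarrow> ((nat \<Rightarrow> nat) \<Rightarrow> complex) \<Rightarrow> (nat \<Rightarrow> nat) \<Rightarrow> complex" where
  "pmap k n i v = (\<lambda>b. if b \<in> Idx n k then
      (1 / of_nat n) * (if b i = b (k + i) then (\<Sum>l<n. v (b(i := l, k + i := l))) else 0) else 0)"

fun eprod :: "nat \<Rightarrow> nat \<Rightarrow> nat \<Rightarrow> ((nat \<Rightarrow> nat) \<Rightarrow> complex) \<Rightarrow> (nat \<Rightarrow> nat) \<Rightarrow> complex" where
  "eprod k n 0 v = v"
| "eprod k n (Suc j) v = eprod k n j (\<lambda>b. v b - pmap k n j v b)"

text \<open>e = (id - p_1) \<circ> ... \<circ> (id - p_k).\<close>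
definition emap :: "nat \<Rightarrow> nat \<Rightarrow> ((nat \<Rightarrow> nat) \<Rightarrow> complex) \<Rightarrow> (nat \<Rightarrow> nat) \<Rightarrow> complex" where
  "emap k n = eprod k n k"

definition eM :: "nat \<Rightarrow> nat \<Rightarrow> ((nat \<Rightarrow> nat) \<Rightarrow> complex) set" where
  "eM k n = emap k n ` Mvec n k"

text \<open>x : n\<times>n complex matrix, x i j the (i,j) entry (0-indexed). Image of the basis tensor a:
 x v_c = \<Sum>_r x_{r,c} v_r on V, and v_c^* \<mapsto> -v_c^* x = -\<Sum>_r x_{c,r} v_r^* on V^*.\<close>
definition glact_basis :: "nat \<Rightarrow> nat \<Rightarrow> (nat \<Rightarrow> nat \<Rightarrow> complex) \<Rightarrow> (nat \<Rightarrow> nat) \<Rightarrow> (nat \<Rightarrow> nat) \<Rightarrow> complex" where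
  "glact_basis k n x a = (\<lambda>b.
      (\<Sum>i<k. \<Sum>r<n. if b = a(i := r) then x r (a i) else 0)
    - (\<Sum>i\<in>{k..<2*k}. \<Sum>r<n. if b = a(i := r) then x (a i) r else 0))"

definition glact :: "nat \<Rightarrow> nat \<Rightarrow> (nat \<Rightarrow> nat \<Rightarrow> complex) \<Rightarrow> ((nat \<Rightarrow> nat) \<Rightarrow> complex) \<Rightarrow> (nat \<Rightarrow> nat) \<Rightarrow> complex" where
  "glact k n x v = (\<lambda>b. \<Sum>a\<in>Idx n k. v a * glact_basis k n x a b)"

definition Endg :: "nat \<Rightarrow> nat \<Rightarrow> (((nat \<Rightarrow> nat) \<Rightarrow> complex) \<Rightarrow> (nat \<Rightarrow> nat) \<Rightarrow> complex) set" where
  "Endg k n = {f. f \<in> extensional (eM k n) \<and> (\<forall>v\<in>eM k n. f v \<in> eM k n) \<and>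
      (\<forall>u\<in>eM k n. \<forall>v\<in>eM k n. f (\<lambda>a. u a + v a) = (\<lambda>a. f u a + f v a)) \<and>
      (\<forall>c. \<forall>v\<in>eM k n. f (\<lambda>a. c * v a) = (\<lambda>a. c * f v a)) \<and>
      (\<forall>x. \<forall>v\<in>eM k n. f (glact k n x v) = glact k n x (f v))}"

end

theory Submission
  imports Defs
begin

lemma finite_verts[simp]: "finite (verts k)"
  unfolding verts_def by simp

lemma verts_iff: "x \<in> verts k \<longleftrightarrow> snd x < 2*k"
  unfolding verts_def by (cases x) auto

definition pol :: "nat \<Rightarrow> vtx \<Rightarrow> bool" where
  "pol k x \<longleftrightarrow> (fst x = (snd x < k))"

lemma WB_D:
  assumes "d \<in> WB k" "v \<in> verts k"
  shows "d v \<in> verts k" "d v \<noteq> v" "d (d v) = v" "pol k (d v) = (\<not> pol k v)"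
proof -
  have H: "d v \<in> verts k \<and> d v \<noteq> v \<and> d (d v) = v \<and>
        (fst (d v) = fst v \<longrightarrow> (snd v < k \<longleftrightarrow> k \<le> snd (d v))) \<and>
        (fst (d v) \<noteq> fst v \<longrightarrow> (snd v < k \<longleftrightarrow> snd (d v) < k))"
    using assms unfolding WB_def is_wb_def by blast
  then show "d v \<in> verts k" "d v \<noteq> v" "d (d v) = v" by auto
  show "pol k (d v) = (\<not> pol k v)" using H unfolding pol_def
    by (cases "fst (d v)"; cases "fst v"; auto)
qed

lemma WB_out: "d \<in> WB k \<Longrightarrow> v \<notin> verts k \<Longrightarrow> d v = v"
  unfolding WB_def is_wb_def by (cases v) blast

lemma WB_invol: "d \<in> WB k \<Longrightarrow> d (d v) = v"
  by (cases "v \<in> verts k") (auto simp: WB_D WB_out)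

lemma WB_I:
  assumes "\<And>v. v \<in> verts k \<Longrightarrow> d v \<in> verts k"
    "\<And>v. v \<in> verts k \<Longrightarrow> d (d v) = v"
    "\<And>v. v \<in> verts k \<Longrightarrow> pol k (d v) = (\<not> pol k v)"
    "\<And>v. v \<notin> verts k \<Longrightarrow> d v = v"
  shows "d \<in> WB k"
  unfolding WB_def is_wb_def
proof (intro CollectI conjI ballI allI impI)
  fix v assume v: "v \<in> verts k"
  show "d v \<in> verts k" "d (d v) = v" using assms v by auto
  show "d v \<noteq> v" using assms(3)[OF v] by auto
  show "fst (d v) = fst v \<Longrightarrow> (snd v < k) = (k \<le> snd (d v))"
    using assms(3)[OF v] unfolding pol_def by auto
  show "fst (d v) \<noteq> fst v \<Longrightarrow> (snd v < k) = (snd (d v) < k)"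
    using assms(3)[OF v] unfolding pol_def by auto
next
  fix v show "v \<notin> verts k \<Longrightarrow> d v = v" using assms by auto
qed

lemma finite_WB[simp]: "finite (WB k)"
proof -
  have inj: "inj_on (\<lambda>d. restrict d (verts k)) (WB k)"
  proof (rule inj_onI)
    fix d1 d2 assume "d1 \<in> WB k" "d2 \<in> WB k" "restrict d1 (verts k) = restrict d2 (verts k)"
    show "d1 = d2"
    proof
      fix v show "d1 v = d2 v"
      proof (cases "v \<in> verts k")
        case True then show ?thesis using \<open>restrict d1 (verts k) = restrict d2 (verts k)\<close>
          by (metis restrict_apply')
      next
        case False then show ?thesis using \<open>d1 \<in> WB k\<close> \<open>d2 \<in> WB k\<close> WB_out by metis
      qed
    qed
  qed
  moreover have sub: "(\<lambda>d. restrict d (verts k)) ` WB k \<subseteq> verts k \<rightarrow>\<^sub>E verts k"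
  proof
    fix f assume "f \<in> (\<lambda>d. restrict d (verts k)) ` WB k"
    then obtain d where d: "d \<in> WB k" "f = restrict d (verts k)" by blast
    show "f \<in> verts k \<rightarrow>\<^sub>E verts k" unfolding d(2) using WB_D(1)[OF d(1)] by auto
  qed
  moreover have fin: "finite (verts k \<rightarrow>\<^sub>E verts k)" by (simp add: finite_PiE)
  ultimately show ?thesis
    using finite_imageD[OF finite_subset[OF sub fin]] by blast
qed

lemma finite_Idx[simp]: "finite (Idx n k)"
proof -
  have inj: "inj_on (\<lambda>a. restrict a {..<2*k}) (Idx n k)"
  proof (rule inj_onI)
    fix a1 a2 assume A: "a1 \<in> Idx n k" "a2 \<in> Idx n k" "restrict a1 {..<2*k} = restrict a2 {..<2*k}"
    show "a1 = a2"
    proof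
      fix i show "a1 i = a2 i"
      proof (cases "i < 2*k")
        case True
        have "restrict a1 {..<2*k} i = restrict a2 {..<2*k} i" using A(3) by simp
        then show ?thesis using True by simp
      next
        case False then show ?thesis using A(1,2) unfolding Idx_def by simp
      qed
    qed
  qed
  moreover have sub: "(\<lambda>a. restrict a {..<2*k}) ` Idx n k \<subseteq> {..<2*k} \<rightarrow>\<^sub>E {..<n}"
  proof
    fix f assume "f \<in> (\<lambda>a. restrict a {..<2*k}) ` Idx n k"
    then obtain a where d: "a \<in> Idx n k" "f = restrict a {..<2*k}" by blast
    show "f \<in> {..<2*k} \<rightarrow>\<^sub>E {..<n}" unfolding d(2) using d(1) unfolding Idx_def by auto
  qed
  moreover have fin: "finite ({..<2*k} \<rightarrow>\<^sub>E {..<n})" by (simp add: finite_PiE)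
  ultimately show ?thesis
    using finite_imageD[OF finite_subset[OF sub fin]] by blast
qed

type_synonym dart = "bool \<times> vtx"

locale two_wb =
  fixes k :: nat and d1 d2 :: diagram
  assumes d1: "d1 \<in> WB k" and d2: "d2 \<in> WB k"
begin

definition dd :: "bool \<Rightarrow> diagram" where "dd s = (if s then d1 else d2)"

lemma dd_WB: "dd s \<in> WB k" unfolding dd_def using d1 d2 by auto

definition T :: "dart \<Rightarrow> dart" where
  "T u = (let y = dd (fst u) (snd u) in
          if fst y \<noteq> fst u then (\<not> fst u, (\<not> fst y, snd y)) else (fst u, y))"

definition bdry :: "dart \<Rightarrow> bool" where "bdry u \<longleftrightarrow> fst (snd u) = fst u"

definition gr :: "dart \<Rightarrow> nat \<times> nat" where
  "gr u = (if fst u then (if fst (snd u) then 0 else 1, snd (snd u))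
           else (if fst (snd u) then 1 else 2, snd (snd u)))"

primrec wk :: "vtx \<Rightarrow> nat \<Rightarrow> dart" where
  "wk v 0 = (fst v, v)"
| "wk v (Suc m) = (if m \<noteq> 0 \<and> bdry (wk v m) then wk v m else T (wk v m))"

definition Back :: "dart \<Rightarrow> dart" where
  "Back u = (\<not> fst u, dd (\<not> fst u) (\<not> fst (snd u), snd (snd u)))"

lemma T_verts: "snd u \<in> verts k \<Longrightarrow> snd (T u) \<in> verts k"
  using WB_D(1)[OF dd_WB] unfolding T_def Let_def verts_iff by auto

lemma wk_verts: "v \<in> verts k \<Longrightarrow> snd (wk v m) \<in> verts k"
  by (induction m) (auto simp: T_verts)

lemma Back_T: "snd u \<in> verts k \<Longrightarrow> \<not> bdry (T u) \<Longrightarrow> Back (T u) = u"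
proof -
  obtain s x where u: "u = (s, x)" by (cases u)
  obtain b i where y: "dd s x = (b, i)" by (cases "dd s x")
  have inv: "dd s (b, i) = x" using WB_invol[OF dd_WB, of s x] y by simp
  assume "\<not> bdry (T u)"
  then show ?thesis unfolding T_def Back_def bdry_def Let_def u using y inv
    by (auto split: if_splits)
qed

lemma wk_start_bdry: "bdry (wk v 0)" by (simp add: bdry_def)

lemma wk_Suc_T: "(\<forall>j. 0 < j \<and> j \<le> m \<longrightarrow> \<not> bdry (wk v j)) \<Longrightarrow> wk v (Suc m) = T (wk v m)"
  by auto

definition NB :: "dart set" where "NB = {u. snd u \<in> verts k \<and> \<not> bdry u}"

lemma NB_sub: "NB \<subseteq> UNIV \<times> ({True} \<times> {..<2*k} \<union> {False} \<times> {..<2*k})"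
  unfolding NB_def verts_iff by auto

lemma card_NB: "card NB \<le> 4 * k"
proof -
  have "NB \<subseteq> {(s, (b, i)). b = (\<not> s) \<and> i < 2*k}"
    unfolding NB_def bdry_def verts_iff by auto
  also have "{(s, (b, i)). b = (\<not> s) \<and> i < 2*k} = (\<lambda>(s,i). (s, (\<not> s, i))) ` (UNIV \<times> {..<2*k})"
    by auto
  finally have "NB \<subseteq> (\<lambda>(s,i). (s, (\<not> s, i))) ` (UNIV \<times> {..<2*k})" .
  then have "card NB \<le> card ((\<lambda>(s,i). (s, (\<not> s, i))) ` (UNIV \<times> {..<2*k::nat}))"
    by (intro card_mono) auto
  also have "\<dots> \<le> 4 * k"
    using card_image_le[of "UNIV \<times> {..<2*k::nat}" "\<lambda>(s,i). (s, (\<not> s, i))"] by simp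
  finally show ?thesis .
qed

lemma walk_terminates:
  assumes v: "v \<in> verts k"
  shows "\<exists>m. 0 < m \<and> m \<le> 4*k+1 \<and> bdry (wk v m)"
proof (rule ccontr)
  assume "\<not> ?thesis"
  then have nb: "\<And>m. 0 < m \<Longrightarrow> m \<le> 4*k+1 \<Longrightarrow> \<not> bdry (wk v m)" by auto
  have step: "wk v (Suc m) = T (wk v m)" if "m \<le> 4*k" for m
    using nb that by auto
  have bk: "Back (wk v (Suc m)) = wk v m" if "m \<le> 4*k" for m
    using step[OF that] Back_T[OF wk_verts[OF v], of m] nb[of "Suc m"] that by auto
  have "wk v ` {1..4*k+1} \<subseteq> NB"
    using nb wk_verts[OF v] unfolding NB_def by auto
  then have "card (wk v ` {1..4*k+1}) \<le> 4*k"
  proof -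
    have "finite NB" by (rule finite_subset[OF _ finite_cartesian_product[OF finite_UNIV finite_verts[of k]]])
        (auto simp: NB_def)
    then show ?thesis using card_NB card_mono[OF \<open>finite NB\<close> \<open>wk v ` {1..4*k+1} \<subseteq> NB\<close>] by linarith
  qed
  then have "\<not> inj_on (wk v) {1..4*k+1}"
    using card_image[of "wk v" "{1..4*k+1}"] by auto
  then obtain p q where pq: "p \<in> {1..4*k+1}" "q \<in> {1..4*k+1}" "p \<noteq> q" "wk v p = wk v q"
    unfolding inj_on_def by auto
  have gen: "\<And>p q. p \<in> {1..4*k+1} \<Longrightarrow> q \<in> {1..4*k+1} \<Longrightarrow> p < q \<Longrightarrow> wk v p = wk v q \<Longrightarrow> False"
  proof -
    fix p q :: nat assume p: "p \<in> {1..4*k+1}" and q: "q \<in> {1..4*k+1}" and "p < q" and e: "wk v p = wk v q"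
    have "\<forall>j\<le>p. wk v (p - j) = wk v (q - j)"
    proof
      fix j show "j \<le> p \<longrightarrow> wk v (p - j) = wk v (q - j)"
      proof (induction j)
        case 0 then show ?case using e by simp
      next
        case (Suc j)
        show ?case
        proof
          assume sj: "Suc j \<le> p"
          then have IH: "wk v (p - j) = wk v (q - j)" using Suc by simp
          have e1: "p - j = Suc (p - Suc j)" "q - j = Suc (q - Suc j)" using sj \<open>p < q\<close> by auto
          have m: "p - Suc j \<le> 4*k" "q - Suc j \<le> 4*k" using p q sj \<open>p < q\<close> by auto
          have "wk v (p - Suc j) = Back (wk v (p - j))" using bk[OF m(1)] e1(1) by simp
          also have "\<dots> = Back (wk v (q - j))" using IH by simp
          also have "\<dots> = wk v (q - Suc j)" using bk[OF m(2)] e1(2) by simp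
          finally show "wk v (p - Suc j) = wk v (q - Suc j)" .
        qed
      qed
    qed
    then have "wk v (p - p) = wk v (q - p)" by blast
    then have "wk v 0 = wk v (q - p)" by simp
    moreover have "\<not> bdry (wk v (q - p))" using nb p q \<open>p < q\<close> by auto
    ultimately show False using wk_start_bdry[of v] by (simp only:)
  qed
  show False
  proof (cases "p < q")
    case True then show False using gen pq by blast
  next
    case False then have "q < p" using pq by auto
    then show False using gen[of q p] pq by simp
  qed
qed

declare wk.simps(2)[simp del]

definition N :: "vtx \<Rightarrow> nat" where "N v = (LEAST m. 0 < m \<and> bdry (wk v m))"

lemma N_props:
  assumes v: "v \<in> verts k"
  shows "0 < N v" "N v \<le> 4*k+1" "bdry (wk v (N v))" "\<And>m. 0 < m \<Longrightarrow> m < N v \<Longrightarrow> \<not> bdry (wk v m)"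
proof -
  obtain m0 where m0: "0 < m0" "m0 \<le> 4*k+1" "bdry (wk v m0)" using walk_terminates[OF v] by blast
  have "0 < N v \<and> bdry (wk v (N v))" unfolding N_def by (rule LeastI[of _ m0]) (use m0 in auto)
  then show "0 < N v" "bdry (wk v (N v))" by auto
  show "N v \<le> 4*k+1" using Least_le[of "\<lambda>m. 0 < m \<and> bdry (wk v m)" m0] m0 unfolding N_def by simp
  fix m assume "0 < m" "m < N v"
  then show "\<not> bdry (wk v m)" using not_less_Least[of m "\<lambda>m. 0 < m \<and> bdry (wk v m)"] unfolding N_def by auto
qed

lemma wk_step: "v \<in> verts k \<Longrightarrow> m < N v \<Longrightarrow> wk v (Suc m) = T (wk v m)"
  using N_props(4)[of v m] by (auto simp: wk.simps(2))

definition partner :: "vtx \<Rightarrow> vtx" where "partner v = snd (wk v (N v))"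

lemma partner_verts: "v \<in> verts k \<Longrightarrow> partner v \<in> verts k"
  unfolding partner_def by (rule wk_verts)

lemma T_pol: "snd u \<in> verts k \<Longrightarrow>
   pol k (snd (T u)) = (if bdry (T u) then \<not> pol k (snd u) else pol k (snd u))"
proof -
  assume x: "snd u \<in> verts k"
  obtain s x where u: "u = (s, x)" by (cases u)
  have py: "pol k (dd s x) = (\<not> pol k x)" using WB_D(4)[OF dd_WB] x u by simp
  show ?thesis unfolding T_def Let_def u bdry_def using py
    by (cases "dd s x") (auto simp: pol_def)
qed

lemma wk_pol: "v \<in> verts k \<Longrightarrow> m < N v \<Longrightarrow> pol k (snd (wk v m)) = pol k v"
proof (induction m)
  case 0 then show ?case by simp
next
  case (Suc m)
  have "wk v (Suc m) = T (wk v m)" using wk_step Suc by auto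
  moreover have "\<not> bdry (wk v (Suc m))" using N_props(4)[of v "Suc m"] Suc by auto
  ultimately show ?case using T_pol[OF wk_verts[OF Suc(2)], of m] Suc by auto
qed

lemma partner_pol: "v \<in> verts k \<Longrightarrow> pol k (partner v) = (\<not> pol k v)"
proof -
  assume v: "v \<in> verts k"
  obtain m where m: "N v = Suc m" using N_props(1)[OF v] gr0_implies_Suc by blast
  have "wk v (N v) = T (wk v m)" using wk_step[OF v, of m] m by auto
  then show ?thesis unfolding partner_def
    using T_pol[OF wk_verts[OF v], of m] N_props(3)[OF v] wk_pol[OF v, of m] m by auto
qed

lemma partner_ne: "v \<in> verts k \<Longrightarrow> partner v \<noteq> v"
proof
  assume "v \<in> verts k" "partner v = v"
  then show False using partner_pol[of v] by simp
qed

lemma lift_gr: "lift w = gr (fst w, w)"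
  unfolding lift_def gr_def by auto

lemma gr_T: "gr (T u) = gr (fst u, dd (fst u) (snd u))"
  unfolding T_def Let_def gr_def by (auto split: if_splits)

abbreviation E where "E \<equiv> stack_edges k d1 d2"

lemma E_iff: "(u, u') \<in> E \<longleftrightarrow> (\<exists>t z. z \<in> verts k \<and> u = gr (t, z) \<and> u' = gr (t, dd t z))"
proof
  assume "(u, u') \<in> E"
  then show "\<exists>t z. z \<in> verts k \<and> u = gr (t, z) \<and> u' = gr (t, dd t z)"
    unfolding stack_edges_def
  proof (elim UnE CollectE exE conjE)
    fix v assume "(u, u') = ((if fst v then 0 else 1, snd v), if fst (d1 v) then 0 else 1, snd (d1 v))" "v \<in> verts k"
    then show ?thesis by (intro exI[of _ True] exI[of _ v]) (auto simp: gr_def dd_def)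
  next
    fix v assume "(u, u') = ((if fst v then 1 else 2, snd v), if fst (d2 v) then 1 else 2, snd (d2 v))" "v \<in> verts k"
    then show ?thesis by (intro exI[of _ False] exI[of _ v]) (auto simp: gr_def dd_def)
  qed
next
  assume "\<exists>t z. z \<in> verts k \<and> u = gr (t, z) \<and> u' = gr (t, dd t z)"
  then obtain t z where "z \<in> verts k" "u = gr (t, z)" "u' = gr (t, dd t z)" by blast
  then show "(u, u') \<in> E"
  proof (cases t)
    case True
    then have "(u, u') = ((if fst z then 0 else 1, snd z), (if fst (d1 z) then 0 else 1, snd (d1 z)))"
      using \<open>u = gr (t, z)\<close> \<open>u' = gr (t, dd t z)\<close> by (simp add: gr_def dd_def)
    then show ?thesis unfolding stack_edges_def using \<open>z \<in> verts k\<close> by blast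
  next
    case False
    then have "(u, u') = ((if fst z then 1 else 2, snd z), (if fst (d2 z) then 1 else 2, snd (d2 z)))"
      using \<open>u = gr (t, z)\<close> \<open>u' = gr (t, dd t z)\<close> by (simp add: gr_def dd_def)
    then show ?thesis unfolding stack_edges_def using \<open>z \<in> verts k\<close> by blast
  qed
qed

lemma EE_iff: "(u, u') \<in> E \<union> E\<inverse> \<longleftrightarrow> (\<exists>t z. z \<in> verts k \<and> u = gr (t, z) \<and> u' = gr (t, dd t z))"
proof -
  have "(u', u) \<in> E \<Longrightarrow> (\<exists>t z. z \<in> verts k \<and> u = gr (t, z) \<and> u' = gr (t, dd t z))"
  proof -
    assume "(u', u) \<in> E"
    then obtain t z where z: "z \<in> verts k" "u' = gr (t, z)" "u = gr (t, dd t z)" using E_iff by blast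
    show ?thesis
      by (rule exI[of _ t], rule exI[of _ "dd t z"]) (simp add: z WB_D(1)[OF dd_WB z(1)] WB_invol[OF dd_WB])
  qed
  then show ?thesis using E_iff by blast
qed

lemma gr_eq: "gr (t, z) = gr u \<Longrightarrow> (t, z) = u \<or> ((t, z) = (\<not> fst u, (\<not> fst (snd u), snd (snd u))) \<and> \<not> bdry u)"
  unfolding gr_def bdry_def by (cases u; cases z; cases t) (auto split: if_splits)

lemma gr_bdry_level: "bdry u \<longleftrightarrow> fst (gr u) \<noteq> 1"
  unfolding gr_def bdry_def by (cases u) auto

definition S :: "vtx \<Rightarrow> (nat \<times> nat) set" where "S v = gr ` wk v ` {..N v}"

lemma S_mem: "m \<le> N v \<Longrightarrow> gr (wk v m) \<in> S v"
  unfolding S_def by auto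

lemma wk_edge: "v \<in> verts k \<Longrightarrow> m < N v \<Longrightarrow> (gr (wk v m), gr (wk v (Suc m))) \<in> E \<union> E\<inverse>"
proof -
  assume v: "v \<in> verts k" and m: "m < N v"
  have "gr (wk v (Suc m)) = gr (fst (wk v m), dd (fst (wk v m)) (snd (wk v m)))"
    by (simp only: wk_step[OF v m] gr_T)
  then show ?thesis unfolding EE_iff
    by (intro exI[of _ "fst (wk v m)"] exI[of _ "snd (wk v m)"]) (simp add: wk_verts[OF v])
qed

lemma S_closed:
  assumes v: "v \<in> verts k" and u: "u \<in> S v" and e: "(u, u') \<in> E \<union> E\<inverse>"
  shows "u' \<in> S v"
proof -
  obtain m where m: "m \<le> N v" "u = gr (wk v m)" using u unfolding S_def by auto
  obtain t z where tz: "z \<in> verts k" "u = gr (t, z)" "u' = gr (t, dd t z)" using e EE_iff by blast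
  have ge: "(t, z) = wk v m \<or> ((t, z) = (\<not> fst (wk v m), (\<not> fst (snd (wk v m)), snd (snd (wk v m)))) \<and> \<not> bdry (wk v m))"
    using gr_eq tz(2) m(2) by metis
  then show ?thesis
  proof
    assume eq: "(t, z) = wk v m"
    show ?thesis
    proof (cases "m < N v")
      case True
      have "u' = gr (wk v (Suc m))" using tz(3) eq wk_step[OF v True] gr_T[of "wk v m"] by (metis fst_conv snd_conv)
      then show ?thesis using S_mem[of "Suc m" v] True by simp
    next
      case False
      then have mN: "m = N v" using m by auto
      obtain m' where m': "N v = Suc m'" using N_props(1)[OF v] gr0_implies_Suc by blast
      have w: "wk v (N v) = T (wk v m')" using wk_step[OF v, of m'] m' by auto
      obtain s x where sx: "wk v m' = (s, x)" by (cases "wk v m'")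
      have x: "x \<in> verts k" using wk_verts[OF v, of m'] sx by simp
      have bd: "bdry (T (s, x))" using N_props(3)[OF v] w sx by simp
      have Tsx: "T (s, x) = (s, dd s x)" using bd unfolding T_def Let_def bdry_def
        by (auto split: if_splits)
      have "(t, z) = (s, dd s x)" using eq mN w sx Tsx by simp
      then have "u' = gr (s, x)" using tz(3) WB_invol[OF dd_WB] by auto
      then show ?thesis unfolding S_def using sx m' by (auto intro!: image_eqI[of _ _ m'])
    qed
  next
    assume co: "(t, z) = (\<not> fst (wk v m), (\<not> fst (snd (wk v m)), snd (snd (wk v m)))) \<and> \<not> bdry (wk v m)"
    have m0: "m \<noteq> 0"
    proof
      assume "m = 0" then show False using co by (simp add: bdry_def)
    qed
    have mN: "m \<noteq> N v" using co N_props(3)[OF v] by auto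
    obtain m' where m': "m = Suc m'" using m0 not0_implies_Suc by blast
    have w: "wk v m = T (wk v m')" using wk_step[OF v, of m'] m' m mN by auto
    obtain s x where sx: "wk v m' = (s, x)" by (cases "wk v m'")
    obtain b i where y: "dd s x = (b, i)" by (cases "dd s x")
    have nb: "\<not> bdry (T (s, x))" using co w sx by simp
    have Tsx: "T (s, x) = (\<not> s, (\<not> b, i))" using nb y unfolding T_def Let_def bdry_def
      by (auto split: if_splits)
    have "(t, z) = (s, (b, i))" using co w sx Tsx by simp
    then have "u' = gr (s, x)" using tz(3) WB_invol[OF dd_WB, of s x] y by auto
    then show ?thesis unfolding S_def using sx m' m by (auto intro!: image_eqI[of _ _ m'])
  qed
qed

lemma conn_S:
  assumes v: "v \<in> verts k" and c: "(lift v, u) \<in> stack_conn k d1 d2"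
  shows "u \<in> S v"
proof -
  have "(lift v, u) \<in> (E \<union> E\<inverse>)\<^sup>*" using c unfolding stack_conn_def .
  then show ?thesis
  proof (induction rule: rtrancl_induct)
    case base then show ?case using S_mem[of 0 v] by (simp add: lift_gr)
  next
    case (step y z) then show ?case using S_closed[OF v] by blast
  qed
qed

lemma conn_wk: "v \<in> verts k \<Longrightarrow> m \<le> N v \<Longrightarrow> (lift v, gr (wk v m)) \<in> stack_conn k d1 d2"
proof (induction m)
  case 0 then show ?case unfolding stack_conn_def lift_gr by simp
next
  case (Suc m)
  then have "(lift v, gr (wk v m)) \<in> stack_conn k d1 d2" by simp
  then show ?case unfolding stack_conn_def using wk_edge[of v m] Suc by (simp add: rtrancl_into_rtrancl)
qed

lemma conn_sym: "(x, y) \<in> stack_conn k d1 d2 \<Longrightarrow> (y, x) \<in> stack_conn k d1 d2"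
  unfolding stack_conn_def using sym_rtrancl[OF sym_Un_converse[of E]] by (meson symD)

lemma conn_partner: "v \<in> verts k \<Longrightarrow> (lift v, lift (partner v)) \<in> stack_conn k d1 d2"
proof -
  assume v: "v \<in> verts k"
  have "wk v (N v) = (fst (partner v), partner v)"
    using N_props(3)[OF v] unfolding partner_def bdry_def by (simp add: prod_eq_iff)
  then show ?thesis using conn_wk[OF v, of "N v"] by (simp add: lift_gr)
qed

lemma conn_unique:
  assumes v: "v \<in> verts k" and w: "w \<in> verts k" "w \<noteq> v" and c: "(lift v, lift w) \<in> stack_conn k d1 d2"
  shows "w = partner v"
proof -
  have "lift w \<in> S v" using conn_S[OF v c] .
  then obtain m where m: "m \<le> N v" "gr (fst w, w) = gr (wk v m)" unfolding S_def lift_gr by auto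
  have bw: "bdry (fst w, w)" by (simp add: bdry_def)
  have "(fst w, w) = wk v m"
    using gr_eq[OF m(2)] bw by (auto simp: bdry_def)
  then have bm: "bdry (wk v m)" using bw by simp
  have "m = 0 \<or> m = N v" using N_props(4)[OF v, of m] bm m(1) by linarith
  then show ?thesis using \<open>(fst w, w) = wk v m\<close> w(2) unfolding partner_def
    by (metis snd_conv wk.simps(1))
qed

lemma compose_eq: "v \<in> verts k \<Longrightarrow> compose k d1 d2 v = partner v"
proof -
  assume v: "v \<in> verts k"
  have "(THE w. w \<in> verts k \<and> w \<noteq> v \<and> (lift v, lift w) \<in> stack_conn k d1 d2) = partner v"
  proof (rule the_equality)
    show "partner v \<in> verts k \<and> partner v \<noteq> v \<and> (lift v, lift (partner v)) \<in> stack_conn k d1 d2"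
      using partner_verts[OF v] partner_ne[OF v] conn_partner[OF v] by blast
    fix w assume "w \<in> verts k \<and> w \<noteq> v \<and> (lift v, lift w) \<in> stack_conn k d1 d2"
    then show "w = partner v" using conn_unique[OF v, of w] by blast
  qed
  then show ?thesis by (simp add: compose_def v)
qed

lemma partner_partner: "v \<in> verts k \<Longrightarrow> partner (partner v) = v"
proof -
  assume v: "v \<in> verts k"
  let ?w = "partner v"
  show ?thesis
    using conn_unique[of ?w v] partner_verts[OF v] v partner_ne[OF v] conn_sym[OF conn_partner[OF v]]
    by auto
qed

lemma compose_WB: "compose k d1 d2 \<in> WB k"
proof (rule WB_I)
  fix v assume v: "v \<in> verts k"
  show "compose k d1 d2 v \<in> verts k" using compose_eq[OF v] partner_verts[OF v] by simp
  show "compose k d1 d2 (compose k d1 d2 v) = v"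
    using compose_eq[OF v] compose_eq[OF partner_verts[OF v]] partner_partner[OF v] by simp
  show "pol k (compose k d1 d2 v) = (\<not> pol k v)" using compose_eq[OF v] partner_pol[OF v] by simp
next
  fix v assume "v \<notin> verts k" then show "compose k d1 d2 v = v" unfolding compose_def by simp
qed

end

context two_wb
begin

abbreviation R where "R \<equiv> stack_conn k d1 d2"

definition L :: "(nat \<Rightarrow> nat) \<Rightarrow> (nat \<Rightarrow> nat) \<Rightarrow> (nat \<Rightarrow> nat) \<Rightarrow> nat \<times> nat \<Rightarrow> nat" where
  "L a b c u = (if fst u = 0 then b (snd u) else if fst u = 1 then c (snd u) else a (snd u))"

lemma L_lift: "L a b c (lift w) = vlab a b w"
  unfolding L_def lift_def vlab_def by auto

lemma L_gr_True: "L a b c (gr (True, x)) = vlab c b x"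
  unfolding L_def gr_def vlab_def by auto

lemma L_gr_False: "L a b c (gr (False, x)) = vlab a c x"
  unfolding L_def gr_def vlab_def by auto

definition valid where "valid a b c \<longleftrightarrow> delta k d1 c b \<and> delta k d2 a c"

lemma valid_edges: "valid a b c \<Longrightarrow> (u, u') \<in> E \<union> E\<inverse> \<Longrightarrow> L a b c u = L a b c u'"
proof -
  assume val: "valid a b c" and e: "(u, u') \<in> E \<union> E\<inverse>"
  obtain t z where tz: "z \<in> verts k" "u = gr (t, z)" "u' = gr (t, dd t z)" using e EE_iff by blast
  show ?thesis
  proof (cases t)
    case True
    then show ?thesis using val tz unfolding valid_def delta_def by (simp add: L_gr_True dd_def)
  next
    case False
    then show ?thesis using val tz unfolding valid_def delta_def by (simp add: L_gr_False dd_def)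
  qed
qed

lemma valid_conn: "valid a b c \<Longrightarrow> (u, u') \<in> R \<Longrightarrow> L a b c u = L a b c u'"
proof -
  assume val: "valid a b c" and "(u, u') \<in> R"
  then have "(u, u') \<in> (E \<union> E\<inverse>)\<^sup>*" unfolding stack_conn_def by simp
  then show ?thesis
  proof (induction rule: rtrancl_induct)
    case base then show ?case by simp
  next
    case (step y z) then show ?case using valid_edges[OF val] by metis
  qed
qed

lemma valid_I:
  assumes "\<And>u u'. (u, u') \<in> E \<Longrightarrow> L a b c u = L a b c u'"
  shows "valid a b c"
proof -
  have "delta k d1 c b" unfolding delta_def
  proof
    fix x assume x: "x \<in> verts k"
    have "(gr (True, x), gr (True, dd True x)) \<in> E" using E_iff x by blast
    then show "vlab c b (d1 x) = vlab c b x" using assms L_gr_True by (metis dd_def)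
  qed
  moreover have "delta k d2 a c" unfolding delta_def
  proof
    fix x assume x: "x \<in> verts k"
    have "(gr (False, x), gr (False, dd False x)) \<in> E" using E_iff x by blast
    then show "vlab a c (d2 x) = vlab a c x" using assms L_gr_False by (metis dd_def)
  qed
  ultimately show ?thesis unfolding valid_def by simp
qed

lemma valid_compose: "valid a b c \<Longrightarrow> delta k (compose k d1 d2) a b"
  unfolding delta_def
proof
  fix v assume val: "valid a b c" and v: "v \<in> verts k"
  have "L a b c (lift v) = L a b c (lift (partner v))" using valid_conn[OF val conn_partner[OF v]] .
  then show "vlab a b (compose k d1 d2 v) = vlab a b v" using compose_eq[OF v] L_lift by metis
qed

lemma R_refl: "(x, x) \<in> R" unfolding stack_conn_def by simp

lemma R_trans: "(x, y) \<in> R \<Longrightarrow> (y, z) \<in> R \<Longrightarrow> (x, z) \<in> R"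
  unfolding stack_conn_def by simp

lemma R_class_eq: "(x, y) \<in> R \<Longrightarrow> R `` {x} = R `` {y}"
  using R_trans conn_sym by blast

lemma conn_elem: "(x, u) \<in> R \<Longrightarrow> u = x \<or> (\<exists>t z. z \<in> verts k \<and> u = gr (t, z))"
proof -
  assume "(x, u) \<in> R"
  then have "(x, u) \<in> (E \<union> E\<inverse>)\<^sup>*" unfolding stack_conn_def by simp
  then show ?thesis
  proof (induction rule: rtrancl_induct)
    case base then show ?case by simp
  next
    case (step y z)
    then obtain t w where "w \<in> verts k" "z = gr (t, dd t w)" using EE_iff by blast
    then show ?case using WB_D(1)[OF dd_WB] by blast
  qed
qed

definition Cyc where "Cyc = {C. \<exists>i<2*k. C = R `` {(1, i)} \<and> C \<subseteq> {1} \<times> {..<2*k}}"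

lemma cycles_Cyc: "cycles k d1 d2 = card Cyc"
  unfolding cycles_def Cyc_def by simp

lemma finite_Cyc: "finite Cyc"
proof -
  have "Cyc \<subseteq> (\<lambda>i. R `` {(1, i)}) ` {..<2*k}" unfolding Cyc_def by auto
  then show ?thesis using finite_subset by blast
qed

lemma Cyc_iff: "j < 2*k \<Longrightarrow> R `` {(1, j)} \<in> Cyc \<longleftrightarrow> R `` {(1, j)} \<subseteq> {1} \<times> {..<2*k}"
  unfolding Cyc_def by auto

lemma noncyc_bdry:
  assumes j: "j < 2*k" and nc: "R `` {(1, j)} \<notin> Cyc"
  shows "\<exists>w\<in>verts k. ((1, j), lift w) \<in> R"
proof -
  obtain u where u: "u \<in> R `` {(1, j)}" "u \<notin> {1} \<times> {..<2*k}" using nc Cyc_iff[OF j] by auto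
  have "u \<noteq> (1, j)" using u j by auto
  then obtain t z where tz: "z \<in> verts k" "u = gr (t, z)" using conn_elem u by blast
  have "snd (gr (t, z)) < 2*k" using tz(1) verts_iff[of z k] by (simp add: gr_def)
  then have "fst (gr (t, z)) \<noteq> 1" using u(2) tz(2) by (cases "gr (t, z)") auto
  then have "bdry (t, z)" using gr_bdry_level by simp
  then have "u = lift z" using tz unfolding lift_gr bdry_def by auto
  then show ?thesis using tz u by auto
qed

definition rp :: "(nat \<times> nat) set \<Rightarrow> nat" where "rp C = (SOME i. i < 2*k \<and> (1, i) \<in> C)"

lemma rp: "C \<in> Cyc \<Longrightarrow> rp C < 2*k \<and> (1, rp C) \<in> C \<and> R `` {(1, rp C)} = C"
proof -
  assume "C \<in> Cyc"
  then obtain i where i: "i < 2*k" "C = R `` {(1, i)}" unfolding Cyc_def by auto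
  have "i < 2*k \<and> (1, i) \<in> C" using i R_refl by auto
  then have r: "rp C < 2*k \<and> (1, rp C) \<in> C" unfolding rp_def by (rule someI)
  then have "((1, i), (1, rp C)) \<in> R" using i by auto
  then have "R `` {(1, rp C)} = C" using R_class_eq conn_sym i by metis
  then show ?thesis using r by simp
qed

lemma mid_gr: "(False, j) \<in> verts k \<Longrightarrow> (1, j) = gr (True, (False, j))"
  unfolding gr_def by simp

lemma gr_cases: "z \<in> verts k \<Longrightarrow> gr (t, z) = lift z \<or> (gr (t, z) = (1, snd z) \<and> snd z < 2*k)"
  unfolding gr_def lift_def verts_iff by (cases t; cases z) auto

lemma lift_not_mid: "lift w \<notin> {1} \<times> X"
  unfolding lift_def by auto

context
  fixes n :: nat and a b :: "nat \<Rightarrow> nat"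
  assumes a: "a \<in> Idx n k" and b: "b \<in> Idx n k" and dl: "delta k (compose k d1 d2) a b"
begin

lemma bdry_class: "w0 \<in> verts k \<Longrightarrow> w \<in> verts k \<Longrightarrow> (lift w0, lift w) \<in> R \<Longrightarrow> vlab a b w = vlab a b w0"
proof -
  assume w0: "w0 \<in> verts k" and w: "w \<in> verts k" and c: "(lift w0, lift w) \<in> R"
  show ?thesis
  proof (cases "w = w0")
    case False
    then have "w = partner w0" using conn_unique[OF w0 w False c] by simp
    moreover have "vlab a b (compose k d1 d2 w0) = vlab a b w0" using dl w0 unfolding delta_def by blast
    ultimately show ?thesis using compose_eq[OF w0] by simp
  qed simp
qed

lemma vlab_lt: "w \<in> verts k \<Longrightarrow> vlab a b w < n"
  using a b unfolding Idx_def vlab_def verts_iff by auto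

lemma count_inj:
  assumes c1: "c1 \<in> Idx n k" "valid a b c1" and c2: "c2 \<in> Idx n k" "valid a b c2"
    and eq: "\<And>C. C \<in> Cyc \<Longrightarrow> c1 (rp C) = c2 (rp C)"
  shows "c1 = c2"
proof
  fix j show "c1 j = c2 j"
  proof (cases "j < 2*k")
    case False then show ?thesis using c1 c2 unfolding Idx_def by auto
  next
    case j: True
    show ?thesis
    proof (cases "\<exists>w\<in>verts k. ((1, j), lift w) \<in> R")
      case True
      then obtain w where w: "w \<in> verts k" "((1, j), lift w) \<in> R" by blast
      have "c1 j = L a b c1 (1, j)" by (simp add: L_def)
      also have "\<dots> = vlab a b w" using valid_conn[OF c1(2) w(2)] L_lift by simp
      also have "\<dots> = L a b c2 (1, j)" using valid_conn[OF c2(2) w(2)] L_lift by simp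
      also have "\<dots> = c2 j" by (simp add: L_def)
      finally show ?thesis .
    next
      case False
      then have C: "R `` {(1, j)} \<in> Cyc" using noncyc_bdry[OF j] by blast
      from rp[OF C] have r: "((1, j), (1, rp (R `` {(1, j)}))) \<in> R" by auto
      have "c1 j = L a b c1 (1, rp (R `` {(1, j)}))" using valid_conn[OF c1(2) r] by (simp add: L_def)
      also have "\<dots> = L a b c2 (1, rp (R `` {(1, j)}))" using eq[OF C] by (simp add: L_def)
      also have "\<dots> = c2 j" using valid_conn[OF c2(2) r] by (simp add: L_def)
      finally show ?thesis .
    qed
  qed
qed

context
  fixes h assumes h: "h \<in> Cyc \<rightarrow>\<^sub>E {..<n}"
begin

definition ch :: "nat \<Rightarrow> nat" where
  "ch j = (if j < 2*k then (if R `` {(1, j)} \<in> Cyc then h (R `` {(1, j)})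
           else vlab a b (SOME w. w \<in> verts k \<and> ((1, j), lift w) \<in> R)) else 0)"

lemma ch_Idx: "ch \<in> Idx n k"
  unfolding Idx_def
proof (intro CollectI conjI allI impI)
  fix i assume i: "i < 2*k"
  show "ch i < n"
  proof (cases "R `` {(1, i)} \<in> Cyc")
    case True then show ?thesis using h i unfolding ch_def by auto
  next
    case False
    then obtain w where "w \<in> verts k \<and> ((1, i), lift w) \<in> R" using noncyc_bdry[OF i] by blast
    then have "(SOME w. w \<in> verts k \<and> ((1, i), lift w) \<in> R) \<in> verts k" by (metis (mono_tags, lifting) someI)
    then show ?thesis using False i vlab_lt unfolding ch_def by auto
  qed
next
  fix i assume "2*k \<le> i" then show "ch i = 0" unfolding ch_def by auto
qed

lemma LA: "z \<in> verts k \<Longrightarrow> w \<in> verts k \<Longrightarrow> (gr (t, z), lift w) \<in> R \<Longrightarrow> L a b ch (gr (t, z)) = vlab a b w"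
proof -
  assume z: "z \<in> verts k" and w: "w \<in> verts k" and c: "(gr (t, z), lift w) \<in> R"
  show ?thesis
  proof (cases "gr (t, z) = lift z")
    case True
    then have "(lift w, lift z) \<in> R" using c conn_sym by metis
    then show ?thesis using True L_lift bdry_class[OF w z] by metis
  next
    case False
    then have g: "gr (t, z) = (1, snd z)" and j: "snd z < 2*k" using gr_cases[OF z, of t] by auto
    have nc: "R `` {(1, snd z)} \<notin> Cyc"
    proof
      assume "R `` {(1, snd z)} \<in> Cyc"
      then have "R `` {(1, snd z)} \<subseteq> {1} \<times> {..<2*k}" using Cyc_iff[OF j] by simp
      moreover have "lift w \<in> R `` {(1, snd z)}" using c g by simp
      ultimately show False using lift_not_mid by blast
    qed
    have ex: "w \<in> verts k \<and> ((1, snd z), lift w) \<in> R" using w c g by simp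
    define w' where "w' = (SOME w. w \<in> verts k \<and> ((1, snd z), lift w) \<in> R)"
    have w': "w' \<in> verts k \<and> ((1, snd z), lift w') \<in> R" unfolding w'_def using ex by (rule someI)
    have "(lift w, lift w') \<in> R" using w' ex conn_sym R_trans by metis
    then have "vlab a b w' = vlab a b w" using bdry_class[OF w] w' by simp
    moreover have "ch (snd z) = vlab a b w'" unfolding ch_def w'_def using j nc by simp
    ultimately show ?thesis using g unfolding L_def by simp
  qed
qed

lemma LB: "z \<in> verts k \<Longrightarrow> (\<forall>w\<in>verts k. (gr (t, z), lift w) \<notin> R) \<Longrightarrow> L a b ch (gr (t, z)) = h (R `` {gr (t, z)})"
proof -
  assume z: "z \<in> verts k" and nw: "\<forall>w\<in>verts k. (gr (t, z), lift w) \<notin> R"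
  have "gr (t, z) \<noteq> lift z" using nw z R_refl by metis
  then have g: "gr (t, z) = (1, snd z)" and j: "snd z < 2*k" using gr_cases[OF z, of t] by auto
  have "R `` {(1, snd z)} \<in> Cyc" using noncyc_bdry[OF j] nw g by metis
  then show ?thesis using g j unfolding L_def ch_def by simp
qed

lemma ch_valid: "valid a b ch"
proof (rule valid_I)
  fix u u' assume e: "(u, u') \<in> E"
  obtain t z where tz: "z \<in> verts k" "u = gr (t, z)" "u' = gr (t, dd t z)" using e E_iff by blast
  have z': "dd t z \<in> verts k" using WB_D(1)[OF dd_WB tz(1)] .
  have uu: "(u, u') \<in> R" using e unfolding stack_conn_def by auto
  show "L a b ch u = L a b ch u'"
  proof (cases "\<exists>w\<in>verts k. (u, lift w) \<in> R")
    case True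
    then obtain w where w: "w \<in> verts k" "(u, lift w) \<in> R" by blast
    have "(u', lift w) \<in> R" using w uu conn_sym R_trans by metis
    then show ?thesis using LA[OF tz(1) w(1)] LA[OF z' w(1)] w tz by simp
  next
    case False
    have F': "\<forall>w\<in>verts k. (u', lift w) \<notin> R" using False uu R_trans by metis
    have "R `` {u} = R `` {u'}" using R_class_eq[OF uu] .
    then show ?thesis using LB[OF tz(1)] LB[OF z'] False F' tz by simp
  qed
qed

lemma ch_rp: "C \<in> Cyc \<Longrightarrow> ch (rp C) = h C"
  using rp[of C] unfolding ch_def by auto

end

lemma count_valid: "card {c \<in> Idx n k. valid a b c} = n ^ card Cyc"
proof -
  let ?A = "{c \<in> Idx n k. valid a b c}"
  let ?F = "\<lambda>c. restrict (\<lambda>C. c (rp C)) Cyc"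
  have "bij_betw ?F ?A (Cyc \<rightarrow>\<^sub>E {..<n})"
  proof (rule bij_betwI')
    fix x y assume "x \<in> ?A" "y \<in> ?A"
    then show "(?F x = ?F y) = (x = y)"
      using count_inj[of x y] by (auto simp: fun_eq_iff)
  next
    fix x assume x: "x \<in> ?A"
    show "?F x \<in> Cyc \<rightarrow>\<^sub>E {..<n}"
    proof
      fix C assume "C \<in> Cyc"
      then have "rp C < 2*k" using rp by blast
      then show "?F x C \<in> {..<n}" using x \<open>C \<in> Cyc\<close> unfolding Idx_def by auto
    qed auto
  next
    fix h assume h: "h \<in> Cyc \<rightarrow>\<^sub>E {..<n}"
    show "\<exists>x\<in>?A. h = ?F x"
    proof (intro bexI)
      show "ch h \<in> ?A" using ch_Idx[OF h] ch_valid[OF h] by simp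
      show "h = ?F (ch h)"
      proof
        fix C show "h C = ?F (ch h) C"
          using ch_rp[OF h, of C] h by (cases "C \<in> Cyc") (auto simp: PiE_def extensional_def)
      qed
    qed
  qed
  then have "card ?A = card (Cyc \<rightarrow>\<^sub>E {..<n})" by (rule bij_betw_same_card)
  also have "\<dots> = n ^ card Cyc" using finite_Cyc by (simp add: card_PiE)
  finally show ?thesis .
qed

end

lemma count_valid_gen:
  assumes a: "a \<in> Idx n k" and b: "b \<in> Idx n k"
  shows "card {c \<in> Idx n k. valid a b c} = (if delta k (compose k d1 d2) a b then n ^ cycles k d1 d2 else 0)"
proof (cases "delta k (compose k d1 d2) a b")
  case True then show ?thesis using count_valid[OF a b True] cycles_Cyc by simp
next
  case False
  then have "{c \<in> Idx n k. valid a b c} = {}" using valid_compose by blast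
  then show ?thesis using False by simp
qed

end

lemma compose_in_WB: "d1 \<in> WB k \<Longrightarrow> d2 \<in> WB k \<Longrightarrow> compose k d1 d2 \<in> WB k"
proof -
  assume "d1 \<in> WB k" "d2 \<in> WB k"
  then interpret two_wb k d1 d2 by unfold_locales
  show ?thesis by (rule compose_WB)
qed

lemma count_global:
  assumes "d1 \<in> WB k" "d2 \<in> WB k" "a \<in> Idx n k" "b \<in> Idx n k"
  shows "card {c \<in> Idx n k. delta k d1 c b \<and> delta k d2 a c}
     = (if delta k (compose k d1 d2) a b then n ^ cycles k d1 d2 else 0)"
proof -
  interpret two_wb k d1 d2 by unfold_locales (use assms in auto)
  show ?thesis using count_valid_gen[OF assms(3,4)] unfolding valid_def by simp
qed

definition chi :: "nat \<Rightarrow> diagram \<Rightarrow> (nat \<Rightarrow> nat) \<Rightarrow> (nat \<Rightarrow> nat) \<Rightarrow> complex" where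
  "chi k d a b = (if delta k d a b then 1 else 0)"

lemma phi_alt: "phi k n x v b = (if b \<in> Idx n k then (\<Sum>a\<in>Idx n k. (\<Sum>d\<in>WB k. x d * chi k d a b) * v a) else 0)"
  unfolding phi_def chi_def by simp

lemma dmul_out: "d \<notin> WB k \<Longrightarrow> dmul k n x y d = 0"
  unfolding dmul_def using compose_in_WB by (auto intro!: sum.neutral)

lemma dmul_Alg: "dmul k n x y \<in> Alg k"
  unfolding Alg_def using dmul_out by auto

lemma sum_chi_valid:
  assumes "d1 \<in> WB k" "d2 \<in> WB k" "a \<in> Idx n k" "b \<in> Idx n k"
  shows "(\<Sum>c\<in>Idx n k. chi k d1 c b * chi k d2 a c)
     = of_nat (n ^ cycles k d1 d2) * chi k (compose k d1 d2) a b"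
proof -
  have "(\<Sum>c\<in>Idx n k. chi k d1 c b * chi k d2 a c) = (\<Sum>c\<in>{c \<in> Idx n k. delta k d1 c b \<and> delta k d2 a c}. 1)"
  proof -
    have "(\<Sum>c\<in>Idx n k. chi k d1 c b * chi k d2 a c) = (\<Sum>c\<in>Idx n k. if delta k d1 c b \<and> delta k d2 a c then 1 else 0)"
      unfolding chi_def by (intro sum.cong refl) simp
    also have "\<dots> = (\<Sum>c\<in>{c \<in> Idx n k. delta k d1 c b \<and> delta k d2 a c}. 1)"
      using sum.inter_filter[of "Idx n k" "\<lambda>_. 1::complex" "\<lambda>c. delta k d1 c b \<and> delta k d2 a c"] by simp
    finally show ?thesis .
  qed
  also have "\<dots> = of_nat (card {c \<in> Idx n k. delta k d1 c b \<and> delta k d2 a c})" by simp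
  also have "\<dots> = of_nat (n ^ cycles k d1 d2) * chi k (compose k d1 d2) a b"
    using count_global[OF assms] unfolding chi_def by simp
  finally show ?thesis .
qed

lemma phi_dmul: "phi k n (dmul k n x y) v = phi k n x (phi k n y v)"
proof
  fix b
  show "phi k n (dmul k n x y) v b = phi k n x (phi k n y v) b"
  proof (cases "b \<in> Idx n k")
    case False then show ?thesis by (simp add: phi_alt)
  next
    case b: True
    let ?X = "\<lambda>a d1 d2. x d1 * y d2 * of_nat (n ^ cycles k d1 d2) * chi k (compose k d1 d2) a b * v a"
    have L: "phi k n (dmul k n x y) v b = (\<Sum>a\<in>Idx n k. \<Sum>d1\<in>WB k. \<Sum>d2\<in>WB k. ?X a d1 d2)"
    proof -
      have "(\<Sum>d\<in>WB k. dmul k n x y d * chi k d a b) =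
            (\<Sum>d1\<in>WB k. \<Sum>d2\<in>WB k. x d1 * y d2 * of_nat (n ^ cycles k d1 d2) * chi k (compose k d1 d2) a b)" for a
      proof -
        have "(\<Sum>d\<in>WB k. dmul k n x y d * chi k d a b) =
          (\<Sum>d\<in>WB k. \<Sum>d1\<in>WB k. \<Sum>d2\<in>WB k. (if compose k d1 d2 = d then x d1 * y d2 * of_nat n ^ cycles k d1 d2 * chi k d a b else 0))"
          unfolding dmul_def sum_distrib_right by (intro sum.cong refl) simp
        also have "\<dots> = (\<Sum>d1\<in>WB k. \<Sum>d2\<in>WB k. \<Sum>d\<in>WB k. (if compose k d1 d2 = d then x d1 * y d2 * of_nat n ^ cycles k d1 d2 * chi k d a b else 0))"
          apply (rule trans[OF sum.swap])
          apply (rule sum.cong[OF refl])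
          apply (rule sum.swap)
          done
        also have "\<dots> = (\<Sum>d1\<in>WB k. \<Sum>d2\<in>WB k. x d1 * y d2 * of_nat (n ^ cycles k d1 d2) * chi k (compose k d1 d2) a b)"
          by (intro sum.cong refl) (simp add: sum.delta compose_in_WB)
        finally show ?thesis .
      qed
      then show ?thesis using b by (simp add: phi_alt sum_distrib_right)
    qed
    have R: "phi k n x (phi k n y v) b = (\<Sum>a\<in>Idx n k. \<Sum>d1\<in>WB k. \<Sum>d2\<in>WB k. ?X a d1 d2)"
    proof -
      have "phi k n x (phi k n y v) b =
         (\<Sum>c\<in>Idx n k. (\<Sum>d1\<in>WB k. x d1 * chi k d1 c b) * (\<Sum>a\<in>Idx n k. (\<Sum>d2\<in>WB k. y d2 * chi k d2 a c) * v a))"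
        using b by (simp add: phi_alt)
      also have "\<dots> = (\<Sum>c\<in>Idx n k. \<Sum>a\<in>Idx n k. \<Sum>d2\<in>WB k. \<Sum>d1\<in>WB k.
            x d1 * y d2 * v a * (chi k d1 c b * chi k d2 a c))"
        by (simp add: sum_distrib_left sum_distrib_right mult_ac)
      also have "\<dots> = (\<Sum>a\<in>Idx n k. \<Sum>d1\<in>WB k. \<Sum>d2\<in>WB k. \<Sum>c\<in>Idx n k.
            x d1 * y d2 * v a * (chi k d1 c b * chi k d2 a c))"
        apply (rule trans[OF sum.swap])
        apply (rule sum.cong[OF refl])
        apply (rule trans[OF sum.swap])
        apply (rule trans)
         apply (rule sum.cong[OF refl])
         apply (rule sum.swap)
        apply (rule sum.swap)
        done
      also have "\<dots> = (\<Sum>a\<in>Idx n k. \<Sum>d1\<in>WB k. \<Sum>d2\<in>WB k. ?X a d1 d2)"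
      proof (intro sum.cong refl)
        fix a d1 d2 assume "a \<in> Idx n k" "d1 \<in> WB k" "d2 \<in> WB k"
        then show "(\<Sum>c\<in>Idx n k. x d1 * y d2 * v a * (chi k d1 c b * chi k d2 a c)) = ?X a d1 d2"
          using sum_chi_valid[of d1 k d2 a n b] b by (simp add: sum_distrib_left[symmetric] mult_ac)
      qed
      finally show ?thesis .
    qed
    show ?thesis using L R by simp
  qed
qed

lemma phi_add_x: "phi k n (\<lambda>d. x d + y d) v = (\<lambda>b. phi k n x v b + phi k n y v b)"
  unfolding phi_alt by (auto simp: algebra_simps sum.distrib)

lemma phi_diff_x: "phi k n (\<lambda>d. x d - y d) v = (\<lambda>b. phi k n x v b - phi k n y v b)"
  unfolding phi_alt by (auto simp: algebra_simps sum_subtractf)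

lemma phi_smult_x: "phi k n (\<lambda>d. c * x d) v = (\<lambda>b. c * phi k n x v b)"
  unfolding phi_alt by (auto simp: algebra_simps sum_distrib_left)

lemma phi_add_v: "phi k n x (\<lambda>a. u a + w a) = (\<lambda>b. phi k n x u b + phi k n x w b)"
  unfolding phi_alt by (auto simp: algebra_simps sum.distrib)

lemma phi_diff_v: "phi k n x (\<lambda>a. u a - w a) = (\<lambda>b. phi k n x u b - phi k n x w b)"
  unfolding phi_alt by (auto simp: algebra_simps sum_subtractf)

lemma phi_smult_v: "phi k n x (\<lambda>a. c * u a) = (\<lambda>b. c * phi k n x u b)"
  unfolding phi_alt by (auto simp: algebra_simps sum_distrib_left)

lemma phi_zero_v: "phi k n x (\<lambda>a. 0) = (\<lambda>b. 0)"
  unfolding phi_alt by auto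

lemma phi_Mvec: "phi k n x v \<in> Mvec n k"
  unfolding Mvec_def phi_alt by auto

lemma phi_cong_v: "(\<And>a. a \<in> Idx n k \<Longrightarrow> u a = w a) \<Longrightarrow> phi k n x u = phi k n x w"
  unfolding phi_alt by (auto intro!: sum.cong)

lemma phi_dbas: "d \<in> WB k \<Longrightarrow> phi k n (dbas d) v b = (if b \<in> Idx n k then (\<Sum>a\<in>Idx n k. chi k d a b * v a) else 0)"
  unfolding phi_alt dbas_def by (simp add: if_distrib[of "\<lambda>x. x * _"] sum.delta cong: if_cong)

lemma idd_WB: "idd k \<in> WB k"
  by (rule WB_I) (auto simp: idd_def pol_def verts_iff)

lemma delta_idd: "a \<in> Idx n k \<Longrightarrow> b \<in> Idx n k \<Longrightarrow> delta k (idd k) a b \<longleftrightarrow> a = b"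
proof
  assume a: "a \<in> Idx n k" and b: "b \<in> Idx n k" and d: "delta k (idd k) a b"
  show "a = b"
  proof
    fix i show "a i = b i"
    proof (cases "i < 2*k")
      case True
      then have "(True, i) \<in> verts k" by (simp add: verts_iff)
      then have "vlab a b (idd k (True, i)) = vlab a b (True, i)" using d unfolding delta_def by blast
      then show ?thesis using True by (simp add: idd_def vlab_def verts_iff)
    next
      case False then show ?thesis using a b unfolding Idx_def by auto
    qed
  qed
next
  assume "a = b" then show "delta k (idd k) a b"
    unfolding delta_def idd_def vlab_def by auto
qed

lemma phi_idd: "v \<in> Mvec n k \<Longrightarrow> phi k n (dbas (idd k)) v = v"
proof
  fix b assume v: "v \<in> Mvec n k"
  show "phi k n (dbas (idd k)) v b = v b"
  proof (cases "b \<in> Idx n k")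
    case True
    have "(\<Sum>a\<in>Idx n k. chi k (idd k) a b * v a) = (\<Sum>a\<in>Idx n k. if a = b then v a else 0)"
      using delta_idd[OF _ True] unfolding chi_def by (intro sum.cong) auto
    then show ?thesis using True phi_dbas[OF idd_WB] by (simp add: sum.delta')
  next
    case False then show ?thesis using v phi_dbas[OF idd_WB] unfolding Mvec_def by simp
  qed
qed

definition pr2 :: "nat \<Rightarrow> nat \<Rightarrow> nat \<Rightarrow> (nat \<Rightarrow> nat) \<Rightarrow> nat \<Rightarrow> nat" where
  "pr2 k j l a = a(j := l, k + j := l)"

definition A0 where "A0 n k j = {a \<in> Idx n k. a j = 0 \<and> a (k + j) = 0}"
definition Aeq where "Aeq n k j = {a \<in> Idx n k. a j = a (k + j)}"

lemma pr2_Idx: "j < k \<Longrightarrow> l < n \<Longrightarrow> a \<in> Idx n k \<Longrightarrow> pr2 k j l a \<in> Idx n k"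
  unfolding Idx_def pr2_def by auto

lemma pr2_pr2[simp]: "pr2 k j l (pr2 k j m a) = pr2 k j l a"
  unfolding pr2_def by auto

lemma sum_Aeq:
  assumes j: "j < k" and n: "0 < n"
  shows "(\<Sum>a\<in>Aeq n k j. F a) = (\<Sum>r\<in>A0 n k j. \<Sum>l<n. F (pr2 k j l r))"
proof -
  have bij: "bij_betw (\<lambda>(r, l). pr2 k j l r) (A0 n k j \<times> {..<n}) (Aeq n k j)"
  proof (rule bij_betwI')
    fix x y assume x: "x \<in> A0 n k j \<times> {..<n}" and y: "y \<in> A0 n k j \<times> {..<n}"
    obtain r l where xr: "x = (r, l)" by (cases x)
    obtain r' l' where yr: "y = (r', l')" by (cases y)
    show "((\<lambda>(r, l). pr2 k j l r) x = (\<lambda>(r, l). pr2 k j l r) y) = (x = y)"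
    proof
      assume e: "(\<lambda>(r, l). pr2 k j l r) x = (\<lambda>(r, l). pr2 k j l r) y"
      then have e': "r(j := l, k + j := l) = r'(j := l', k + j := l')" using xr yr by (simp add: pr2_def)
      have "l = l'" using fun_cong[OF e', of j] j by simp
      moreover have "r = r'"
      proof
        fix i show "r i = r' i"
        proof (cases "i = j \<or> i = k + j")
          case True then show ?thesis using x y xr yr unfolding A0_def by auto
        next
          case False then show ?thesis using fun_cong[OF e', of i] by simp
        qed
      qed
      ultimately show "x = y" using xr yr by simp
    qed simp
  next
    fix x assume x: "x \<in> A0 n k j \<times> {..<n}"
    obtain r l where xr: "x = (r, l)" by (cases x)
    then show "(\<lambda>(r, l). pr2 k j l r) x \<in> Aeq n k j"
      using x j pr2_Idx[of j k l n r] unfolding Aeq_def A0_def by (auto simp: pr2_def)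
  next
    fix a assume a: "a \<in> Aeq n k j"
    show "\<exists>x\<in>A0 n k j \<times> {..<n}. a = (\<lambda>(r, l). pr2 k j l r) x"
    proof (rule bexI[of _ "(pr2 k j 0 a, a j)"])
      show "a = (\<lambda>(r, l). pr2 k j l r) (pr2 k j 0 a, a j)"
        using a unfolding Aeq_def by (auto simp: pr2_def fun_eq_iff)
      show "(pr2 k j 0 a, a j) \<in> A0 n k j \<times> {..<n}"
        using a j n pr2_Idx[of j k 0 n a] unfolding Aeq_def A0_def Idx_def by (auto simp: pr2_def)
    qed
  qed
  have "(\<Sum>a\<in>Aeq n k j. F a) = (\<Sum>x\<in>A0 n k j \<times> {..<n}. F ((\<lambda>(r, l). pr2 k j l r) x))"
    using sum.reindex_bij_betw[OF bij, of F] by simp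
  also have "\<dots> = (\<Sum>r\<in>A0 n k j. \<Sum>l<n. F (pr2 k j l r))"
    by (simp only: sum.cartesian_product) (auto intro!: sum.cong)
  finally show ?thesis .
qed

lemma A0_sub: "A0 n k j \<subseteq> Idx n k" unfolding A0_def by auto
lemma Aeq_sub: "Aeq n k j \<subseteq> Idx n k" unfolding Aeq_def by auto

lemma finite_A0[simp]: "finite (A0 n k j)" using finite_subset[OF A0_sub finite_Idx] .
lemma finite_Aeq[simp]: "finite (Aeq n k j)" using finite_subset[OF Aeq_sub finite_Idx] .

lemma sum_Idx_Aeq: "(\<And>a. a \<in> Idx n k \<Longrightarrow> a j \<noteq> a (k + j) \<Longrightarrow> F a = 0) \<Longrightarrow>
   (\<Sum>a\<in>Idx n k. F a) = (\<Sum>a\<in>Aeq n k j. F a)"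
  by (rule sum.mono_neutral_right) (auto simp: Aeq_def)

section \<open>The diagrams c_j and the maps p_j\<close>

lemma cdiag_WB: "j < k \<Longrightarrow> cdiag k j \<in> WB k"
  by (rule WB_I) (auto simp: cdiag_def pol_def verts_iff)

lemma vlab_pr2: "vlab a (pr2 k j l b) = (vlab a b)((True, j) := l, (True, k + j) := l)"
  unfolding vlab_def pr2_def by (auto simp: fun_eq_iff)

lemma vlab_pr2a: "vlab (pr2 k j l a) b = (vlab a b)((False, j) := l, (False, k + j) := l)"
  unfolding vlab_def pr2_def by (auto simp: fun_eq_iff)

lemma delta_upd_pair:
  assumes d: "d \<in> WB k" and x1: "x1 \<in> verts k" and x2: "d x1 = x2" and eq: "f x1 = f x2"
  shows "(\<forall>x\<in>verts k. (f(x1 := l, x2 := l)) (d x) = (f(x1 := l, x2 := l)) x) \<longleftrightarrow> (\<forall>x\<in>verts k. f (d x) = f x)"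
proof -
  have ne: "x1 \<noteq> x2" using WB_D(2)[OF d x1] x2 by simp
  have dx2: "d x2 = x1" using WB_invol[OF d] x2 by metis
  have other: "x \<noteq> x1 \<Longrightarrow> x \<noteq> x2 \<Longrightarrow> d x \<noteq> x1 \<and> d x \<noteq> x2" for x
    using WB_invol[OF d, of x] x2 dx2 by metis
  show ?thesis
  proof (intro iffI ballI)
    fix x assume A: "\<forall>x\<in>verts k. (f(x1 := l, x2 := l)) (d x) = (f(x1 := l, x2 := l)) x" and x: "x \<in> verts k"
    show "f (d x) = f x"
    proof (cases "x = x1 \<or> x = x2")
      case True then show ?thesis using eq x2 dx2 by auto
    next
      case False then show ?thesis using A x other[of x] by auto
    qed
  next
    fix x assume A: "\<forall>x\<in>verts k. f (d x) = f x" and x: "x \<in> verts k"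
    show "(f(x1 := l, x2 := l)) (d x) = (f(x1 := l, x2 := l)) x"
    proof (cases "x = x1 \<or> x = x2")
      case True then show ?thesis using ne x2 dx2 by auto
    next
      case False then show ?thesis using A x other[of x] by auto
    qed
  qed
qed

lemma delta_top:
  assumes d: "d \<in> WB k" and j: "j < k" and dj: "d (True, j) = (True, k + j)"
  shows "delta k d a b \<Longrightarrow> b j = b (k + j)"
    and "b j = b (k + j) \<Longrightarrow> delta k d a (pr2 k j l b) = delta k d a b"
proof -
  have x1: "(True, j) \<in> verts k" using j by (simp add: verts_iff)
  show "delta k d a b \<Longrightarrow> b j = b (k + j)"
    unfolding delta_def using x1 dj by (metis snd_conv vlab_def fst_conv)
  assume "b j = b (k + j)"
  then have eq: "vlab a b (True, j) = vlab a b (True, k + j)" by (simp add: vlab_def)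
  show "delta k d a (pr2 k j l b) = delta k d a b"
    unfolding delta_def vlab_pr2 using delta_upd_pair[OF d x1 dj eq] by simp
qed

lemma delta_bot:
  assumes d: "d \<in> WB k" and j: "j < k" and dj: "d (False, j) = (False, k + j)"
  shows "delta k d a b \<Longrightarrow> a j = a (k + j)"
    and "a j = a (k + j) \<Longrightarrow> delta k d (pr2 k j l a) b = delta k d a b"
proof -
  have x1: "(False, j) \<in> verts k" using j by (simp add: verts_iff)
  show "delta k d a b \<Longrightarrow> a j = a (k + j)"
    unfolding delta_def using x1 dj by (metis snd_conv vlab_def fst_conv)
  assume "a j = a (k + j)"
  then have eq: "vlab a b (False, j) = vlab a b (False, k + j)" by (simp add: vlab_def)
  show "delta k d (pr2 k j l a) b = delta k d a b"
    unfolding delta_def vlab_pr2a using delta_upd_pair[OF d x1 dj eq] by simp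
qed

lemma pmap_alt: "pmap k n j v b = (if b \<in> Idx n k then (1 / of_nat n) *
   (if b j = b (k + j) then (\<Sum>l<n. v (pr2 k j l b)) else 0) else 0)"
  unfolding pmap_def pr2_def by simp

lemma pmap_Mvec: "pmap k n j v \<in> Mvec n k"
  unfolding Mvec_def pmap_alt by auto

lemma pmap_diff: "pmap k n j (\<lambda>b. u b - w b) = (\<lambda>b. pmap k n j u b - pmap k n j w b)"
  by (rule ext) (simp add: pmap_alt sum_subtractf right_diff_distrib diff_divide_distrib)

lemma pmap_zero: "pmap k n j (\<lambda>b. 0) = (\<lambda>b. 0)"
  unfolding pmap_alt by auto

lemma pmap_idem:
  assumes j: "j < k" and n: "0 < n"
  shows "pmap k n j (pmap k n j v) = pmap k n j v"
proof
  fix b show "pmap k n j (pmap k n j v) b = pmap k n j v b"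
  proof (cases "b \<in> Idx n k \<and> b j = b (k + j)")
    case True
    have "pmap k n j v (pr2 k j l b) = (1 / of_nat n) * (\<Sum>m<n. v (pr2 k j m b))" if "l < n" for l
      using pr2_Idx[OF j that] True j unfolding pmap_alt by (simp add: pr2_def)
    then have "(\<Sum>l<n. pmap k n j v (pr2 k j l b)) = of_nat n * ((1 / of_nat n) * (\<Sum>m<n. v (pr2 k j m b)))"
      by simp
    then show ?thesis using True n by (simp add: pmap_alt)
  next
    case False then show ?thesis by (auto simp: pmap_alt)
  qed
qed

lemma pr2_comm: "j < k \<Longrightarrow> j' < k \<Longrightarrow> j \<noteq> j' \<Longrightarrow> pr2 k j l (pr2 k j' m b) = pr2 k j' m (pr2 k j l b)"
  unfolding pr2_def by (auto simp: fun_eq_iff)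

lemma pmap_comm:
  assumes j: "j < k" and j': "j' < k" and ne: "j \<noteq> j'"
  shows "pmap k n j (pmap k n j' v) = pmap k n j' (pmap k n j v)"
proof
  fix b
  have L: "pmap k n j (pmap k n j' v) b = (if b \<in> Idx n k \<and> b j = b (k + j) \<and> b j' = b (k + j') then
     (1 / of_nat n) * (1 / of_nat n) * (\<Sum>l<n. \<Sum>m<n. v (pr2 k j' m (pr2 k j l b))) else 0)"
  proof (cases "b \<in> Idx n k \<and> b j = b (k + j)")
    case True
    have "pmap k n j' v (pr2 k j l b) = (if b j' = b (k + j') then (1 / of_nat n) * (\<Sum>m<n. v (pr2 k j' m (pr2 k j l b))) else 0)"
      if "l < n" for l
      using pr2_Idx[OF j that] True j j' ne unfolding pmap_alt by (simp add: pr2_def)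
    then show ?thesis using True by (simp add: pmap_alt sum_divide_distrib divide_divide_eq_left)
  next
    case False then show ?thesis by (auto simp: pmap_alt)
  qed
  have R: "pmap k n j' (pmap k n j v) b = (if b \<in> Idx n k \<and> b j' = b (k + j') \<and> b j = b (k + j) then
     (1 / of_nat n) * (1 / of_nat n) * (\<Sum>m<n. \<Sum>l<n. v (pr2 k j l (pr2 k j' m b))) else 0)"
  proof (cases "b \<in> Idx n k \<and> b j' = b (k + j')")
    case True
    have "pmap k n j v (pr2 k j' m b) = (if b j = b (k + j) then (1 / of_nat n) * (\<Sum>l<n. v (pr2 k j l (pr2 k j' m b))) else 0)"
      if "m < n" for m
      using pr2_Idx[OF j' that] True j j' ne unfolding pmap_alt by (simp add: pr2_def)
    then show ?thesis using True by (simp add: pmap_alt sum_divide_distrib divide_divide_eq_left)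
  next
    case False then show ?thesis by (auto simp: pmap_alt)
  qed
  show "pmap k n j (pmap k n j' v) b = pmap k n j' (pmap k n j v) b"
  proof -
    have "(\<Sum>l<n. \<Sum>m<n. v (pr2 k j' m (pr2 k j l b))) = (\<Sum>m<n. \<Sum>l<n. v (pr2 k j l (pr2 k j' m b)))"
      by (subst sum.swap) (simp add: pr2_comm[OF j j' ne])
    then show ?thesis unfolding L R by auto
  qed
qed

lemma c_elem_eq: "c_elem k n j = (\<lambda>d. (1 / of_nat n) * dbas (cdiag k j) d)"
  unfolding c_elem_def dbas_def by auto

lemma delta_cdiag:
  assumes j: "j < k" and a: "a \<in> Idx n k" and b: "b \<in> Idx n k"
  shows "delta k (cdiag k j) a b \<longleftrightarrow> b j = b (k + j) \<and> a j = a (k + j) \<and>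
     (\<forall>i<2*k. i \<noteq> j \<longrightarrow> i \<noteq> k + j \<longrightarrow> a i = b i)"
proof
  assume d: "delta k (cdiag k j) a b"
  have v: "\<And>x. x \<in> verts k \<Longrightarrow> vlab a b (cdiag k j x) = vlab a b x" using d unfolding delta_def by blast
  have "b j = b (k + j)" using v[of "(True, j)"] j by (simp add: cdiag_def vlab_def verts_iff)
  moreover have "a j = a (k + j)" using v[of "(False, j)"] j by (simp add: cdiag_def vlab_def verts_iff)
  moreover have "\<forall>i<2*k. i \<noteq> j \<longrightarrow> i \<noteq> k + j \<longrightarrow> a i = b i"
  proof (intro allI impI)
    fix i assume "i < 2*k" "i \<noteq> j" "i \<noteq> k + j"
    then show "a i = b i" using v[of "(True, i)"] by (simp add: cdiag_def vlab_def verts_iff)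
  qed
  ultimately show "b j = b (k + j) \<and> a j = a (k + j) \<and> (\<forall>i<2*k. i \<noteq> j \<longrightarrow> i \<noteq> k + j \<longrightarrow> a i = b i)"
    by blast
next
  assume H: "b j = b (k + j) \<and> a j = a (k + j) \<and> (\<forall>i<2*k. i \<noteq> j \<longrightarrow> i \<noteq> k + j \<longrightarrow> a i = b i)"
  show "delta k (cdiag k j) a b" unfolding delta_def
  proof
    fix x assume x: "x \<in> verts k"
    obtain t i where ti: "x = (t, i)" by (cases x)
    show "vlab a b (cdiag k j x) = vlab a b x"
      using H x j unfolding ti by (auto simp: cdiag_def vlab_def verts_iff)
  qed
qed

lemma phi_cdiag:
  assumes j: "j < k" and n: "0 < n" and b: "b \<in> Idx n k"
  shows "(\<Sum>a\<in>Idx n k. chi k (cdiag k j) a b * v a) =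
     (if b j = b (k + j) then (\<Sum>l<n. v (pr2 k j l b)) else 0)"
proof (cases "b j = b (k + j)")
  case False
  then have "chi k (cdiag k j) a b = 0" if "a \<in> Idx n k" for a
    using delta_cdiag[OF j that b] unfolding chi_def by auto
  then show ?thesis using False by simp
next
  case True
  have "(\<Sum>a\<in>Idx n k. chi k (cdiag k j) a b * v a) = (\<Sum>a\<in>Aeq n k j. chi k (cdiag k j) a b * v a)"
    by (rule sum_Idx_Aeq) (use delta_cdiag[OF j _ b] in \<open>auto simp: chi_def\<close>)
  also have "\<dots> = (\<Sum>r\<in>A0 n k j. \<Sum>l<n. chi k (cdiag k j) (pr2 k j l r) b * v (pr2 k j l r))"
    by (rule sum_Aeq[OF j n])
  also have "\<dots> = (\<Sum>r\<in>A0 n k j. if r = pr2 k j 0 b then (\<Sum>l<n. v (pr2 k j l r)) else 0)"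
  proof (intro sum.cong refl)
    fix r assume r: "r \<in> A0 n k j"
    have eqv: "chi k (cdiag k j) (pr2 k j l r) b = (if r = pr2 k j 0 b then 1 else 0)" if l: "l < n" for l
    proof -
      have "delta k (cdiag k j) (pr2 k j l r) b \<longleftrightarrow> r = pr2 k j 0 b"
      proof
        assume "delta k (cdiag k j) (pr2 k j l r) b"
        then have H: "\<forall>i<2*k. i \<noteq> j \<longrightarrow> i \<noteq> k + j \<longrightarrow> pr2 k j l r i = b i"
          using delta_cdiag[OF j pr2_Idx[OF j l A0_sub[THEN subsetD, OF r]] b] by blast
        show "r = pr2 k j 0 b"
        proof
          fix i show "r i = pr2 k j 0 b i"
          proof (cases "i < 2*k")
            case True then show ?thesis using H r unfolding pr2_def A0_def by (cases "i = j \<or> i = k + j") auto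
          next
            case False then show ?thesis using r b j unfolding A0_def Idx_def pr2_def by auto
          qed
        qed
      next
        assume "r = pr2 k j 0 b"
        then show "delta k (cdiag k j) (pr2 k j l r) b"
          using delta_cdiag[OF j pr2_Idx[OF j l A0_sub[THEN subsetD, OF r]] b] True by (simp add: pr2_def)
      qed
      then show ?thesis unfolding chi_def by simp
    qed
    show "(\<Sum>l<n. chi k (cdiag k j) (pr2 k j l r) b * v (pr2 k j l r)) =
      (if r = pr2 k j 0 b then (\<Sum>l<n. v (pr2 k j l r)) else 0)"
      using eqv by (auto intro: sum.neutral)
  qed
  also have "\<dots> = (\<Sum>l<n. v (pr2 k j l (pr2 k j 0 b)))"
  proof -
    have "pr2 k j 0 b \<in> A0 n k j" using pr2_Idx[OF j n b] j unfolding A0_def pr2_def by auto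
    then show ?thesis using sum.delta[of "A0 n k j" "pr2 k j 0 b" "\<lambda>r. \<Sum>l<n. v (pr2 k j l r)"] by simp
  qed
  finally show ?thesis using True by simp
qed

lemma phi_c_elem:
  assumes j: "j < k" and n: "0 < n"
  shows "phi k n (c_elem k n j) v = pmap k n j v"
proof
  fix b
  show "phi k n (c_elem k n j) v b = pmap k n j v b"
    unfolding c_elem_eq phi_smult_x using phi_cdiag[OF j n, of b v] phi_dbas[OF cdiag_WB[OF j], of n v b]
    by (simp add: pmap_alt)
qed

section \<open>The idempotent e\<close>

lemma eprod_diff: "eprod k n m (\<lambda>b. u b - w b) = (\<lambda>b. eprod k n m u b - eprod k n m w b)"
proof (induction m arbitrary: u w)
  case 0 then show ?case by simp
next
  case (Suc m)
  have "eprod k n (Suc m) (\<lambda>b. u b - w b) = eprod k n m (\<lambda>b. (u b - pmap k n m u b) - (w b - pmap k n m w b))"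
    by (simp add: pmap_diff algebra_simps)
  also have "\<dots> = (\<lambda>b. eprod k n m (\<lambda>b. u b - pmap k n m u b) b - eprod k n m (\<lambda>b. w b - pmap k n m w b) b)"
    by (rule Suc.IH)
  finally show ?case by simp
qed

lemma eprod_zero: "eprod k n m (\<lambda>b. 0) = (\<lambda>b. 0)"
  by (induction m) (simp_all add: pmap_zero)

lemma eprod_Mvec: "v \<in> Mvec n k \<Longrightarrow> eprod k n m v \<in> Mvec n k"
proof (induction m arbitrary: v)
  case 0 then show ?case by simp
next
  case (Suc m)
  have "(\<lambda>b. v b - pmap k n m v b) \<in> Mvec n k"
    using Suc.prems pmap_Mvec[of k n m v] unfolding Mvec_def by auto
  then show ?case using Suc.IH by simp
qed

lemma eprod_pmap_comm:
  "m \<le> j \<Longrightarrow> j < k \<Longrightarrow> pmap k n j (eprod k n m v) = eprod k n m (pmap k n j v)"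
proof (induction m arbitrary: v)
  case 0 then show ?case by simp
next
  case (Suc m)
  have "pmap k n j (eprod k n (Suc m) v) = eprod k n m (pmap k n j (\<lambda>b. v b - pmap k n m v b))"
    using Suc by simp
  also have "\<dots> = eprod k n m (\<lambda>b. pmap k n j v b - pmap k n m (pmap k n j v) b)"
    using pmap_comm[of j k m n v] Suc.prems by (simp add: pmap_diff)
  also have "\<dots> = eprod k n (Suc m) (pmap k n j v)" by simp
  finally show ?case .
qed

lemma eprod_kill_left:
  assumes n: "0 < n"
  shows "m \<le> k \<Longrightarrow> j < m \<Longrightarrow> pmap k n j (eprod k n m v) = (\<lambda>b. 0)"
proof (induction m arbitrary: v)
  case 0 then show ?case by simp
next
  case (Suc m)
  show ?case
  proof (cases "j < m")
    case True then show ?thesis using Suc by simp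
  next
    case False
    then have jm: "j = m" using Suc by simp
    have "pmap k n j (eprod k n (Suc m) v) = eprod k n m (pmap k n m (\<lambda>b. v b - pmap k n m v b))"
      using eprod_pmap_comm[of m m k n] Suc.prems jm by simp
    also have "\<dots> = eprod k n m (\<lambda>b. 0)"
      using pmap_idem[of m k n v] Suc.prems n by (simp add: pmap_diff)
    finally show ?thesis by (simp add: eprod_zero)
  qed
qed

lemma eprod_kill_right:
  assumes n: "0 < n"
  shows "m \<le> k \<Longrightarrow> j < m \<Longrightarrow> eprod k n m (pmap k n j v) = (\<lambda>b. 0)"
proof (induction m arbitrary: v)
  case 0 then show ?case by simp
next
  case (Suc m)
  show ?case
  proof (cases "j < m")
    case True
    have "eprod k n (Suc m) (pmap k n j v) = eprod k n m (\<lambda>b. pmap k n j v b - pmap k n j (pmap k n m v) b)"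
      using pmap_comm[of j k m n v] Suc.prems True by simp
    also have "\<dots> = (\<lambda>b. 0)" using Suc.IH Suc.prems True by (simp add: eprod_diff)
    finally show ?thesis .
  next
    case False
    then have jm: "j = m" using Suc by simp
    have "eprod k n (Suc m) (pmap k n j v) = eprod k n m (\<lambda>b. 0)"
      using pmap_idem[of m k n v] Suc.prems n jm by simp
    then show ?thesis by (simp add: eprod_zero)
  qed
qed

lemma eprod_fix: "(\<And>j. j < m \<Longrightarrow> pmap k n j w = (\<lambda>b. 0)) \<Longrightarrow> eprod k n m w = w"
  by (induction m) auto

lemma emap_idem: "0 < n \<Longrightarrow> emap k n (emap k n v) = emap k n v"
  unfolding emap_def by (rule eprod_fix) (rule eprod_kill_left, auto)

lemma emap_kill_left: "0 < n \<Longrightarrow> j < k \<Longrightarrow> pmap k n j (emap k n v) = (\<lambda>b. 0)"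
  unfolding emap_def by (rule eprod_kill_left) auto

lemma emap_kill_right: "0 < n \<Longrightarrow> j < k \<Longrightarrow> emap k n (pmap k n j v) = (\<lambda>b. 0)"
  unfolding emap_def by (rule eprod_kill_right) auto

lemma emap_diff: "emap k n (\<lambda>b. u b - w b) = (\<lambda>b. emap k n u b - emap k n w b)"
  unfolding emap_def by (rule eprod_diff)

lemma emap_zero: "emap k n (\<lambda>b. 0) = (\<lambda>b. 0)"
  unfolding emap_def by (rule eprod_zero)

lemma emap_Mvec: "v \<in> Mvec n k \<Longrightarrow> emap k n v \<in> Mvec n k"
  unfolding emap_def by (rule eprod_Mvec)

lemma eM_fix: "0 < n \<Longrightarrow> v \<in> eM k n \<Longrightarrow> emap k n v = v"
  unfolding eM_def using emap_idem by auto

lemma eM_Mvec: "v \<in> eM k n \<Longrightarrow> v \<in> Mvec n k"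
  unfolding eM_def using emap_Mvec by auto

lemma eM_iff: "0 < n \<Longrightarrow> v \<in> eM k n \<longleftrightarrow> v \<in> Mvec n k \<and> emap k n v = v"
  using eM_fix eM_Mvec unfolding eM_def by (metis image_eqI)

section \<open>phi(b) = e\<close>

lemma phi_one_minus_c:
  assumes j: "j < k" and n: "0 < n" and v: "v \<in> Mvec n k"
  shows "phi k n (\<lambda>d. dbas (idd k) d - c_elem k n j d) v = (\<lambda>b. v b - pmap k n j v b)"
  using phi_idd[OF v] phi_c_elem[OF j n] by (simp add: phi_diff_x)

lemma phi_bprod: "0 < n \<Longrightarrow> m \<le> k \<Longrightarrow> v \<in> Mvec n k \<Longrightarrow> phi k n (bprod k n m) v = eprod k n m v"
proof (induction m arbitrary: v)
  case 0 then show ?case by (simp add: phi_idd)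
next
  case (Suc m)
  have vm: "(\<lambda>b. v b - pmap k n m v b) \<in> Mvec n k"
    using Suc.prems pmap_Mvec[of k n m v] unfolding Mvec_def by auto
  have "phi k n (bprod k n (Suc m)) v = phi k n (bprod k n m) (phi k n (\<lambda>d. dbas (idd k) d - c_elem k n m d) v)"
    by (simp add: phi_dmul)
  also have "\<dots> = phi k n (bprod k n m) (\<lambda>b. v b - pmap k n m v b)"
    using phi_one_minus_c[of m k n v] Suc.prems by simp
  also have "\<dots> = eprod k n m (\<lambda>b. v b - pmap k n m v b)" using Suc.IH[OF _ _ vm] Suc.prems by simp
  finally show ?case by simp
qed

lemma phi_b: "0 < n \<Longrightarrow> v \<in> Mvec n k \<Longrightarrow> phi k n (b_elem k n) v = emap k n v"
  unfolding b_elem_def emap_def using phi_bprod by simp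

section \<open>Forbidden pairs\<close>

lemma forb_top:
  assumes d: "d \<in> WB k" and j: "j < k" and dj: "d (True, j) = (True, k + j)" and n: "0 < n"
  shows "pmap k n j (phi k n (dbas d) w) = phi k n (dbas d) w"
proof
  fix b
  show "pmap k n j (phi k n (dbas d) w) b = phi k n (dbas d) w b"
  proof (cases "b \<in> Idx n k")
    case False then show ?thesis by (simp add: pmap_alt phi_dbas[OF d])
  next
    case b: True
    show ?thesis
    proof (cases "b j = b (k + j)")
      case False
      then have "chi k d a b = 0" for a using delta_top(1)[OF d j dj, of a b] unfolding chi_def by auto
      then show ?thesis using False b by (simp add: pmap_alt phi_dbas[OF d])
    next
      case True
      have "phi k n (dbas d) w (pr2 k j l b) = phi k n (dbas d) w b" if l: "l < n" for l
        using pr2_Idx[OF j l b] b delta_top(2)[OF d j dj True] unfolding phi_dbas[OF d] chi_def by simp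
      then show ?thesis using True b n by (simp add: pmap_alt)
    qed
  qed
qed

lemma forb_bot:
  assumes d: "d \<in> WB k" and j: "j < k" and dj: "d (False, j) = (False, k + j)" and n: "0 < n"
  shows "phi k n (dbas d) (pmap k n j u) = phi k n (dbas d) u"
proof
  fix b
  show "phi k n (dbas d) (pmap k n j u) b = phi k n (dbas d) u b"
  proof (cases "b \<in> Idx n k")
    case False then show ?thesis by (simp add: phi_dbas[OF d])
  next
    case b: True
    have z: "chi k d a b = 0" if "a j \<noteq> a (k + j)" for a
      using delta_bot(1)[OF d j dj, of a b] that unfolding chi_def by auto
    have inv: "chi k d (pr2 k j m r) b = chi k d r b" if r: "r \<in> A0 n k j" for r m
    proof -
      have "r j = r (k + j)" using r unfolding A0_def by simp
      then show ?thesis using delta_bot(2)[OF d j dj, of r m b] unfolding chi_def by simp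
    qed
    have "(\<Sum>a\<in>Idx n k. chi k d a b * pmap k n j u a) = (\<Sum>a\<in>Aeq n k j. chi k d a b * pmap k n j u a)"
      by (rule sum_Idx_Aeq) (use z in auto)
    also have "\<dots> = (\<Sum>r\<in>A0 n k j. \<Sum>m<n. chi k d (pr2 k j m r) b * pmap k n j u (pr2 k j m r))"
      by (rule sum_Aeq[OF j n])
    also have "\<dots> = (\<Sum>r\<in>A0 n k j. \<Sum>m<n. chi k d r b * ((1 / of_nat n) * (\<Sum>l<n. u (pr2 k j l r))))"
    proof (intro sum.cong refl)
      fix r m assume r: "r \<in> A0 n k j" and m: "m \<in> {..<n}"
      have "pr2 k j m r \<in> Idx n k" using pr2_Idx[OF j _ A0_sub[THEN subsetD, OF r]] m by simp
      then show "chi k d (pr2 k j m r) b * pmap k n j u (pr2 k j m r) = chi k d r b * ((1 / of_nat n) * (\<Sum>l<n. u (pr2 k j l r)))"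
        using inv[OF r] by (simp add: pmap_alt pr2_def)
    qed
    also have "\<dots> = (\<Sum>r\<in>A0 n k j. \<Sum>l<n. chi k d (pr2 k j l r) b * u (pr2 k j l r))"
      using n inv by (simp add: sum_distrib_left)
    also have "\<dots> = (\<Sum>a\<in>Aeq n k j. chi k d a b * u a)"
      by (rule sum_Aeq[OF j n, symmetric])
    also have "\<dots> = (\<Sum>a\<in>Idx n k. chi k d a b * u a)"
      by (rule sum_Idx_Aeq[symmetric]) (use z in auto)
    finally show ?thesis using b by (simp add: phi_dbas[OF d])
  qed
qed

lemma has_forbidden_D:
  "has_forbidden k d \<Longrightarrow> \<exists>j<k. d (True, j) = (True, k + j) \<or> d (False, j) = (False, k + j)"
  unfolding has_forbidden_def by auto

lemma forb_kill:
  assumes d: "d \<in> WB k" and f: "has_forbidden k d" and n: "0 < n" and v: "v \<in> Mvec n k"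
  shows "emap k n (phi k n (dbas d) (emap k n v)) = (\<lambda>b. 0)"
proof -
  obtain j where j: "j < k" and dj: "d (True, j) = (True, k + j) \<or> d (False, j) = (False, k + j)"
    using has_forbidden_D[OF f] by blast
  show ?thesis
  proof (cases "d (True, j) = (True, k + j)")
    case True
    then show ?thesis using forb_top[OF d j True n, of "emap k n v"] emap_kill_right[OF n j] by metis
  next
    case False
    then have dj': "d (False, j) = (False, k + j)" using dj by simp
    have "phi k n (dbas d) (emap k n v) = phi k n (dbas d) (pmap k n j (emap k n v))"
      using forb_bot[OF d j dj' n] by simp
    also have "\<dots> = (\<lambda>b. 0)" using emap_kill_left[OF n j] phi_zero_v by metis
    finally show ?thesis by (simp add: emap_zero)
  qed
qed

section \<open>Labellings and the invariance equations\<close>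

definition Pset :: "nat \<Rightarrow> vtx set" where "Pset k = {x \<in> verts k. \<not> pol k x}"
definition Qset :: "nat \<Rightarrow> vtx set" where "Qset k = {x \<in> verts k. pol k x}"

definition Lab :: "nat \<Rightarrow> nat \<Rightarrow> (vtx \<Rightarrow> nat) set" where
  "Lab n k = {l. (\<forall>x\<in>verts k. l x < n) \<and> (\<forall>x. x \<notin> verts k \<longrightarrow> l x = 0)}"

definition star :: "nat \<Rightarrow> nat \<Rightarrow> ((vtx \<Rightarrow> nat) \<Rightarrow> complex) \<Rightarrow> bool" where
  "star n k t \<longleftrightarrow> (\<forall>l\<in>Lab n k. \<forall>\<sigma><n. \<forall>\<tau><n.
     (\<Sum>x\<in>Pset k. if l x = \<sigma> then t (l(x := \<tau>)) else 0) = (\<Sum>y\<in>Qset k. if l y = \<tau> then t (l(y := \<sigma>)) else 0))"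

definition along :: "nat \<Rightarrow> diagram \<Rightarrow> (vtx \<Rightarrow> nat) \<Rightarrow> bool" where
  "along k d l \<longleftrightarrow> (\<forall>x\<in>verts k. l (d x) = l x)"

definition chiL :: "nat \<Rightarrow> diagram \<Rightarrow> (vtx \<Rightarrow> nat) \<Rightarrow> complex" where
  "chiL k d l = (if along k d l then 1 else 0)"

definition canon :: "nat \<Rightarrow> diagram \<Rightarrow> vtx \<Rightarrow> nat" where
  "canon k d x = (if x \<in> Pset k then snd x else if x \<in> Qset k then snd (d x) else 0)"

lemma chi_chiL: "chi k d a b = chiL k d (vlab a b)"
  unfolding chi_def chiL_def delta_def along_def by simp

lemma finite_Pset[simp]: "finite (Pset k)" and finite_Qset[simp]: "finite (Qset k)"
  unfolding Pset_def Qset_def by auto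

lemma PQ_disj: "x \<in> Pset k \<Longrightarrow> x \<notin> Qset k"
  unfolding Pset_def Qset_def by auto

lemma PQ_verts: "x \<in> verts k \<Longrightarrow> x \<in> Pset k \<or> x \<in> Qset k"
  unfolding Pset_def Qset_def by auto

lemma Pset_verts: "x \<in> Pset k \<Longrightarrow> x \<in> verts k" and Qset_verts: "x \<in> Qset k \<Longrightarrow> x \<in> verts k"
  unfolding Pset_def Qset_def by auto

lemma WB_PQ: "d \<in> WB k \<Longrightarrow> x \<in> Pset k \<Longrightarrow> d x \<in> Qset k"
  and WB_QP: "d \<in> WB k \<Longrightarrow> x \<in> Qset k \<Longrightarrow> d x \<in> Pset k"
  unfolding Pset_def Qset_def using WB_D by auto

lemma inj_snd_P: "inj_on snd (Pset k)"
  unfolding Pset_def pol_def inj_on_def by auto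

lemma snd_P: "snd ` Pset k = {..<2*k}"
proof
  show "snd ` Pset k \<subseteq> {..<2*k}" unfolding Pset_def verts_iff by auto
  show "{..<2*k} \<subseteq> snd ` Pset k"
  proof
    fix i assume i: "i \<in> {..<2*k}"
    have "(i \<ge> k, i) \<in> Pset k" using i unfolding Pset_def pol_def verts_iff by auto
    then show "i \<in> snd ` Pset k" by force
  qed
qed

lemma card_P: "card (Pset k) = 2*k"
  using card_image[OF inj_snd_P[of k]] snd_P[of k] by simp

lemma Lab_upd: "l \<in> Lab n k \<Longrightarrow> x \<in> verts k \<Longrightarrow> v < n \<Longrightarrow> l(x := v) \<in> Lab n k"
  unfolding Lab_def by auto

lemma vlab_Lab: "a \<in> Idx n k \<Longrightarrow> b \<in> Idx n k \<Longrightarrow> vlab a b \<in> Lab n k"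
  unfolding Lab_def Idx_def vlab_def by (auto simp: verts_iff)

lemma along_upd:
  assumes d: "d \<in> WB k" and x: "x \<in> verts k"
  shows "along k d (l(x := v)) \<longleftrightarrow> l (d x) = v \<and> (\<forall>z\<in>verts k. z \<noteq> x \<longrightarrow> z \<noteq> d x \<longrightarrow> l (d z) = l z)"
proof -
  have ne: "d x \<noteq> x" using WB_D(2)[OF d x] .
  have other: "z \<noteq> x \<Longrightarrow> z \<noteq> d x \<Longrightarrow> d z \<noteq> x \<and> d z \<noteq> d x" for z
    using WB_invol[OF d, of z] WB_invol[OF d, of x] by metis
  have dx: "d x \<in> verts k" using WB_D(1)[OF d x] .
  have ddx: "d (d x) = x" using WB_invol[OF d] .
  show ?thesis unfolding along_def
  proof (intro iffI conjI ballI impI)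
    assume A: "\<forall>z\<in>verts k. (l(x := v)) (d z) = (l(x := v)) z"
    show "l (d x) = v" using A x ne by (metis fun_upd_same fun_upd_other)
    fix z assume "z \<in> verts k" "z \<noteq> x" "z \<noteq> d x"
    then show "l (d z) = l z" using A other[of z] by (metis fun_upd_other)
  next
    assume A: "l (d x) = v \<and> (\<forall>z\<in>verts k. z \<noteq> x \<longrightarrow> z \<noteq> d x \<longrightarrow> l (d z) = l z)"
    fix z assume z: "z \<in> verts k"
    show "(l(x := v)) (d z) = (l(x := v)) z"
    proof (cases "z = x")
      case True then show ?thesis using A ne by simp
    next
      case False
      show ?thesis
      proof (cases "z = d x")
        case True then show ?thesis using A ne ddx by simp
      next
        case F2: False then show ?thesis using A z False other[of z] by simp
      qed
    qed
  qed
qed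

lemma star_chiL:
  assumes d: "d \<in> WB k"
  shows "star n k (chiL k d)"
  unfolding star_def
proof (intro ballI allI impI)
  fix l \<sigma> \<tau> assume l: "l \<in> Lab n k"
  have bij: "bij_betw d (Qset k) (Pset k)"
  proof (rule bij_betw_byWitness[of _ d])
    show "\<forall>a\<in>Pset k. d (d a) = a" "\<forall>a\<in>Qset k. d (d a) = a" using WB_invol[OF d] by auto
    show "d ` Pset k \<subseteq> Qset k" "d ` Qset k \<subseteq> Pset k" using WB_PQ[OF d] WB_QP[OF d] by auto
  qed
  have "(\<Sum>x\<in>Pset k. if l x = \<sigma> then chiL k d (l(x := \<tau>)) else 0)
      = (\<Sum>y\<in>Qset k. if l (d y) = \<sigma> then chiL k d (l(d y := \<tau>)) else 0)"
    using sum.reindex_bij_betw[OF bij, of "\<lambda>x. if l x = \<sigma> then chiL k d (l(x := \<tau>)) else 0"]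
    by simp
  also have "\<dots> = (\<Sum>y\<in>Qset k. if l y = \<tau> then chiL k d (l(y := \<sigma>)) else 0)"
  proof (intro sum.cong refl)
    fix y assume y: "y \<in> Qset k"
    have yv: "y \<in> verts k" and dyv: "d y \<in> verts k" using y Qset_verts WB_D(1)[OF d] by auto
    have ddy: "d (d y) = y" using WB_invol[OF d] .
    have e1: "along k d (l(d y := \<tau>)) \<longleftrightarrow> l y = \<tau> \<and> (\<forall>z\<in>verts k. z \<noteq> d y \<longrightarrow> z \<noteq> y \<longrightarrow> l (d z) = l z)"
      using along_upd[OF d dyv] ddy by auto
    have e2: "along k d (l(y := \<sigma>)) \<longleftrightarrow> l (d y) = \<sigma> \<and> (\<forall>z\<in>verts k. z \<noteq> y \<longrightarrow> z \<noteq> d y \<longrightarrow> l (d z) = l z)"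
      using along_upd[OF d yv] by auto
    show "(if l (d y) = \<sigma> then chiL k d (l(d y := \<tau>)) else 0) = (if l y = \<tau> then chiL k d (l(y := \<sigma>)) else 0)"
      unfolding chiL_def using e1 e2 by auto
  qed
  finally show "(\<Sum>x\<in>Pset k. if l x = \<sigma> then chiL k d (l(x := \<tau>)) else 0) =
       (\<Sum>y\<in>Qset k. if l y = \<tau> then chiL k d (l(y := \<sigma>)) else 0)" .
qed

lemma sum_if_swap:
  fixes c :: "'d \<Rightarrow> complex"
  assumes "finite S"
  shows "(\<Sum>x\<in>A. if Q x then \<Sum>d\<in>S. c d * f d x else 0) = (\<Sum>d\<in>S. c d * (\<Sum>x\<in>A. if Q x then f d x else 0))"
proof -
  have "(\<Sum>x\<in>A. if Q x then \<Sum>d\<in>S. c d * f d x else 0) = (\<Sum>x\<in>A. \<Sum>d\<in>S. c d * (if Q x then f d x else 0))"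
    by (intro sum.cong refl) simp
  also have "\<dots> = (\<Sum>d\<in>S. \<Sum>x\<in>A. c d * (if Q x then f d x else 0))" by (rule sum.swap)
  also have "\<dots> = (\<Sum>d\<in>S. c d * (\<Sum>x\<in>A. if Q x then f d x else 0))" by (simp add: sum_distrib_left)
  finally show ?thesis .
qed

lemma star_lin:
  assumes S: "finite S" and st: "\<And>d. d \<in> S \<Longrightarrow> star n k (T d)"
  shows "star n k (\<lambda>l. \<Sum>d\<in>S. c d * T d l)"
  unfolding star_def
proof (intro ballI allI impI)
  fix l \<sigma> \<tau> assume l: "l \<in> Lab n k" and s: "\<sigma> < n" and t: "\<tau> < n"
  have "(\<Sum>x\<in>Pset k. if l x = \<sigma> then \<Sum>d\<in>S. c d * T d (l(x := \<tau>)) else 0)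
     = (\<Sum>d\<in>S. c d * (\<Sum>x\<in>Pset k. if l x = \<sigma> then T d (l(x := \<tau>)) else 0))"
    by (rule sum_if_swap[OF S])
  also have "\<dots> = (\<Sum>d\<in>S. c d * (\<Sum>y\<in>Qset k. if l y = \<tau> then T d (l(y := \<sigma>)) else 0))"
    using st l s t unfolding star_def by auto
  also have "\<dots> = (\<Sum>y\<in>Qset k. if l y = \<tau> then \<Sum>d\<in>S. c d * T d (l(y := \<sigma>)) else 0)"
    by (rule sum_if_swap[OF S, symmetric])
  finally show "(\<Sum>x\<in>Pset k. if l x = \<sigma> then \<Sum>d\<in>S. c d * T d (l(x := \<tau>)) else 0) =
         (\<Sum>y\<in>Qset k. if l y = \<tau> then \<Sum>d\<in>S. c d * T d (l(y := \<sigma>)) else 0)" .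
qed

lemma sum_if_diff: "(\<Sum>x\<in>A. if Q x then (f x - g x :: complex) else 0) =
   (\<Sum>x\<in>A. if Q x then f x else 0) - (\<Sum>x\<in>A. if Q x then g x else 0)"
proof -
  have "(\<Sum>x\<in>A. if Q x then f x - g x else 0) = (\<Sum>x\<in>A. (if Q x then f x else 0) - (if Q x then g x else 0))"
    by (intro sum.cong refl) simp
  then show ?thesis by (simp add: sum_subtractf)
qed

lemma star_diff:
  assumes s1: "star n k t1" and s2: "star n k t2"
  shows "star n k (\<lambda>l. t1 l - t2 l)"
  unfolding star_def
proof (intro ballI allI impI)
  fix l \<sigma> \<tau> assume l: "l \<in> Lab n k" and s: "\<sigma> < n" and t: "\<tau> < n"
  show "(\<Sum>x\<in>Pset k. if l x = \<sigma> then t1 (l(x := \<tau>)) - t2 (l(x := \<tau>)) else 0) =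
        (\<Sum>y\<in>Qset k. if l y = \<tau> then t1 (l(y := \<sigma>)) - t2 (l(y := \<sigma>)) else 0)"
    unfolding sum_if_diff using s1 s2 l s t unfolding star_def by simp
qed

lemma along_pair:
  assumes d: "d \<in> WB k" and al: "along k d l" and x: "x \<in> verts k"
  shows "along k d (l(x := v, d x := v))"
  unfolding along_def
proof
  fix z assume z: "z \<in> verts k"
  have ne: "d x \<noteq> x" using WB_D(2)[OF d x] .
  have ddx: "d (d x) = x" using WB_invol[OF d] .
  show "(l(x := v, d x := v)) (d z) = (l(x := v, d x := v)) z"
  proof (cases "z = x \<or> z = d x")
    case True then show ?thesis using ne ddx by auto
  next
    case False
    then have "d z \<noteq> x" "d z \<noteq> d x" using WB_invol[OF d, of z] WB_invol[OF d, of x] by metis+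
    then show ?thesis using False al z unfolding along_def by simp
  qed
qed

lemma sum_if_set: "finite A \<Longrightarrow> {x \<in> A. Q x} = B \<Longrightarrow> (\<Sum>x\<in>A. if Q x then f x else 0) = (\<Sum>x\<in>B. f x)"
  using sum.inter_filter[of A f Q] by simp

lemma canon_Lab: "d \<in> WB k \<Longrightarrow> 2*k \<le> n \<Longrightarrow> canon k d \<in> Lab n k"
  unfolding Lab_def canon_def using WB_QP Pset_verts PQ_verts
  by (auto simp: Pset_def Qset_def verts_iff) (metis WB_D(1) verts_iff less_le_trans)

locale fft =
  fixes n k :: nat and t :: "(vtx \<Rightarrow> nat) \<Rightarrow> complex"
  assumes nk: "2*k \<le> n" and st: "star n k t"
begin

lemma star_at: "l \<in> Lab n k \<Longrightarrow> \<sigma> < n \<Longrightarrow> \<tau> < n \<Longrightarrow>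
  (\<Sum>x\<in>Pset k. if l x = \<sigma> then t (l(x := \<tau>)) else 0) = (\<Sum>y\<in>Qset k. if l y = \<tau> then t (l(y := \<sigma>)) else 0)"
  using st unfolding star_def by blast

lemma weight:
  assumes l: "l \<in> Lab n k" and tl: "t l \<noteq> 0" and r: "r < n"
  shows "card {x \<in> Pset k. l x = r} = card {y \<in> Qset k. l y = r}"
proof -
  have "(\<Sum>x\<in>Pset k. if l x = r then t (l(x := r)) else 0) = (\<Sum>x\<in>{x \<in> Pset k. l x = r}. t l)"
    by (rule trans[OF _ sum_if_set[OF finite_Pset refl]]) (intro sum.cong refl, auto)
  moreover have "(\<Sum>y\<in>Qset k. if l y = r then t (l(y := r)) else 0) = (\<Sum>y\<in>{y \<in> Qset k. l y = r}. t l)"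
    by (rule trans[OF _ sum_if_set[OF finite_Qset refl]]) (intro sum.cong refl, auto)
  ultimately have "(\<Sum>x\<in>{x \<in> Pset k. l x = r}. t l) = (\<Sum>y\<in>{y \<in> Qset k. l y = r}. t l)"
    using star_at[OF l r r] by metis
  then have "of_nat (card {x \<in> Pset k. l x = r}) * t l = of_nat (card {y \<in> Qset k. l y = r}) * t l"
    by simp
  then show ?thesis using tl by simp
qed

lemma imgPQ:
  assumes l: "l \<in> Lab n k" and tl: "t l \<noteq> 0"
  shows "l ` Pset k = l ` Qset k"
proof -
  have lt: "x \<in> verts k \<Longrightarrow> l x < n" for x using l unfolding Lab_def by auto
  have PQ: "r \<in> l ` Qset k" if rP: "r \<in> l ` Pset k" for r
  proof -
    obtain x where x: "x \<in> Pset k" "l x = r" using rP by blast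
    have "{x \<in> Pset k. l x = r} \<noteq> {}" using x by blast
    then have "card {x \<in> Pset k. l x = r} > 0" by (simp add: card_gt_0_iff)
    then have "card {y \<in> Qset k. l y = r} > 0" using weight[OF l tl lt[OF Pset_verts[OF x(1)]]] x by simp
    then have "{y \<in> Qset k. l y = r} \<noteq> {}" by (metis card.empty less_irrefl)
    then show ?thesis by blast
  qed
  have QP: "r \<in> l ` Pset k" if rQ: "r \<in> l ` Qset k" for r
  proof -
    obtain x where x: "x \<in> Qset k" "l x = r" using rQ by blast
    have "{x \<in> Qset k. l x = r} \<noteq> {}" using x by blast
    then have "card {x \<in> Qset k. l x = r} > 0" by (simp add: card_gt_0_iff)
    then have "card {y \<in> Pset k. l y = r} > 0" using weight[OF l tl lt[OF Qset_verts[OF x(1)]]] x by simp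
    then have "{y \<in> Pset k. l y = r} \<noteq> {}" by (metis card.empty less_irrefl)
    then show ?thesis by blast
  qed
  show ?thesis using PQ QP by blast
qed

lemma FR:
  assumes d: "d \<in> WB k" and l: "l \<in> Lab n k" and al: "along k d l" and inj: "inj_on l (Pset k)"
    and p: "p \<in> Pset k" and s: "s < n" and sP: "s \<notin> l ` Pset k"
  shows "t (l(p := s, d p := s)) = t l"
proof -
  let ?r = "l p"
  let ?\<mu> = "l(p := s)"
  have pv: "p \<in> verts k" using Pset_verts[OF p] .
  have dp: "d p \<in> Qset k" using WB_PQ[OF d p] .
  have r: "?r < n" using l pv unfolding Lab_def by auto
  have mu: "?\<mu> \<in> Lab n k" using Lab_upd[OF l pv s] .
  have S1: "{x \<in> Pset k. ?\<mu> x = s} = {p}" using p sP by auto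
  have S2: "{y \<in> Qset k. ?\<mu> y = ?r} = {d p}"
  proof (intro set_eqI iffI)
    fix y assume y: "y \<in> {y \<in> Qset k. ?\<mu> y = ?r}"
    then have yQ: "y \<in> Qset k" and ly: "l y = ?r" using PQ_disj[OF p] by (auto split: if_splits)
    have "l (d y) = l p" using al ly Qset_verts[OF yQ] unfolding along_def by auto
    then have "d y = p" using inj WB_QP[OF d yQ] p by (auto dest: inj_onD)
    then show "y \<in> {d p}" using WB_invol[OF d, of y] by auto
  next
    fix y assume "y \<in> {d p}"
    then show "y \<in> {y \<in> Qset k. ?\<mu> y = ?r}" using dp al pv PQ_disj[OF p] unfolding along_def by auto
  qed
  have L: "(\<Sum>x\<in>Pset k. if ?\<mu> x = s then t (?\<mu>(x := ?r)) else 0) = t (?\<mu>(p := ?r))"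
    using sum_if_set[OF finite_Pset S1, of "\<lambda>x. t (?\<mu>(x := ?r))"] by simp
  have R: "(\<Sum>y\<in>Qset k. if ?\<mu> y = ?r then t (?\<mu>(y := s)) else 0) = t (?\<mu>(d p := s))"
    using sum_if_set[OF finite_Qset S2, of "\<lambda>y. t (?\<mu>(y := s))"] by simp
  have "t (?\<mu>(p := ?r)) = t (?\<mu>(d p := s))" using star_at[OF mu s r] L R by simp
  moreover have "?\<mu>(p := ?r) = l" by simp
  ultimately show ?thesis by simp
qed

lemma SW:
  assumes d: "d \<in> WB k" and l: "l \<in> Lab n k" and al: "along k d l" and inj: "inj_on l (Pset k)"
    and p1: "p1 \<in> Pset k" and p2: "p2 \<in> Pset k" and ne: "p1 \<noteq> p2"
  shows "t (l(p2 := l p1, d p2 := l p1, d p1 := l p2, p1 := l p2)) = t l"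
proof -
  define r where "r = l p1"
  define s where "s = l p2"
  define q1 where "q1 = d p1"
  define q2 where "q2 = d p2"
  have p1v: "p1 \<in> verts k" and p2v: "p2 \<in> verts k" using p1 p2 Pset_verts by auto
  have q1: "q1 \<in> Qset k" and q2: "q2 \<in> Qset k" using WB_PQ[OF d] p1 p2 unfolding q1_def q2_def by auto
  have q1v: "q1 \<in> verts k" and q2v: "q2 \<in> verts k" using q1 q2 Qset_verts by auto
  have dq1: "d q1 = p1" and dq2: "d q2 = p2" unfolding q1_def q2_def using WB_invol[OF d] by auto
  have qne: "q1 \<noteq> q2" using ne dq1 dq2 by metis
  have pq: "p1 \<noteq> q1" "p1 \<noteq> q2" "p2 \<noteq> q1" "p2 \<noteq> q2"
    using PQ_disj p1 p2 q1 q2 by metis+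
  have qP: "q1 \<notin> Pset k" "q2 \<notin> Pset k" using q1 q2 PQ_disj by blast+
  have pQ: "p1 \<notin> Qset k" "p2 \<notin> Qset k" using p1 p2 PQ_disj by blast+
  have rs: "r \<noteq> s" using inj p1 p2 ne unfolding r_def s_def by (auto dest: inj_onD)
  have lq1: "l q1 = r" and lq2: "l q2 = s" using al p1v p2v unfolding along_def r_def s_def q1_def q2_def by auto
  have rn: "r < n" and sn: "s < n" using l p1v p2v unfolding Lab_def r_def s_def by auto
  have othP: "z \<in> Pset k \<Longrightarrow> z \<noteq> p1 \<Longrightarrow> z \<noteq> p2 \<Longrightarrow> l z \<noteq> r \<and> l z \<noteq> s" for z
    using inj p1 p2 unfolding r_def s_def by (auto dest: inj_onD)
  have othQ: "z \<in> Qset k \<Longrightarrow> z \<noteq> q1 \<Longrightarrow> z \<noteq> q2 \<Longrightarrow> l z \<noteq> r \<and> l z \<noteq> s" for z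
  proof -
    assume z: "z \<in> Qset k" "z \<noteq> q1" "z \<noteq> q2"
    have "d z \<in> Pset k" "d z \<noteq> p1" "d z \<noteq> p2" using WB_QP[OF d z(1)] z(2,3) WB_invol[OF d, of z]
      unfolding q1_def q2_def by metis+
    moreover have "l (d z) = l z" using al Qset_verts[OF z(1)] unfolding along_def by auto
    ultimately show ?thesis using othP by metis
  qed
  define \<rho> where "\<rho> = l(p2 := r, q2 := r)"
  define \<mu>1 where "\<mu>1 = \<rho>(q1 := s)"
  define \<mu>2 where "\<mu>2 = \<rho>(p2 := s)"
  have rho: "\<rho> \<in> Lab n k" unfolding \<rho>_def using l p2v q2v rn by (intro Lab_upd) auto
  have mu1: "\<mu>1 \<in> Lab n k" unfolding \<mu>1_def using rho q1v sn by (intro Lab_upd) auto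
  have mu2: "\<mu>2 \<in> Lab n k" unfolding \<mu>2_def using rho p2v sn by (intro Lab_upd) auto
  have A1: "{x \<in> Pset k. \<mu>1 x = r} = {p1, p2}"
    using othP pq p1 p2 qP unfolding \<mu>1_def \<rho>_def r_def by auto
  have B1: "{y \<in> Qset k. \<mu>1 y = s} = {q1}"
    using othQ pq q1 rs pQ unfolding \<mu>1_def \<rho>_def by auto
  have A2: "{x \<in> Pset k. \<mu>2 x = s} = {p2}"
    using othP pq p2 rs qP r_def unfolding \<mu>2_def \<rho>_def s_def by auto
  have B2: "{y \<in> Qset k. \<mu>2 y = r} = {q1, q2}"
    using othQ pq q1 q2 rs qne lq1 pQ unfolding \<mu>2_def \<rho>_def by auto
  have L1: "(\<Sum>x\<in>Pset k. if \<mu>1 x = r then t (\<mu>1(x := s)) else 0) = t (\<mu>1(p1 := s)) + t (\<mu>1(p2 := s))"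
    using sum_if_set[OF finite_Pset A1, of "\<lambda>x. t (\<mu>1(x := s))"] ne by simp
  have R1: "(\<Sum>y\<in>Qset k. if \<mu>1 y = s then t (\<mu>1(y := r)) else 0) = t (\<mu>1(q1 := r))"
    using sum_if_set[OF finite_Qset B1, of "\<lambda>y. t (\<mu>1(y := r))"] by simp
  have L2: "(\<Sum>x\<in>Pset k. if \<mu>2 x = s then t (\<mu>2(x := r)) else 0) = t (\<mu>2(p2 := r))"
    using sum_if_set[OF finite_Pset A2, of "\<lambda>x. t (\<mu>2(x := r))"] by simp
  have R2: "(\<Sum>y\<in>Qset k. if \<mu>2 y = r then t (\<mu>2(y := s)) else 0) = t (\<mu>2(q1 := s)) + t (\<mu>2(q2 := s))"
    using sum_if_set[OF finite_Qset B2, of "\<lambda>y. t (\<mu>2(y := s))"] qne by simp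
  have E1: "t (\<mu>1(p1 := s)) + t (\<mu>1(p2 := s)) = t (\<mu>1(q1 := r))"
    using star_at[OF mu1 rn sn] L1 R1 by simp
  have E2: "t (\<mu>2(p2 := r)) = t (\<mu>2(q1 := s)) + t (\<mu>2(q2 := s))"
    using star_at[OF mu2 sn rn] L2 R2 by simp
  have i1: "\<mu>1(q1 := r) = \<rho>" unfolding \<mu>1_def \<rho>_def using lq1 pq qne by (auto simp: fun_eq_iff)
  have i2: "\<mu>2(p2 := r) = \<rho>" unfolding \<mu>2_def \<rho>_def by (auto simp: fun_eq_iff)
  have i3: "\<mu>1(p2 := s) = \<mu>2(q1 := s)" unfolding \<mu>1_def \<mu>2_def \<rho>_def using pq by (auto simp: fun_eq_iff)
  have i4: "\<mu>2(q2 := s) = l" unfolding \<mu>2_def \<rho>_def using lq2 s_def pq by (auto simp: fun_eq_iff)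
  have i5: "\<mu>1(p1 := s) = l(p2 := l p1, d p2 := l p1, d p1 := l p2, p1 := l p2)"
    unfolding \<mu>1_def \<rho>_def r_def s_def q1_def q2_def by simp
  show ?thesis using E1 E2 i1 i2 i3 i4 i5 by (metis add_right_cancel add.commute)
qed

lemma stepA:
  assumes d: "d \<in> WB k"
  shows "l \<in> Lab n k \<Longrightarrow> along k d l \<Longrightarrow> inj_on l (Pset k) \<Longrightarrow> t l = t (canon k d)"
proof (induction "card {x \<in> Pset k. l x \<noteq> snd x}" arbitrary: l rule: less_induct)
  case less
  let ?D = "{x \<in> Pset k. l x \<noteq> snd x}"
  have finD: "finite ?D" by simp
  show ?case
  proof (cases "?D = {}")
    case True
    have "l = canon k d"
    proof
      fix x show "l x = canon k d x"
      proof (cases "x \<in> Pset k")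
        case True
        have "\<forall>x\<in>Pset k. l x = snd x" using \<open>?D = {}\<close> by blast
        then show ?thesis using True unfolding canon_def by auto
      next
        case xP: False
        show ?thesis
        proof (cases "x \<in> Qset k")
          case True
          have "d x \<in> Pset k" using WB_QP[OF d True] .
          moreover have "\<forall>x\<in>Pset k. l x = snd x" using \<open>?D = {}\<close> by blast
          ultimately have "l (d x) = snd (d x)" by blast
          moreover have "l (d x) = l x" using less.prems(2) Qset_verts[OF True] unfolding along_def by auto
          ultimately show ?thesis using True xP unfolding canon_def by simp
        next
          case False
          then have "x \<notin> verts k" using xP PQ_verts by blast
          then have "l x = 0" using less.prems(1) unfolding Lab_def by blast
          then show ?thesis using xP False unfolding canon_def by simp
        qed
      qed
    qed
    then show ?thesis by simp
  next
    case False
    then obtain p where p: "p \<in> Pset k" "l p \<noteq> snd p" by blast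
    have pv: "p \<in> verts k" using Pset_verts[OF p(1)] .
    have cn: "snd p < n" using pv nk unfolding verts_iff by simp
    show ?thesis
    proof (cases "\<exists>p'\<in>Pset k. l p' = snd p")
      case True
      then obtain p' where p': "p' \<in> Pset k" "l p' = snd p" by blast
      have ne: "p \<noteq> p'" using p p' by auto
      define l' where "l' = l(p := l p', d p := l p', d p' := l p, p' := l p)"
      have tl: "t l' = t l" unfolding l'_def using SW[OF d less.prems p'(1) p(1) ne[symmetric]] by simp
      have p'v: "p' \<in> verts k" using Pset_verts[OF p'(1)] .
      have ln: "l p < n" "l p' < n" using less.prems(1) pv p'v unfolding Lab_def by auto
      have lab: "l' \<in> Lab n k" unfolding l'_def using less.prems(1) pv p'v ln WB_D(1)[OF d]
        by (intro Lab_upd) auto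
      have al: "along k d l'"
      proof -
        have "along k d (l(p := l p', d p := l p'))" using along_pair[OF d less.prems(2) pv] .
        moreover have "d (d p') = p'" using WB_invol[OF d] .
        ultimately have "along k d ((l(p := l p', d p := l p'))(d p' := l p, d (d p') := l p))"
          using along_pair[OF d _ WB_D(1)[OF d p'v]] by blast
        then show ?thesis unfolding l'_def using \<open>d (d p') = p'\<close> by simp
      qed
      have dP: "d p \<notin> Pset k" "d p' \<notin> Pset k" using WB_PQ[OF d] PQ_disj p p' by blast+
      have l'P: "z \<in> Pset k \<Longrightarrow> l' z = (if z = p then l p' else if z = p' then l p else l z)" for z
        unfolding l'_def using dP ne by auto
      have inj': "inj_on l' (Pset k)"
      proof (rule inj_onI)
        fix x y assume x: "x \<in> Pset k" and y: "y \<in> Pset k" and e: "l' x = l' y"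
        define sw where "sw z = (if z = p then p' else if z = p' then p else z)" for z
        have swP: "z \<in> Pset k \<Longrightarrow> sw z \<in> Pset k" for z using p(1) p'(1) unfolding sw_def by auto
        have swsw: "sw (sw z) = z" for z unfolding sw_def using ne by auto
        have lsw: "z \<in> Pset k \<Longrightarrow> l' z = l (sw z)" for z using l'P unfolding sw_def by auto
        have "l (sw x) = l (sw y)" using e lsw x y by simp
        then have "sw x = sw y" using less.prems(3) swP x y by (meson inj_onD)
        then show "x = y" using swsw by metis
      qed
      have sub: "{x \<in> Pset k. l' x \<noteq> snd x} \<subseteq> ?D - {p}"
      proof
        fix x assume x: "x \<in> {x \<in> Pset k. l' x \<noteq> snd x}"
        have "snd p' \<noteq> snd p" using inj_snd_P[of k] p(1) p'(1) ne by (auto dest: inj_onD)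
        then show "x \<in> ?D - {p}" using x l'P[of x] p' by (auto split: if_splits)
      qed
      have "card {x \<in> Pset k. l' x \<noteq> snd x} \<le> card (?D - {p})"
        using sub by (intro card_mono) auto
      also have "\<dots> < card ?D" using p by (intro card_Diff1_less) auto
      finally have "card {x \<in> Pset k. l' x \<noteq> snd x} < card ?D" .
      then have "t l' = t (canon k d)" using less.hyps lab al inj' by blast
      then show ?thesis using tl by simp
    next
      case False
      define l' where "l' = l(p := snd p, d p := snd p)"
      have tl: "t l' = t l" unfolding l'_def
      proof -
        have "snd p \<notin> l ` Pset k" using False by auto
        then show "t (l(p := snd p, d p := snd p)) = t l" using FR[OF d less.prems p(1) cn] by blast
      qed
      have lab: "l' \<in> Lab n k" unfolding l'_def using less.prems(1) pv cn WB_D(1)[OF d]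
        by (intro Lab_upd) auto
      have al: "along k d l'" unfolding l'_def using along_pair[OF d less.prems(2) pv] .
      have dP: "d p \<notin> Pset k" using WB_PQ[OF d] PQ_disj p by blast
      have l'P: "z \<in> Pset k \<Longrightarrow> l' z = (if z = p then snd p else l z)" for z
        unfolding l'_def using dP by auto
      have inj': "inj_on l' (Pset k)"
      proof (rule inj_onI)
        fix x y assume x: "x \<in> Pset k" and y: "y \<in> Pset k" and e: "l' x = l' y"
        show "x = y" using e l'P[OF x] l'P[OF y] less.prems(3) x y False
          by (auto split: if_splits dest: inj_onD)
      qed
      have sub: "{x \<in> Pset k. l' x \<noteq> snd x} \<subseteq> ?D - {p}"
      proof
        fix x assume x: "x \<in> {x \<in> Pset k. l' x \<noteq> snd x}"
        then show "x \<in> ?D - {p}" using l'P[of x] by (cases "x = p") auto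
      qed
      have "card {x \<in> Pset k. l' x \<noteq> snd x} \<le> card (?D - {p})"
        using sub by (intro card_mono) auto
      also have "\<dots> < card ?D" using p by (intro card_Diff1_less) auto
      finally have "card {x \<in> Pset k. l' x \<noteq> snd x} < card ?D" .
      then have "t l' = t (canon k d)" using less.hyps lab al inj' by blast
      then show ?thesis using tl by simp
    qed
  qed
qed

end

context fft
begin

lemma caseB:
  assumes l: "l \<in> Lab n k" and tl: "t l \<noteq> 0" and inj: "inj_on l (Pset k)"
  shows "\<exists>d\<in>WB k. along k d l"
proof -
  have lt: "x \<in> verts k \<Longrightarrow> l x < n" for x using l unfolding Lab_def by auto
  have img: "l ` Pset k = l ` Qset k" using imgPQ[OF l tl] .
  have uniq: "\<exists>!y. y \<in> verts k \<and> pol k y \<noteq> pol k x \<and> l y = l x" if x: "x \<in> verts k" for x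
  proof -
    let ?r = "l x"
    have FP1: "card {z \<in> Pset k. l z = ?r} = 1" and FQ1: "card {z \<in> Qset k. l z = ?r} = 1"
    proof -
      have "?r \<in> l ` Pset k" using x img PQ_verts[OF x] by blast
      then obtain z where z: "z \<in> Pset k" "l z = ?r" by (metis imageE)
      have "{z' \<in> Pset k. l z' = ?r} = {z}"
      proof (intro set_eqI iffI)
        fix z' assume "z' \<in> {z' \<in> Pset k. l z' = ?r}"
        then have "z' \<in> Pset k" "l z' = l z" using z by auto
        then show "z' \<in> {z}" using inj z(1) by (simp add: inj_on_eq_iff)
      qed (use z in auto)
      then show P1: "card {z \<in> Pset k. l z = ?r} = 1" by simp
      then show "card {z \<in> Qset k. l z = ?r} = 1" using weight[OF l tl lt[OF x]] by simp
    qed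
    obtain yP where yP: "{z \<in> Pset k. l z = ?r} = {yP}" using FP1 card_1_singletonE by blast
    obtain yQ where yQ: "{z \<in> Qset k. l z = ?r} = {yQ}" using FQ1 card_1_singletonE by blast
    show ?thesis
    proof (cases "pol k x")
      case True
      have "y \<in> verts k \<and> pol k y \<noteq> pol k x \<and> l y = l x \<longleftrightarrow> y \<in> {z \<in> Pset k. l z = ?r}" for y
        using True unfolding Pset_def by auto
      then have "y \<in> verts k \<and> pol k y \<noteq> pol k x \<and> l y = l x \<longleftrightarrow> y = yP" for y
        using yP by simp
      then show ?thesis by simp
    next
      case False
      have "y \<in> verts k \<and> pol k y \<noteq> pol k x \<and> l y = l x \<longleftrightarrow> y \<in> {z \<in> Qset k. l z = ?r}" for y
        using False unfolding Qset_def by auto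
      then have "y \<in> verts k \<and> pol k y \<noteq> pol k x \<and> l y = l x \<longleftrightarrow> y = yQ" for y
        using yQ by simp
      then show ?thesis by simp
    qed
  qed
  define d where "d x = (if x \<in> verts k then (THE y. y \<in> verts k \<and> pol k y \<noteq> pol k x \<and> l y = l x) else x)" for x
  have dprop: "d x \<in> verts k \<and> pol k (d x) \<noteq> pol k x \<and> l (d x) = l x" if x: "x \<in> verts k" for x
    using theI'[OF uniq[OF x]] x unfolding d_def by simp
  have dd: "d (d x) = x" if x: "x \<in> verts k" for x
  proof -
    have y: "d x \<in> verts k" using dprop[OF x] by simp
    have "x \<in> verts k \<and> pol k x \<noteq> pol k (d x) \<and> l x = l (d x)" using dprop[OF x] x by simp
    then have "(THE z. z \<in> verts k \<and> pol k z \<noteq> pol k (d x) \<and> l z = l (d x)) = x"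
      by (rule the1_equality[OF uniq[OF y]])
    then show ?thesis using y unfolding d_def[of "d x"] by simp
  qed
  have "d \<in> WB k"
  proof (rule WB_I)
    fix v assume v: "v \<in> verts k"
    show "d v \<in> verts k" using dprop[OF v] by simp
    show "d (d v) = v" using dd[OF v] .
    show "pol k (d v) = (\<not> pol k v)" using dprop[OF v] by auto
  next
    fix v assume "v \<notin> verts k" then show "d v = v" unfolding d_def by simp
  qed
  moreover have "along k d l" unfolding along_def using dprop by auto
  ultimately show ?thesis by blast
qed

theorem fft_zero:
  assumes z: "\<And>d. d \<in> WB k \<Longrightarrow> t (canon k d) = 0"
  shows "l \<in> Lab n k \<Longrightarrow> t l = 0"
proof (induction "2*k - card (l ` Pset k)" arbitrary: l rule: less_induct)
  case less
  note l = less.prems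
  show ?case
  proof (rule ccontr)
    assume tl: "t l \<noteq> 0"
    show False
    proof (cases "inj_on l (Pset k)")
      case True
      obtain d where d: "d \<in> WB k" "along k d l" using caseB[OF l tl True] by blast
      have "t l = t (canon k d)" using stepA[OF d(1) l d(2) True] .
      then show False using z[OF d(1)] tl by simp
    next
      case False
      then obtain x1 x2 where x: "x1 \<in> Pset k" "x2 \<in> Pset k" "x1 \<noteq> x2" "l x1 = l x2"
        unfolding inj_on_def by blast
      define r where "r = l x1"
      have lt: "x \<in> verts k \<Longrightarrow> l x < n" for x using l unfolding Lab_def by auto
      have rn: "r < n" unfolding r_def using lt Pset_verts[OF x(1)] .
      have cardlt: "card (l ` Pset k) < 2*k"
      proof -
        have "card (l ` Pset k) \<le> card (Pset k)" by (rule card_image_le) simp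
        moreover have "card (l ` Pset k) \<noteq> card (Pset k)" using False eq_card_imp_inj_on[of "Pset k" l] by auto
        ultimately show ?thesis using card_P[of k] by simp
      qed
      obtain s where s: "s < n" "s \<notin> l ` Pset k"
      proof -
        have "\<not> {..<n} \<subseteq> l ` Pset k"
        proof
          assume "{..<n} \<subseteq> l ` Pset k"
          then have "card {..<n} \<le> card (l ` Pset k)" by (intro card_mono) auto
          then show False using cardlt nk by simp
        qed
        then show ?thesis using that by blast
      qed
      have img: "l ` Pset k = l ` Qset k" using imgPQ[OF l tl] .
      obtain q0 where q0: "q0 \<in> Qset k" "l q0 = r" using img x(1) unfolding r_def by (metis imageE imageI)
      have sQ: "s \<notin> l ` Qset k" using s img by simp
      have q0v: "q0 \<in> verts k" using Qset_verts[OF q0(1)] .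
      define \<mu> where "\<mu> = l(q0 := s)"
      have mu: "\<mu> \<in> Lab n k" unfolding \<mu>_def using Lab_upd[OF l q0v s(1)] .
      have B: "{y \<in> Qset k. \<mu> y = s} = {q0}" unfolding \<mu>_def using q0 sQ by auto
      have R: "(\<Sum>y\<in>Qset k. if \<mu> y = s then t (\<mu>(y := r)) else 0) = t l"
      proof -
        have "(\<Sum>y\<in>Qset k. if \<mu> y = s then t (\<mu>(y := r)) else 0) = t (\<mu>(q0 := r))"
          using sum_if_set[OF finite_Qset B, of "\<lambda>y. t (\<mu>(y := r))"] by simp
        also have "\<mu>(q0 := r) = l" unfolding \<mu>_def using q0 by auto
        finally show ?thesis .
      qed
      have terms: "t (\<mu>(x := s)) = 0" if xP: "x \<in> Pset k" and lx: "\<mu> x = r" for x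
      proof -
        have q0x: "q0 \<noteq> x" using PQ_disj[OF xP] q0(1) by blast
        have lx': "l x = r" using lx q0x unfolding \<mu>_def by simp
        define \<nu> where "\<nu> = \<mu>(x := s)"
        have nu: "\<nu> \<in> Lab n k" unfolding \<nu>_def using Lab_upd[OF mu Pset_verts[OF xP] s(1)] .
        have nuP: "z \<in> Pset k \<Longrightarrow> \<nu> z = (if z = x then s else l z)" for z
          unfolding \<nu>_def \<mu>_def using q0x PQ_disj[of q0 k] q0(1) by auto
        obtain x' where x': "x' \<in> Pset k" "x' \<noteq> x" "l x' = r"
          using x lx' unfolding r_def by metis
        have "\<nu> ` Pset k = insert s (l ` Pset k)"
        proof
          show "\<nu> ` Pset k \<subseteq> insert s (l ` Pset k)" using nuP by auto
          show "insert s (l ` Pset k) \<subseteq> \<nu> ` Pset k"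
          proof
            fix v assume v: "v \<in> insert s (l ` Pset k)"
            show "v \<in> \<nu> ` Pset k"
            proof (cases "v = s")
              case True then show ?thesis using nuP[OF xP] xP by force
            next
              case False
              then obtain z where z: "z \<in> Pset k" "v = l z" using v by blast
              show ?thesis
              proof (cases "z = x")
                case True
                then have "v = \<nu> x'" using nuP[OF x'(1)] x' z lx' by simp
                then show ?thesis using x'(1) by blast
              next
                case False then show ?thesis using nuP[OF z(1)] z by force
              qed
            qed
          qed
        qed
        then have "card (\<nu> ` Pset k) = Suc (card (l ` Pset k))" using s(2) by simp
        then have "2*k - card (\<nu> ` Pset k) < 2*k - card (l ` Pset k)" using cardlt by simp
        then show ?thesis using less.hyps nu unfolding \<nu>_def by blast
      qed
      have "(\<Sum>x\<in>Pset k. if \<mu> x = r then t (\<mu>(x := s)) else 0) = 0"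
        using terms by (intro sum.neutral) auto
      then have "t l = 0" using star_at[OF mu rn s(1)] R by simp
      then show False using tl by simp
    qed
  qed
qed

end

section \<open>Matrix units and the gl_n action\<close>

definition gE :: "nat \<Rightarrow> nat \<Rightarrow> nat \<Rightarrow> nat \<Rightarrow> complex" where
  "gE r s = (\<lambda>i j. if i = r \<and> j = s then 1 else 0)"

definition ind :: "bool \<Rightarrow> complex" where "ind P = (if P then 1 else 0)"

lemma upd_Idx: "a \<in> Idx n k \<Longrightarrow> i < 2*k \<Longrightarrow> r < n \<Longrightarrow> a(i := r) \<in> Idx n k"
  unfolding Idx_def by auto

lemma gb_simp:
  assumes r: "r < n" and s: "s < n"
  shows "glact_basis k n (gE r s) a a' =
    (\<Sum>i<k. ind (a' = a(i := r) \<and> a i = s)) - (\<Sum>i\<in>{k..<2*k}. ind (a' = a(i := s) \<and> a i = r))"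
proof -
  have 1: "(\<Sum>r'<n. if a' = a(i := r') then gE r s r' (a i) else 0) = ind (a' = a(i := r) \<and> a i = s)" for i
  proof -
    have "(\<Sum>r'<n. if a' = a(i := r') then gE r s r' (a i) else 0) = (\<Sum>r'<n. if r' = r then ind (a' = a(i := r) \<and> a i = s) else 0)"
      by (intro sum.cong refl) (auto simp: gE_def ind_def)
    also have "\<dots> = ind (a' = a(i := r) \<and> a i = s)" using r by (simp add: sum.delta)
    finally show ?thesis .
  qed
  have 2: "(\<Sum>r'<n. if a' = a(i := r') then gE r s (a i) r' else 0) = ind (a' = a(i := s) \<and> a i = r)" for i
  proof -
    have "(\<Sum>r'<n. if a' = a(i := r') then gE r s (a i) r' else 0) = (\<Sum>r'<n. if r' = s then ind (a' = a(i := s) \<and> a i = r) else 0)"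
      by (intro sum.cong refl) (auto simp: gE_def ind_def)
    also have "\<dots> = ind (a' = a(i := s) \<and> a i = r)" using s by (simp add: sum.delta)
    finally show ?thesis .
  qed
  show ?thesis unfolding glact_basis_def using 1 2 by simp
qed

lemma sum_Idx_point: "c \<in> Idx n k \<Longrightarrow> (\<Sum>a'\<in>Idx n k. T a' * ind (a' = c \<and> P)) = (if P then T c else 0)"
  unfolding ind_def by (simp add: if_distrib[of "\<lambda>x. _ * x"] sum.delta' cong: if_cong)

lemma gb_eval1:
  assumes r: "r < n" and s: "s < n" and a: "a \<in> Idx n k"
  shows "(\<Sum>a'\<in>Idx n k. T a' * glact_basis k n (gE r s) a a') =
     (\<Sum>i<k. if a i = s then T (a(i := r)) else 0) - (\<Sum>i\<in>{k..<2*k}. if a i = r then T (a(i := s)) else 0)"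
proof -
  have "(\<Sum>a'\<in>Idx n k. T a' * glact_basis k n (gE r s) a a') =
     (\<Sum>i<k. \<Sum>a'\<in>Idx n k. T a' * ind (a' = a(i := r) \<and> a i = s)) -
     (\<Sum>i\<in>{k..<2*k}. \<Sum>a'\<in>Idx n k. T a' * ind (a' = a(i := s) \<and> a i = r))"
    unfolding gb_simp[OF r s] by (simp add: right_diff_distrib sum_subtractf sum_distrib_left sum.swap[of _ "Idx n k"])
  also have "\<dots> = (\<Sum>i<k. if a i = s then T (a(i := r)) else 0) - (\<Sum>i\<in>{k..<2*k}. if a i = r then T (a(i := s)) else 0)"
  proof -
    have "(\<Sum>a'\<in>Idx n k. T a' * ind (a' = a(i := r) \<and> a i = s)) = (if a i = s then T (a(i := r)) else 0)" if "i < k" for i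
      using sum_Idx_point[OF upd_Idx[OF a _ r], of i T "a i = s"] that by simp
    moreover have "(\<Sum>a'\<in>Idx n k. T a' * ind (a' = a(i := s) \<and> a i = r)) = (if a i = r then T (a(i := s)) else 0)" if "i \<in> {k..<2*k}" for i
      using sum_Idx_point[OF upd_Idx[OF a _ s], of i T "a i = r"] that by simp
    ultimately show ?thesis by simp
  qed
  finally show ?thesis .
qed

lemma sum_Idx_pre:
  assumes b: "b \<in> Idx n k" and i: "i < 2*k" and s: "s < n"
  shows "(\<Sum>a'\<in>Idx n k. T a' * ind (b = a'(i := r) \<and> a' i = s)) = (if b i = r then T (b(i := s)) else 0)"
proof -
  have "(\<Sum>a'\<in>Idx n k. T a' * ind (b = a'(i := r) \<and> a' i = s)) = (\<Sum>a'\<in>Idx n k. T a' * ind (a' = b(i := s) \<and> b i = r))"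
  proof (intro sum.cong refl)
    fix a' assume "a' \<in> Idx n k"
    have "(b = a'(i := r) \<and> a' i = s) \<longleftrightarrow> (a' = b(i := s) \<and> b i = r)"
      by (auto simp: fun_eq_iff)
    then show "T a' * ind (b = a'(i := r) \<and> a' i = s) = T a' * ind (a' = b(i := s) \<and> b i = r)" by simp
  qed
  also have "\<dots> = (if b i = r then T (b(i := s)) else 0)" using sum_Idx_point[OF upd_Idx[OF b i s]] .
  finally show ?thesis .
qed

lemma gb_eval2:
  assumes r: "r < n" and s: "s < n" and b: "b \<in> Idx n k"
  shows "(\<Sum>a'\<in>Idx n k. T a' * glact_basis k n (gE r s) a' b) =
     (\<Sum>i<k. if b i = r then T (b(i := s)) else 0) - (\<Sum>i\<in>{k..<2*k}. if b i = s then T (b(i := r)) else 0)"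
proof -
  have "(\<Sum>a'\<in>Idx n k. T a' * glact_basis k n (gE r s) a' b) =
     (\<Sum>i<k. \<Sum>a'\<in>Idx n k. T a' * ind (b = a'(i := r) \<and> a' i = s)) -
     (\<Sum>i\<in>{k..<2*k}. \<Sum>a'\<in>Idx n k. T a' * ind (b = a'(i := s) \<and> a' i = r))"
    unfolding gb_simp[OF r s] by (simp add: right_diff_distrib sum_subtractf sum_distrib_left sum.swap[of _ "Idx n k"])
  also have "\<dots> = (\<Sum>i<k. if b i = r then T (b(i := s)) else 0) - (\<Sum>i\<in>{k..<2*k}. if b i = s then T (b(i := r)) else 0)"
  proof -
    have "(\<Sum>a'\<in>Idx n k. T a' * ind (b = a'(i := r) \<and> a' i = s)) = (if b i = r then T (b(i := s)) else 0)" if "i < k" for i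
      using sum_Idx_pre[OF b _ s, of i T r] that by simp
    moreover have "(\<Sum>a'\<in>Idx n k. T a' * ind (b = a'(i := s) \<and> a' i = r)) = (if b i = s then T (b(i := r)) else 0)" if "i \<in> {k..<2*k}" for i
      using sum_Idx_pre[OF b _ r, of i T s] that by simp
    ultimately show ?thesis by simp
  qed
  finally show ?thesis .
qed

definition opT :: "nat \<Rightarrow> nat \<Rightarrow> ((nat \<Rightarrow> nat) \<Rightarrow> (nat \<Rightarrow> nat) \<Rightarrow> complex) \<Rightarrow> ((nat \<Rightarrow> nat) \<Rightarrow> complex) \<Rightarrow> (nat \<Rightarrow> nat) \<Rightarrow> complex" where
  "opT n k T v = (\<lambda>b. if b \<in> Idx n k then (\<Sum>a\<in>Idx n k. T b a * v a) else 0)"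

definition MC :: "nat \<Rightarrow> nat \<Rightarrow> ((nat \<Rightarrow> nat) \<Rightarrow> (nat \<Rightarrow> nat) \<Rightarrow> complex) \<Rightarrow> nat \<Rightarrow> nat \<Rightarrow> bool" where
  "MC n k T r s \<longleftrightarrow> (\<forall>a\<in>Idx n k. \<forall>b\<in>Idx n k.
     (\<Sum>i<k. if a i = s then T b (a(i := r)) else 0) - (\<Sum>i\<in>{k..<2*k}. if a i = r then T b (a(i := s)) else 0)
   = (\<Sum>i<k. if b i = r then T (b(i := s)) a else 0) - (\<Sum>i\<in>{k..<2*k}. if b i = s then T (b(i := r)) a else 0))"

lemma glact_basis_out:
  assumes a: "a \<in> Idx n k" and b: "b \<notin> Idx n k"
  shows "glact_basis k n x a b = 0"
proof -
  have "b \<noteq> a(i := r)" if "i < 2*k" "r < n" for i r using upd_Idx[OF a that] b by auto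
  then show ?thesis unfolding glact_basis_def by (auto intro!: sum.neutral)
qed

lemma glact_Mvec: "glact k n x v \<in> Mvec n k"
  unfolding Mvec_def glact_def using glact_basis_out by (auto intro!: sum.neutral)

lemma opT_glact:
  assumes r: "r < n" and s: "s < n" and mc: "MC n k T r s"
  shows "opT n k T (glact k n (gE r s) v) = glact k n (gE r s) (opT n k T v)"
proof
  fix b
  show "opT n k T (glact k n (gE r s) v) b = glact k n (gE r s) (opT n k T v) b"
  proof (cases "b \<in> Idx n k")
    case False
    then show ?thesis unfolding opT_def glact_def
      by (auto intro!: sum.neutral simp: glact_basis_out)
  next
    case b: True
    have "opT n k T (glact k n (gE r s) v) b = (\<Sum>a'\<in>Idx n k. T b a' * (\<Sum>a\<in>Idx n k. v a * glact_basis k n (gE r s) a a'))"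
      using b unfolding opT_def glact_def by simp
    also have "\<dots> = (\<Sum>a'\<in>Idx n k. \<Sum>a\<in>Idx n k. v a * (T b a' * glact_basis k n (gE r s) a a'))"
      by (simp add: sum_distrib_left mult_ac)
    also have "\<dots> = (\<Sum>a\<in>Idx n k. \<Sum>a'\<in>Idx n k. v a * (T b a' * glact_basis k n (gE r s) a a'))"
      by (rule sum.swap)
    also have "\<dots> = (\<Sum>a\<in>Idx n k. v a * (\<Sum>a'\<in>Idx n k. T b a' * glact_basis k n (gE r s) a a'))"
      by (simp add: sum_distrib_left)
    also have "\<dots> = (\<Sum>a\<in>Idx n k. v a * (\<Sum>a'\<in>Idx n k. T a' a * glact_basis k n (gE r s) a' b))"
    proof (intro sum.cong refl)
      fix a assume a: "a \<in> Idx n k"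
      show "v a * (\<Sum>a'\<in>Idx n k. T b a' * glact_basis k n (gE r s) a a') = v a * (\<Sum>a'\<in>Idx n k. T a' a * glact_basis k n (gE r s) a' b)"
        using gb_eval1[OF r s a, of "T b"] gb_eval2[OF r s b, of "\<lambda>a'. T a' a"] mc a b unfolding MC_def by simp
    qed
    also have "\<dots> = (\<Sum>a\<in>Idx n k. \<Sum>a'\<in>Idx n k. v a * (T a' a * glact_basis k n (gE r s) a' b))"
      by (simp add: sum_distrib_left)
    also have "\<dots> = (\<Sum>a'\<in>Idx n k. \<Sum>a\<in>Idx n k. v a * (T a' a * glact_basis k n (gE r s) a' b))"
      by (rule sum.swap)
    also have "\<dots> = (\<Sum>a'\<in>Idx n k. (\<Sum>a\<in>Idx n k. T a' a * v a) * glact_basis k n (gE r s) a' b)"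
      by (intro sum.cong refl) (simp add: sum_distrib_left sum_distrib_right mult_ac)
    also have "\<dots> = glact k n (gE r s) (opT n k T v) b"
      unfolding opT_def glact_def by (intro sum.cong refl) simp
    finally show ?thesis .
  qed
qed

definition dlt :: "(nat \<Rightarrow> nat) \<Rightarrow> (nat \<Rightarrow> nat) \<Rightarrow> complex" where
  "dlt a = (\<lambda>a'. if a' = a then 1 else 0)"

lemma dlt_Mvec: "a \<in> Idx n k \<Longrightarrow> dlt a \<in> Mvec n k"
  unfolding Mvec_def dlt_def by auto

lemma opT_dlt: "a \<in> Idx n k \<Longrightarrow> b \<in> Idx n k \<Longrightarrow> opT n k T (dlt a) b = T b a"
  unfolding opT_def dlt_def by (simp add: if_distrib[of "\<lambda>x. _ * x"] sum.delta cong: if_cong)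

lemma glact_dlt: "a \<in> Idx n k \<Longrightarrow> glact k n x (dlt a) = glact_basis k n x a"
  unfolding glact_def dlt_def by (auto simp: if_distrib[of "\<lambda>x. x * _"] sum.delta cong: if_cong)

lemma MC_from_opT:
  assumes r: "r < n" and s: "s < n"
    and eq: "\<And>a. a \<in> Idx n k \<Longrightarrow> opT n k T (glact k n (gE r s) (dlt a)) = glact k n (gE r s) (opT n k T (dlt a))"
  shows "MC n k T r s"
  unfolding MC_def
proof (intro ballI)
  fix a b assume a: "a \<in> Idx n k" and b: "b \<in> Idx n k"
  have "opT n k T (glact k n (gE r s) (dlt a)) b = (\<Sum>a'\<in>Idx n k. T b a' * glact_basis k n (gE r s) a a')"
    using b glact_dlt[OF a] unfolding opT_def by simp
  moreover have "glact k n (gE r s) (opT n k T (dlt a)) b = (\<Sum>a'\<in>Idx n k. T a' a * glact_basis k n (gE r s) a' b)"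
    unfolding glact_def using opT_dlt[OF a] by (intro sum.cong refl) simp
  ultimately show "(\<Sum>i<k. if a i = s then T b (a(i := r)) else 0) - (\<Sum>i\<in>{k..<2*k}. if a i = r then T b (a(i := s)) else 0)
   = (\<Sum>i<k. if b i = r then T (b(i := s)) a else 0) - (\<Sum>i\<in>{k..<2*k}. if b i = s then T (b(i := r)) a else 0)"
    using eq[OF a] gb_eval1[OF r s a, of "T b"] gb_eval2[OF r s b, of "\<lambda>a'. T a' a"] by metis
qed

definition aof :: "(vtx \<Rightarrow> nat) \<Rightarrow> nat \<Rightarrow> nat" where "aof l = (\<lambda>i. l (False, i))"
definition bof :: "(vtx \<Rightarrow> nat) \<Rightarrow> nat \<Rightarrow> nat" where "bof l = (\<lambda>i. l (True, i))"

lemma vlab_aof_bof[simp]: "vlab (aof l) (bof l) = l"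
  unfolding vlab_def aof_def bof_def by (auto simp: fun_eq_iff)

lemma aof_vlab[simp]: "aof (vlab a b) = a" and bof_vlab[simp]: "bof (vlab a b) = b"
  unfolding vlab_def aof_def bof_def by auto

lemma aof_Idx: "l \<in> Lab n k \<Longrightarrow> aof l \<in> Idx n k" and bof_Idx: "l \<in> Lab n k \<Longrightarrow> bof l \<in> Idx n k"
  unfolding Lab_def Idx_def aof_def bof_def by (auto simp: verts_iff)

lemma Pset_split: "Pset k = (\<lambda>i. (False, i)) ` {..<k} \<union> (\<lambda>i. (True, i)) ` {k..<2*k}"
  unfolding Pset_def pol_def verts_iff by (auto simp: image_iff)

lemma Qset_split: "Qset k = (\<lambda>i. (True, i)) ` {..<k} \<union> (\<lambda>i. (False, i)) ` {k..<2*k}"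
  unfolding Qset_def pol_def verts_iff by (auto simp: image_iff)

lemma sum_split_TF:
  fixes f :: "vtx \<Rightarrow> complex"
  assumes "finite A" "finite B" "b1 \<noteq> b2"
  shows "(\<Sum>x\<in>(\<lambda>i. (b1, i)) ` A \<union> (\<lambda>i. (b2, i)) ` B. f x) = (\<Sum>i\<in>A. f (b1, i)) + (\<Sum>i\<in>B. f (b2, i))"
proof -
  have "(\<Sum>x\<in>(\<lambda>i. (b1, i)) ` A \<union> (\<lambda>i. (b2, i)) ` B. f x) = (\<Sum>x\<in>(\<lambda>i. (b1, i)) ` A. f x) + (\<Sum>x\<in>(\<lambda>i. (b2, i)) ` B. f x)"
    by (rule sum.union_disjoint) (use assms in auto)
  also have "\<dots> = (\<Sum>i\<in>A. f (b1, i)) + (\<Sum>i\<in>B. f (b2, i))"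
    by (simp add: sum.reindex inj_on_def)
  finally show ?thesis .
qed

lemma vlab_F: "vlab a b (False, i) = a i" and vlab_T: "vlab a b (True, i) = b i"
  unfolding vlab_def by auto

lemma vlab_updF: "(vlab a b)((False, i) := v) = vlab (a(i := v)) b"
  and vlab_updT: "(vlab a b)((True, i) := v) = vlab a (b(i := v))"
  unfolding vlab_def by (auto simp: fun_eq_iff)

lemma SP:
  fixes t :: "(vtx \<Rightarrow> nat) \<Rightarrow> complex"
  shows "(\<Sum>x\<in>Pset k. if vlab a b x = \<sigma> then t ((vlab a b)(x := \<tau>)) else 0) =
   (\<Sum>i<k. if a i = \<sigma> then t (vlab (a(i := \<tau>)) b) else 0) + (\<Sum>i\<in>{k..<2*k}. if b i = \<sigma> then t (vlab a (b(i := \<tau>))) else 0)"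
  unfolding Pset_split
  using sum_split_TF[of "{..<k}" "{k..<2*k}" False True "\<lambda>x. if vlab a b x = \<sigma> then t ((vlab a b)(x := \<tau>)) else 0"]
  by (simp only: vlab_updF vlab_updT vlab_F vlab_T finite_lessThan finite_atLeastLessThan simp_thms)

lemma SQ:
  fixes t :: "(vtx \<Rightarrow> nat) \<Rightarrow> complex"
  shows "(\<Sum>y\<in>Qset k. if vlab a b y = \<tau> then t ((vlab a b)(y := \<sigma>)) else 0) =
   (\<Sum>i<k. if b i = \<tau> then t (vlab a (b(i := \<sigma>))) else 0) + (\<Sum>i\<in>{k..<2*k}. if a i = \<tau> then t (vlab (a(i := \<sigma>)) b) else 0)"
  unfolding Qset_split
  using sum_split_TF[of "{..<k}" "{k..<2*k}" True False "\<lambda>x. if vlab a b x = \<tau> then t ((vlab a b)(x := \<sigma>)) else 0"]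
  by (simp only: vlab_updF vlab_updT vlab_F vlab_T finite_lessThan finite_atLeastLessThan simp_thms)

lemma MC_of_star:
  assumes st: "star n k t" and r: "r < n" and s: "s < n"
  shows "MC n k (\<lambda>b a. t (vlab a b)) r s"
  unfolding MC_def
proof (intro ballI)
  fix a b assume a: "a \<in> Idx n k" and b: "b \<in> Idx n k"
  have "(\<Sum>x\<in>Pset k. if vlab a b x = s then t ((vlab a b)(x := r)) else 0) =
        (\<Sum>y\<in>Qset k. if vlab a b y = r then t ((vlab a b)(y := s)) else 0)"
    using st vlab_Lab[OF a b] r s unfolding star_def by blast
  then show "(\<Sum>i<k. if a i = s then t (vlab (a(i := r)) b) else 0) - (\<Sum>i\<in>{k..<2*k}. if a i = r then t (vlab (a(i := s)) b) else 0) =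
    (\<Sum>i<k. if b i = r then t (vlab a (b(i := s))) else 0) - (\<Sum>i\<in>{k..<2*k}. if b i = s then t (vlab a (b(i := r))) else 0)"
    unfolding SP SQ by (simp add: algebra_simps)
qed

lemma star_of_MC:
  fixes T :: "(nat \<Rightarrow> nat) \<Rightarrow> (nat \<Rightarrow> nat) \<Rightarrow> complex"
  assumes mc: "\<And>r s. r < n \<Longrightarrow> s < n \<Longrightarrow> MC n k T r s"
  shows "star n k (\<lambda>l. T (bof l) (aof l))"
  unfolding star_def
proof (intro ballI allI impI)
  fix l \<sigma> \<tau> assume l: "l \<in> Lab n k" and s: "\<sigma> < n" and t: "\<tau> < n"
  define a where "a = aof l"
  define b where "b = bof l"
  have a: "a \<in> Idx n k" and b: "b \<in> Idx n k" using aof_Idx[OF l] bof_Idx[OF l] a_def b_def by auto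
  have lab: "l = vlab a b" unfolding a_def b_def by simp
  have "(\<Sum>i<k. if a i = \<sigma> then T b (a(i := \<tau>)) else 0) - (\<Sum>i\<in>{k..<2*k}. if a i = \<tau> then T b (a(i := \<sigma>)) else 0) =
    (\<Sum>i<k. if b i = \<tau> then T (b(i := \<sigma>)) a else 0) - (\<Sum>i\<in>{k..<2*k}. if b i = \<sigma> then T (b(i := \<tau>)) a else 0)"
    using mc[OF t s] a b unfolding MC_def by blast
  then show "(\<Sum>x\<in>Pset k. if l x = \<sigma> then T (bof (l(x := \<tau>))) (aof (l(x := \<tau>))) else 0) =
       (\<Sum>y\<in>Qset k. if l y = \<tau> then T (bof (l(y := \<sigma>))) (aof (l(y := \<sigma>))) else 0)"
    unfolding lab SP[where t = "\<lambda>l. T (bof l) (aof l)"] SQ[where t = "\<lambda>l. T (bof l) (aof l)"] aof_vlab bof_vlab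
    by (simp add: algebra_simps)
qed

lemma chiL_canon:
  assumes d: "d \<in> WB k" and d0: "d0 \<in> WB k"
  shows "chiL k d (canon k d0) = (if d = d0 then 1 else 0)"
proof -
  have "along k d (canon k d0) \<longleftrightarrow> d = d0"
  proof
    assume al: "along k d (canon k d0)"
    have P: "d x = d0 x" if x: "x \<in> Pset k" for x
    proof -
      have xv: "x \<in> verts k" using Pset_verts[OF x] .
      have dx: "d x \<in> Qset k" using WB_PQ[OF d x] .
      have "canon k d0 (d x) = canon k d0 x" using al xv unfolding along_def by auto
      moreover have "d x \<notin> Pset k" using dx PQ_disj[of "d x" k] by blast
      ultimately have "snd (d0 (d x)) = snd x" using dx x unfolding canon_def by simp
      moreover have "d0 (d x) \<in> Pset k" using WB_QP[OF d0 dx] .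
      ultimately have "d0 (d x) = x" using inj_snd_P[of k] x by (auto dest: inj_onD)
      then show ?thesis using WB_invol[OF d0] by metis
    qed
    show "d = d0"
    proof
      fix x show "d x = d0 x"
      proof (cases "x \<in> verts k")
        case False then show ?thesis using WB_out d d0 by metis
      next
        case True
        then consider "x \<in> Pset k" | "x \<in> Qset k" using PQ_verts by blast
        then show ?thesis
        proof cases
          case 1 then show ?thesis using P by blast
        next
          case 2
          have "d (d x) = d0 (d x)" using P[OF WB_QP[OF d 2]] .
          then have "x = d0 (d x)" using WB_invol[OF d] by metis
          then show ?thesis using WB_invol[OF d0] by metis
        qed
      qed
    qed
  next
    assume "d = d0"
    show "along k d (canon k d0)" unfolding along_def
    proof
      fix x assume x: "x \<in> verts k"
      consider "x \<in> Pset k" | "x \<in> Qset k" using PQ_verts[OF x] by blast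
      then show "canon k d0 (d x) = canon k d0 x"
      proof cases
        case 1
        have "d x \<in> Qset k" using WB_PQ[OF d 1] .
        moreover have "d x \<notin> Pset k" using calculation PQ_disj[of "d x" k] by blast
        ultimately show ?thesis using 1 WB_invol[OF d0] \<open>d = d0\<close> unfolding canon_def by auto
      next
        case 2
        have "d x \<in> Pset k" using WB_QP[OF d 2] .
        moreover have "x \<notin> Pset k" using 2 PQ_disj[of x k] by blast
        ultimately show ?thesis using 2 \<open>d = d0\<close> unfolding canon_def by auto
      qed
    qed
  qed
  then show ?thesis unfolding chiL_def by simp
qed

lemma sum_ind_delta: "(c::nat) < n \<Longrightarrow> (\<Sum>s<n. f s * ind (P \<and> c = s)) = (if P then f c else (0::complex))"
proof -
  assume c: "c < n"
  have "(\<Sum>s<n. f s * ind (P \<and> c = s)) = (\<Sum>s<n. if c = s then (if P then f s else 0) else 0)"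
    unfolding ind_def by (intro sum.cong refl) auto
  also have "\<dots> = (if P then f c else 0)" using c by (subst sum.delta') auto
  finally show ?thesis .
qed

lemma glact_basis_decomp:
  assumes a: "a \<in> Idx n k"
  shows "glact_basis k n x a b = (\<Sum>r<n. \<Sum>s<n. x r s * glact_basis k n (gE r s) a b)"
proof -
  have ai: "i < 2*k \<Longrightarrow> a i < n" for i using a unfolding Idx_def by auto
  have "(\<Sum>r<n. \<Sum>s<n. x r s * glact_basis k n (gE r s) a b) =
     (\<Sum>r<n. \<Sum>s<n. (\<Sum>i<k. x r s * ind (b = a(i := r) \<and> a i = s)) - (\<Sum>i\<in>{k..<2*k}. x r s * ind (b = a(i := s) \<and> a i = r)))"
    by (intro sum.cong refl) (simp add: gb_simp right_diff_distrib sum_distrib_left)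
  also have "\<dots> = (\<Sum>r<n. \<Sum>s<n. \<Sum>i<k. x r s * ind (b = a(i := r) \<and> a i = s)) -
                  (\<Sum>r<n. \<Sum>s<n. \<Sum>i\<in>{k..<2*k}. x r s * ind (b = a(i := s) \<and> a i = r))"
    by (simp add: sum_subtractf)
  also have "\<dots> = (\<Sum>i<k. \<Sum>r<n. \<Sum>s<n. x r s * ind (b = a(i := r) \<and> a i = s)) -
                  (\<Sum>i\<in>{k..<2*k}. \<Sum>r<n. \<Sum>s<n. x r s * ind (b = a(i := s) \<and> a i = r))"
    by (simp only: sum.swap[of _ _ "{..<k}"] sum.swap[of _ _ "{k..<2*k}"])
  also have "\<dots> = (\<Sum>i<k. \<Sum>r<n. if b = a(i := r) then x r (a i) else 0) -
                  (\<Sum>i\<in>{k..<2*k}. \<Sum>r<n. if b = a(i := r) then x (a i) r else 0)"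
  proof -
    have "(\<Sum>r<n. \<Sum>s<n. x r s * ind (b = a(i := r) \<and> a i = s)) = (\<Sum>r<n. if b = a(i := r) then x r (a i) else 0)"
      if "i < k" for i
      using sum_ind_delta[OF ai, of i "x _" "b = a(i := _)"] that by (intro sum.cong refl) simp
    moreover have "(\<Sum>r<n. \<Sum>s<n. x r s * ind (b = a(i := s) \<and> a i = r)) = (\<Sum>r<n. if b = a(i := r) then x (a i) r else 0)"
      if "i \<in> {k..<2*k}" for i
    proof -
      have "(\<Sum>r<n. \<Sum>s<n. x r s * ind (b = a(i := s) \<and> a i = r)) = (\<Sum>s<n. \<Sum>r<n. x r s * ind (b = a(i := s) \<and> a i = r))"
        by (rule sum.swap)
      also have "\<dots> = (\<Sum>s<n. if b = a(i := s) then x (a i) s else 0)"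
        using sum_ind_delta[OF ai, of i "\<lambda>r. x r _" "b = a(i := _)"] that by (intro sum.cong refl) simp
      finally show ?thesis .
    qed
    ultimately show ?thesis by simp
  qed
  also have "\<dots> = glact_basis k n x a b" unfolding glact_basis_def by simp
  finally show ?thesis by simp
qed

lemma glact_decomp: "glact k n x v = (\<lambda>b. \<Sum>r<n. \<Sum>s<n. x r s * glact k n (gE r s) v b)"
proof
  fix b
  have "glact k n x v b = (\<Sum>a\<in>Idx n k. \<Sum>r<n. \<Sum>s<n. x r s * (v a * glact_basis k n (gE r s) a b))"
    unfolding glact_def by (intro sum.cong refl) (simp add: glact_basis_decomp sum_distrib_left mult_ac)
  also have "\<dots> = (\<Sum>r<n. \<Sum>s<n. \<Sum>a\<in>Idx n k. x r s * (v a * glact_basis k n (gE r s) a b))"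
    by (simp only: sum.swap[of _ "Idx n k"])
  also have "\<dots> = (\<Sum>r<n. \<Sum>s<n. x r s * glact k n (gE r s) v b)"
    unfolding glact_def by (simp add: sum_distrib_left)
  finally show "glact k n x v b = (\<Sum>r<n. \<Sum>s<n. x r s * glact k n (gE r s) v b)" .
qed

lemma opT_lin2: "opT n k T (\<lambda>b. \<Sum>r<m. \<Sum>s<m. c r s * w r s b) = (\<lambda>b. \<Sum>r<m. \<Sum>s<m. c r s * opT n k T (w r s) b)"
proof
  fix b
  show "opT n k T (\<lambda>b. \<Sum>r<m. \<Sum>s<m. c r s * w r s b) b = (\<Sum>r<m. \<Sum>s<m. c r s * opT n k T (w r s) b)"
  proof (cases "b \<in> Idx n k")
    case True
    have "opT n k T (\<lambda>b. \<Sum>r<m. \<Sum>s<m. c r s * w r s b) b = (\<Sum>a\<in>Idx n k. \<Sum>r<m. \<Sum>s<m. c r s * (T b a * w r s a))"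
      using True unfolding opT_def by (simp add: sum_distrib_left mult_ac)
    also have "\<dots> = (\<Sum>r<m. \<Sum>s<m. \<Sum>a\<in>Idx n k. c r s * (T b a * w r s a))"
      by (simp only: sum.swap[of _ "Idx n k"])
    also have "\<dots> = (\<Sum>r<m. \<Sum>s<m. c r s * opT n k T (w r s) b)"
      using True unfolding opT_def by (simp add: sum_distrib_left)
    finally show ?thesis .
  next
    case False then show ?thesis unfolding opT_def by simp
  qed
qed

lemma phi_dbas_opT: "d \<in> WB k \<Longrightarrow> phi k n (dbas d) = opT n k (\<lambda>b a. chi k d a b)"
  by (rule ext)+ (simp add: phi_dbas opT_def mult_ac)

lemma phi_equiv_dbas:
  assumes d: "d \<in> WB k"
  shows "phi k n (dbas d) (glact k n x v) = glact k n x (phi k n (dbas d) v)"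
proof -
  let ?T = "\<lambda>b a. chi k d a b"
  have mc: "MC n k ?T r s" if "r < n" "s < n" for r s
    using MC_of_star[OF star_chiL[OF d] that] unfolding chi_chiL by simp
  have "phi k n (dbas d) (glact k n x v) = opT n k ?T (\<lambda>b. \<Sum>r<n. \<Sum>s<n. x r s * glact k n (gE r s) v b)"
    unfolding phi_dbas_opT[OF d] glact_decomp[of k n x v] ..
  also have "\<dots> = (\<lambda>b. \<Sum>r<n. \<Sum>s<n. x r s * opT n k ?T (glact k n (gE r s) v) b)" by (rule opT_lin2)
  also have "\<dots> = (\<lambda>b. \<Sum>r<n. \<Sum>s<n. x r s * glact k n (gE r s) (opT n k ?T v) b)"
    using opT_glact[OF _ _ mc] by (intro ext sum.cong refl) simp
  also have "\<dots> = glact k n x (opT n k ?T v)" by (rule glact_decomp[symmetric])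
  finally show ?thesis unfolding phi_dbas_opT[OF d] .
qed

lemma phi_as_sum: "phi k n x v = (\<lambda>b. \<Sum>d\<in>WB k. x d * phi k n (dbas d) v b)"
proof
  fix b show "phi k n x v b = (\<Sum>d\<in>WB k. x d * phi k n (dbas d) v b)"
  proof (cases "b \<in> Idx n k")
    case True
    have "phi k n x v b = (\<Sum>a\<in>Idx n k. \<Sum>d\<in>WB k. x d * (chi k d a b * v a))"
      using True by (simp add: phi_alt sum_distrib_left sum_distrib_right mult_ac)
    also have "\<dots> = (\<Sum>d\<in>WB k. \<Sum>a\<in>Idx n k. x d * (chi k d a b * v a))" by (rule sum.swap)
    also have "\<dots> = (\<Sum>d\<in>WB k. x d * phi k n (dbas d) v b)"
      using True by (intro sum.cong refl) (simp add: phi_dbas sum_distrib_left)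
    finally show ?thesis .
  next
    case False then show ?thesis by (simp add: phi_alt phi_dbas)
  qed
qed

lemma glact_lin: "glact k n x (\<lambda>a. \<Sum>d\<in>S. c d * w d a) = (\<lambda>b. \<Sum>d\<in>S. c d * glact k n x (w d) b)"
proof
  fix b
  have "glact k n x (\<lambda>a. \<Sum>d\<in>S. c d * w d a) b = (\<Sum>a\<in>Idx n k. \<Sum>d\<in>S. c d * (w d a * glact_basis k n x a b))"
    unfolding glact_def by (simp add: sum_distrib_left sum_distrib_right mult_ac)
  also have "\<dots> = (\<Sum>d\<in>S. \<Sum>a\<in>Idx n k. c d * (w d a * glact_basis k n x a b))" by (rule sum.swap)
  also have "\<dots> = (\<Sum>d\<in>S. c d * glact k n x (w d) b)" unfolding glact_def by (simp add: sum_distrib_left)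
  finally show "glact k n x (\<lambda>a. \<Sum>d\<in>S. c d * w d a) b = (\<Sum>d\<in>S. c d * glact k n x (w d) b)" .
qed

lemma phi_equiv: "phi k n y (glact k n x v) = glact k n x (phi k n y v)"
proof -
  have "phi k n y (glact k n x v) = (\<lambda>b. \<Sum>d\<in>WB k. y d * glact k n x (phi k n (dbas d) v) b)"
    unfolding phi_as_sum[of k n y] using phi_equiv_dbas by (simp cong: sum.cong)
  also have "\<dots> = glact k n x (\<lambda>a. \<Sum>d\<in>WB k. y d * phi k n (dbas d) v a)" by (rule glact_lin[symmetric])
  also have "\<dots> = glact k n x (phi k n y v)" by (simp add: phi_as_sum[symmetric])
  finally show ?thesis .
qed

lemma phi_dlt: "a \<in> Idx n k \<Longrightarrow> b \<in> Idx n k \<Longrightarrow> phi k n x (dlt a) b = (\<Sum>d\<in>WB k. x d * chi k d a b)"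
  unfolding phi_alt dlt_def by (simp add: if_distrib[of "\<lambda>x. _ * x"] sum.delta cong: if_cong)

lemma phi_inj:
  assumes nk: "2*k \<le> n" and x: "x \<in> Alg k" and z: "\<And>v. v \<in> Mvec n k \<Longrightarrow> phi k n x v = (\<lambda>b. 0)"
  shows "x = (\<lambda>d. 0)"
proof
  fix d0 show "x d0 = 0"
  proof (cases "d0 \<in> WB k")
    case False then show ?thesis using x unfolding Alg_def by auto
  next
    case True
    define l0 where "l0 = canon k d0"
    have l0: "l0 \<in> Lab n k" unfolding l0_def using canon_Lab[OF True nk] .
    have a0: "aof l0 \<in> Idx n k" and b0: "bof l0 \<in> Idx n k" using aof_Idx[OF l0] bof_Idx[OF l0] by auto
    have "phi k n x (dlt (aof l0)) (bof l0) = (\<Sum>d\<in>WB k. x d * chiL k d l0)"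
      using phi_dlt[OF a0 b0] chi_chiL by simp
    also have "\<dots> = (\<Sum>d\<in>WB k. if d = d0 then x d else 0)"
      unfolding l0_def using chiL_canon[OF _ True] by (intro sum.cong refl) simp
    also have "\<dots> = x d0" using True by (simp add: sum.delta)
    finally show ?thesis using z[OF dlt_Mvec[OF a0]] by simp
  qed
qed

lemma represent:
  assumes nk: "2*k \<le> n"
    and FM: "\<And>v. v \<in> Mvec n k \<Longrightarrow> F v \<in> Mvec n k"
    and Fadd: "\<And>u w. u \<in> Mvec n k \<Longrightarrow> w \<in> Mvec n k \<Longrightarrow> F (\<lambda>a. u a + w a) = (\<lambda>b. F u b + F w b)"
    and Fsm: "\<And>c v. v \<in> Mvec n k \<Longrightarrow> F (\<lambda>a. c * v a) = (\<lambda>b. c * F v b)"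
    and Feq: "\<And>r s v. r < n \<Longrightarrow> s < n \<Longrightarrow> v \<in> Mvec n k \<Longrightarrow> F (glact k n (gE r s) v) = glact k n (gE r s) (F v)"
  shows "\<exists>x\<in>Alg k. \<forall>v\<in>Mvec n k. F v = phi k n x v"
proof -
  define T where "T b a = F (dlt a) b" for b a
  have zM: "(\<lambda>a. 0) \<in> Mvec n k" unfolding Mvec_def by simp
  have F0: "F (\<lambda>a. 0) = (\<lambda>b. 0)" using Fsm[OF zM, of 0] by simp
  have sumM: "(\<lambda>a'. \<Sum>a\<in>S. c a * dlt a a') \<in> Mvec n k" if "S \<subseteq> Idx n k" for S c
    using that unfolding Mvec_def dlt_def by (auto intro!: sum.neutral)
  have Fsum: "finite S \<Longrightarrow> S \<subseteq> Idx n k \<Longrightarrow> F (\<lambda>a'. \<Sum>a\<in>S. c a * dlt a a') = (\<lambda>b. \<Sum>a\<in>S. c a * F (dlt a) b)" for S c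
  proof (induction S rule: finite_induct)
    case empty then show ?case using F0 by simp
  next
    case (insert y S)
    have yM: "(\<lambda>a'. c y * dlt y a') \<in> Mvec n k" using dlt_Mvec[of y n k] insert.prems unfolding Mvec_def by auto
    have "F (\<lambda>a'. \<Sum>a\<in>insert y S. c a * dlt a a') = F (\<lambda>a'. c y * dlt y a' + (\<Sum>a\<in>S. c a * dlt a a'))"
      using insert by simp
    also have "\<dots> = (\<lambda>b. F (\<lambda>a'. c y * dlt y a') b + F (\<lambda>a'. \<Sum>a\<in>S. c a * dlt a a') b)"
      using Fadd[OF yM sumM[of S c]] insert.prems by simp
    also have "\<dots> = (\<lambda>b. \<Sum>a\<in>insert y S. c a * F (dlt a) b)"
      using Fsm[OF dlt_Mvec[of y n k]] insert by simp
    finally show ?case .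
  qed
  have FT: "F v = opT n k T v" if v: "v \<in> Mvec n k" for v
  proof -
    have "v = (\<lambda>a'. \<Sum>a\<in>Idx n k. v a * dlt a a')"
    proof
      fix a' show "v a' = (\<Sum>a\<in>Idx n k. v a * dlt a a')"
        using v unfolding Mvec_def dlt_def by (cases "a' \<in> Idx n k") (auto simp: if_distrib[of "\<lambda>x. _ * x"] sum.delta' cong: if_cong)
    qed
    then have "F v = (\<lambda>b. \<Sum>a\<in>Idx n k. v a * F (dlt a) b)" using Fsum[of "Idx n k" v] by simp
    moreover have "F v b = 0" if "b \<notin> Idx n k" for b using FM[OF v] that unfolding Mvec_def by auto
    ultimately show ?thesis unfolding opT_def T_def by (auto simp: fun_eq_iff mult_ac)
  qed
  have mc: "MC n k T r s" if r: "r < n" and s: "s < n" for r s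
  proof (rule MC_from_opT[OF r s])
    fix a assume a: "a \<in> Idx n k"
    have "opT n k T (glact k n (gE r s) (dlt a)) = F (glact k n (gE r s) (dlt a))" using FT[OF glact_Mvec] by simp
    also have "\<dots> = glact k n (gE r s) (F (dlt a))" using Feq[OF r s dlt_Mvec[OF a]] .
    also have "\<dots> = glact k n (gE r s) (opT n k T (dlt a))" using FT[OF dlt_Mvec[OF a]] by simp
    finally show "opT n k T (glact k n (gE r s) (dlt a)) = glact k n (gE r s) (opT n k T (dlt a))" .
  qed
  define t where "t l = T (bof l) (aof l)" for l
  have st: "star n k t" unfolding t_def by (rule star_of_MC[OF mc])
  define c where "c d = t (canon k d)" for d
  define t' where "t' l = t l - (\<Sum>d\<in>WB k. c d * chiL k d l)" for l
  have st': "star n k t'" unfolding t'_def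
    by (rule star_diff[OF st star_lin[OF finite_WB star_chiL]])
  have z: "t' (canon k d0) = 0" if d0: "d0 \<in> WB k" for d0
  proof -
    have "(\<Sum>d\<in>WB k. c d * chiL k d (canon k d0)) = (\<Sum>d\<in>WB k. if d = d0 then c d else 0)"
      using chiL_canon[OF _ d0] by (intro sum.cong refl) simp
    also have "\<dots> = c d0" using d0 by (simp add: sum.delta)
    finally show ?thesis unfolding t'_def c_def by simp
  qed
  interpret fft n k t' by unfold_locales (use nk st' in auto)
  have t'0: "l \<in> Lab n k \<Longrightarrow> t' l = 0" for l using fft_zero[OF z] by blast
  define x where "x d = (if d \<in> WB k then c d else 0)" for d
  have xA: "x \<in> Alg k" unfolding Alg_def x_def by auto
  have Tval: "T b a = (\<Sum>d\<in>WB k. x d * chi k d a b)" if a: "a \<in> Idx n k" and b: "b \<in> Idx n k" for a b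
  proof -
    have "T b a = t (vlab a b)" unfolding t_def by simp
    also have "\<dots> = (\<Sum>d\<in>WB k. c d * chiL k d (vlab a b))" using t'0[OF vlab_Lab[OF a b]] unfolding t'_def by simp
    also have "\<dots> = (\<Sum>d\<in>WB k. x d * chi k d a b)" unfolding x_def chi_chiL by (intro sum.cong refl) simp
    finally show ?thesis .
  qed
  have "\<forall>v\<in>Mvec n k. F v = phi k n x v"
  proof
    fix v assume v: "v \<in> Mvec n k"
    show "F v = phi k n x v" unfolding FT[OF v]
    proof
      fix b show "opT n k T v b = phi k n x v b"
        unfolding opT_def phi_alt using Tval by (auto intro!: sum.cong)
    qed
  qed
  then show ?thesis using xA by blast
qed

lemma pmap_add: "pmap k n j (\<lambda>b. u b + w b) = (\<lambda>b. pmap k n j u b + pmap k n j w b)"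
  by (rule ext) (simp add: pmap_alt sum.distrib distrib_left add_divide_distrib)

lemma pmap_smult: "pmap k n j (\<lambda>b. c * u b) = (\<lambda>b. c * pmap k n j u b)"
  by (rule ext) (simp add: pmap_alt sum_distrib_left mult_ac)

lemma eprod_add: "eprod k n m (\<lambda>b. u b + w b) = (\<lambda>b. eprod k n m u b + eprod k n m w b)"
proof (induction m arbitrary: u w)
  case 0 then show ?case by simp
next
  case (Suc m)
  have "eprod k n (Suc m) (\<lambda>b. u b + w b) = eprod k n m (\<lambda>b. (u b - pmap k n m u b) + (w b - pmap k n m w b))"
    by (simp add: pmap_add algebra_simps)
  also have "\<dots> = (\<lambda>b. eprod k n m (\<lambda>b. u b - pmap k n m u b) b + eprod k n m (\<lambda>b. w b - pmap k n m w b) b)"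
    by (rule Suc.IH)
  finally show ?case by simp
qed

lemma eprod_smult: "eprod k n m (\<lambda>b. c * u b) = (\<lambda>b. c * eprod k n m u b)"
proof (induction m arbitrary: u)
  case 0 then show ?case by simp
next
  case (Suc m)
  have "eprod k n (Suc m) (\<lambda>b. c * u b) = eprod k n m (\<lambda>b. c * (u b - pmap k n m u b))"
    by (simp add: pmap_smult algebra_simps)
  also have "\<dots> = (\<lambda>b. c * eprod k n m (\<lambda>b. u b - pmap k n m u b) b)" by (rule Suc.IH)
  finally show ?case by simp
qed

lemma emap_add: "emap k n (\<lambda>b. u b + w b) = (\<lambda>b. emap k n u b + emap k n w b)"
  unfolding emap_def by (rule eprod_add)

lemma emap_smult: "emap k n (\<lambda>b. c * u b) = (\<lambda>b. c * emap k n u b)"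
  unfolding emap_def by (rule eprod_smult)

lemma eprod_at: "(\<And>j. j < m \<Longrightarrow> b j \<noteq> b (k + j)) \<Longrightarrow> eprod k n m w b = w b"
proof (induction m arbitrary: w)
  case 0 then show ?case by simp
next
  case (Suc m)
  have "eprod k n (Suc m) w b = (\<lambda>b. w b - pmap k n m w b) b" using Suc by simp
  also have "\<dots> = w b" using Suc.prems[of m] by (simp add: pmap_alt)
  finally show ?case .
qed

lemma phi_sum_x: "phi k n (\<lambda>d'. \<Sum>i\<in>S. c i * f i d') v = (\<lambda>b. \<Sum>i\<in>S. c i * phi k n (f i) v b)"
proof
  fix b show "phi k n (\<lambda>d'. \<Sum>i\<in>S. c i * f i d') v b = (\<Sum>i\<in>S. c i * phi k n (f i) v b)"
  proof (cases "b \<in> Idx n k")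
    case True
    have "phi k n (\<lambda>d'. \<Sum>i\<in>S. c i * f i d') v b = (\<Sum>a\<in>Idx n k. \<Sum>d\<in>WB k. \<Sum>i\<in>S. c i * (f i d * chi k d a b * v a))"
      using True by (simp add: phi_alt sum_distrib_left sum_distrib_right mult_ac)
    also have "\<dots> = (\<Sum>i\<in>S. \<Sum>a\<in>Idx n k. \<Sum>d\<in>WB k. c i * (f i d * chi k d a b * v a))"
      by (simp only: sum.swap[of _ _ S])
    also have "\<dots> = (\<Sum>i\<in>S. c i * phi k n (f i) v b)"
      using True by (simp add: phi_alt sum_distrib_left sum_distrib_right mult_ac)
    finally show ?thesis .
  next
    case False then show ?thesis by (simp add: phi_alt)
  qed
qed

lemma phi_zero_x: "phi k n (\<lambda>d. 0) v = (\<lambda>b. 0)"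
  by (rule ext) (simp add: phi_alt)

lemma dmul_sum_right: "dmul k n x (\<lambda>d'. \<Sum>i\<in>S. c i * f i d') = (\<lambda>d. \<Sum>i\<in>S. c i * dmul k n x (f i) d)"
proof
  fix d
  have "dmul k n x (\<lambda>d'. \<Sum>i\<in>S. c i * f i d') d = (\<Sum>d1\<in>WB k. \<Sum>d2\<in>WB k. \<Sum>i\<in>S.
      c i * (if compose k d1 d2 = d then x d1 * f i d2 * of_nat n ^ cycles k d1 d2 else 0))"
    unfolding dmul_def by (intro sum.cong refl) (simp add: sum_distrib_left sum_distrib_right mult_ac)
  also have "\<dots> = (\<Sum>i\<in>S. \<Sum>d1\<in>WB k. \<Sum>d2\<in>WB k.
      c i * (if compose k d1 d2 = d then x d1 * f i d2 * of_nat n ^ cycles k d1 d2 else 0))"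
    by (simp only: sum.swap[of _ _ S])
  also have "\<dots> = (\<Sum>i\<in>S. c i * dmul k n x (f i) d)"
    unfolding dmul_def by (simp add: sum_distrib_left)
  finally show "dmul k n x (\<lambda>d'. \<Sum>i\<in>S. c i * f i d') d = (\<Sum>i\<in>S. c i * dmul k n x (f i) d)" .
qed

lemma dmul_sum_left: "dmul k n (\<lambda>d'. \<Sum>i\<in>S. c i * f i d') y = (\<lambda>d. \<Sum>i\<in>S. c i * dmul k n (f i) y d)"
proof
  fix d
  have "dmul k n (\<lambda>d'. \<Sum>i\<in>S. c i * f i d') y d = (\<Sum>d1\<in>WB k. \<Sum>d2\<in>WB k. \<Sum>i\<in>S.
      c i * (if compose k d1 d2 = d then f i d1 * y d2 * of_nat n ^ cycles k d1 d2 else 0))"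
    unfolding dmul_def by (intro sum.cong refl) (simp add: sum_distrib_left sum_distrib_right mult_ac)
  also have "\<dots> = (\<Sum>i\<in>S. \<Sum>d1\<in>WB k. \<Sum>d2\<in>WB k.
      c i * (if compose k d1 d2 = d then f i d1 * y d2 * of_nat n ^ cycles k d1 d2 else 0))"
    by (simp only: sum.swap[of _ _ S])
  also have "\<dots> = (\<Sum>i\<in>S. c i * dmul k n (f i) y d)"
    unfolding dmul_def by (simp add: sum_distrib_left)
  finally show "dmul k n (\<lambda>d'. \<Sum>i\<in>S. c i * f i d') y d = (\<Sum>i\<in>S. c i * dmul k n (f i) y d)" .
qed

lemma Alg_expand: "x \<in> Alg k \<Longrightarrow> x = (\<lambda>d'. \<Sum>d\<in>WB k. x d * dbas d d')"
proof
  fix d' assume x: "x \<in> Alg k"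
  have "(\<Sum>d\<in>WB k. x d * dbas d d') = (\<Sum>d\<in>WB k. if d' = d then x d else 0)"
    unfolding dbas_def by (intro sum.cong refl) auto
  also have "\<dots> = (if d' \<in> WB k then x d' else 0)" by (rule sum.delta') simp
  also have "\<dots> = x d'" using x unfolding Alg_def by auto
  finally show "x d' = (\<Sum>d\<in>WB k. x d * dbas d d')" by simp
qed

locale mainctx =
  fixes k n :: nat
  assumes nk: "2 * k \<le> n"
begin

abbreviation B where "B \<equiv> b_elem k n"
abbreviation bdb where "bdb d \<equiv> dmul k n (dmul k n B (dbas d)) B"

lemma phiB: "v \<in> Mvec n k \<Longrightarrow> phi k n B v = emap k n v"
proof (cases "k = 0")
  case True
  assume v: "v \<in> Mvec n k"
  have "B = dbas (idd k)" unfolding b_elem_def using True by simp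
  then show ?thesis using phi_idd[OF v] True unfolding emap_def by simp
next
  case False
  then have "0 < n" using nk by simp
  then show "v \<in> Mvec n k \<Longrightarrow> ?thesis" using phi_b by blast
qed

lemma emap_idem2: "emap k n (emap k n v) = emap k n v"
proof (cases "k = 0")
  case True then show ?thesis unfolding emap_def by simp
next
  case False then have "0 < n" using nk by simp
  then show ?thesis by (rule emap_idem)
qed

lemma eM_fix2: "v \<in> eM k n \<Longrightarrow> emap k n v = v"
  unfolding eM_def using emap_idem2 by auto

lemma eM_I: "v \<in> Mvec n k \<Longrightarrow> emap k n v = v \<Longrightarrow> v \<in> eM k n"
  unfolding eM_def by (metis image_eqI)

lemma emap_eM: "v \<in> Mvec n k \<Longrightarrow> emap k n v \<in> eM k n"
  unfolding eM_def by blast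

lemma eM_add: "u \<in> eM k n \<Longrightarrow> w \<in> eM k n \<Longrightarrow> (\<lambda>a. u a + w a) \<in> eM k n"
proof -
  assume u: "u \<in> eM k n" and w: "w \<in> eM k n"
  have "(\<lambda>a. u a + w a) \<in> Mvec n k" using eM_Mvec[OF u] eM_Mvec[OF w] unfolding Mvec_def by auto
  moreover have "emap k n (\<lambda>a. u a + w a) = (\<lambda>a. u a + w a)"
    using emap_add eM_fix2[OF u] eM_fix2[OF w] by simp
  ultimately show ?thesis by (rule eM_I)
qed

lemma eM_smult: "v \<in> eM k n \<Longrightarrow> (\<lambda>a. c * v a) \<in> eM k n"
proof -
  assume v: "v \<in> eM k n"
  have "(\<lambda>a. c * v a) \<in> Mvec n k" using eM_Mvec[OF v] unfolding Mvec_def by auto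
  moreover have "emap k n (\<lambda>a. c * v a) = (\<lambda>a. c * v a)"
    using emap_smult eM_fix2[OF v] by simp
  ultimately show ?thesis by (rule eM_I)
qed

lemma emap_equiv: "v \<in> Mvec n k \<Longrightarrow> emap k n (glact k n x v) = glact k n x (emap k n v)"
  using phiB[OF glact_Mvec] phiB phi_equiv by metis

lemma glact_eM: "v \<in> eM k n \<Longrightarrow> glact k n x v \<in> eM k n"
proof -
  assume v: "v \<in> eM k n"
  have "emap k n (glact k n x v) = glact k n x v"
    using emap_equiv[OF eM_Mvec[OF v]] eM_fix2[OF v] by simp
  then show ?thesis using glact_Mvec eM_I by blast
qed

lemma phi_bxb: "v \<in> Mvec n k \<Longrightarrow> phi k n (dmul k n (dmul k n B x) B) v = emap k n (phi k n x (emap k n v))"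
proof -
  assume v: "v \<in> Mvec n k"
  have "phi k n (dmul k n (dmul k n B x) B) v = phi k n B (phi k n x (phi k n B v))" by (simp add: phi_dmul)
  also have "\<dots> = emap k n (phi k n x (emap k n v))" using phiB[OF v] phiB[OF phi_Mvec] by simp
  finally show ?thesis .
qed

lemma phi_bxb_e: "v \<in> Mvec n k \<Longrightarrow> phi k n (dmul k n (dmul k n B x) B) v = phi k n (dmul k n (dmul k n B x) B) (emap k n v)"
  using phi_bxb emap_idem2 emap_Mvec by metis

lemma bBb_Alg: "\<beta> \<in> bBb k n \<Longrightarrow> \<beta> \<in> Alg k"
  unfolding bBb_def using dmul_Alg by auto

lemma bdb_forb: "d \<in> WB k \<Longrightarrow> has_forbidden k d \<Longrightarrow> bdb d = (\<lambda>d'. 0)"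
proof -
  assume d: "d \<in> WB k" and f: "has_forbidden k d"
  have "k \<noteq> 0" using f unfolding has_forbidden_def by auto
  then have n: "0 < n" using nk by simp
  show ?thesis
  proof (rule phi_inj[OF nk dmul_Alg])
    fix v assume v: "v \<in> Mvec n k"
    show "phi k n (bdb d) v = (\<lambda>b. 0)" using phi_bxb[OF v] forb_kill[OF d f n v] by simp
  qed
qed

definition NF where "NF = {d \<in> WB k. \<not> has_forbidden k d}"

lemma finite_NF: "finite NF" unfolding NF_def by simp

lemma NF_WB: "NF \<subseteq> WB k" unfolding NF_def by auto

lemma bBb_char: "bBb k n = {(\<lambda>d'. \<Sum>d\<in>NF. c d * bdb d d') | c. True}"
proof
  show "bBb k n \<subseteq> {(\<lambda>d'. \<Sum>d\<in>NF. c d * bdb d d') | c. True}"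
  proof
    fix \<beta> assume "\<beta> \<in> bBb k n"
    then obtain x where x: "x \<in> Alg k" "\<beta> = dmul k n (dmul k n B x) B" unfolding bBb_def by auto
    have "\<beta> = dmul k n (dmul k n B (\<lambda>d'. \<Sum>d\<in>WB k. x d * dbas d d')) B"
      using x Alg_expand[OF x(1)] by simp
    also have "\<dots> = (\<lambda>d'. \<Sum>d\<in>WB k. x d * bdb d d')"
      by (simp add: dmul_sum_right dmul_sum_left)
    also have "\<dots> = (\<lambda>d'. \<Sum>d\<in>NF. x d * bdb d d')"
    proof
      fix d'
      show "(\<Sum>d\<in>WB k. x d * bdb d d') = (\<Sum>d\<in>NF. x d * bdb d d')"
        by (rule sum.mono_neutral_right) (auto simp: NF_def bdb_forb)
    qed
    finally show "\<beta> \<in> {(\<lambda>d'. \<Sum>d\<in>NF. c d * bdb d d') | c. True}" by blast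
  qed
next
  show "{(\<lambda>d'. \<Sum>d\<in>NF. c d * bdb d d') | c. True} \<subseteq> bBb k n"
  proof
    fix \<beta> assume "\<beta> \<in> {(\<lambda>d'. \<Sum>d\<in>NF. c d * bdb d d') | c. True}"
    then obtain c where c: "\<beta> = (\<lambda>d'. \<Sum>d\<in>NF. c d * bdb d d')" by blast
    define x where "x = (\<lambda>d'. \<Sum>d\<in>NF. c d * dbas d d')"
    have xA: "x \<in> Alg k" unfolding x_def Alg_def dbas_def using NF_WB by (auto intro!: sum.neutral)
    have "dmul k n (dmul k n B x) B = \<beta>" unfolding x_def c by (simp add: dmul_sum_right dmul_sum_left)
    then show "\<beta> \<in> bBb k n" unfolding bBb_def using xA by blast
  qed
qed

lemma canon_pairs:
  assumes d0: "d0 \<in> NF" and j: "j < k"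
  shows "aof (canon k d0) j \<noteq> aof (canon k d0) (k + j)" "bof (canon k d0) j \<noteq> bof (canon k d0) (k + j)"
proof -
  have d: "d0 \<in> WB k" and nf: "\<not> has_forbidden k d0" using d0 unfolding NF_def by auto
  have P1: "(False, j) \<in> Pset k" and Q1: "(False, k + j) \<in> Qset k" and Q2: "(True, j) \<in> Qset k" and P2: "(True, k + j) \<in> Pset k"
    using j unfolding Pset_def Qset_def pol_def verts_iff by auto
  have nQ: "(False, k + j) \<notin> Pset k" "(True, j) \<notin> Pset k" using Q1 Q2 PQ_disj by blast+
  show "aof (canon k d0) j \<noteq> aof (canon k d0) (k + j)"
  proof
    assume "aof (canon k d0) j = aof (canon k d0) (k + j)"
    then have e: "snd (d0 (False, k + j)) = j" using P1 Q1 nQ unfolding aof_def canon_def by simp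
    have "d0 (False, k + j) \<in> Pset k" using WB_QP[OF d Q1] .
    then have "d0 (False, k + j) = (False, j)" using inj_onD[OF inj_snd_P[of k] _ _ P1] e by simp
    then have "d0 (False, j) = (False, k + j)" using WB_invol[OF d] by metis
    then show False using nf j unfolding has_forbidden_def by auto
  qed
  show "bof (canon k d0) j \<noteq> bof (canon k d0) (k + j)"
  proof
    assume "bof (canon k d0) j = bof (canon k d0) (k + j)"
    then have e: "snd (d0 (True, j)) = k + j" using P2 Q2 nQ unfolding bof_def canon_def by simp
    have "d0 (True, j) \<in> Pset k" using WB_QP[OF d Q2] .
    then have "d0 (True, j) = (True, k + j)" using inj_onD[OF inj_snd_P[of k] _ _ P2] e by simp
    then show False using nf j unfolding has_forbidden_def by auto
  qed
qed

lemma emap_dlt: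
  assumes a: "\<And>j. j < k \<Longrightarrow> a j \<noteq> a (k + j)"
  shows "emap k n (dlt a) = dlt a"
  unfolding emap_def
proof (rule eprod_fix)
  fix j assume j: "j < k"
  show "pmap k n j (dlt a) = (\<lambda>b. 0)"
  proof
    fix b
    have "dlt a (pr2 k j l b) = 0" for l
    proof -
      have "(pr2 k j l b) j = l" "(pr2 k j l b) (k + j) = l" unfolding pr2_def by auto
      then have "pr2 k j l b \<noteq> a" using a[OF j] by auto
      then show ?thesis unfolding dlt_def by simp
    qed
    then show "pmap k n j (dlt a) b = 0" by (simp add: pmap_alt)
  qed
qed

lemma bdb_eval:
  assumes d0: "d0 \<in> NF" and d: "d \<in> WB k"
  shows "phi k n (bdb d) (dlt (aof (canon k d0))) (bof (canon k d0)) = (if d = d0 then 1 else 0)"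
proof -
  let ?l = "canon k d0"
  have d0W: "d0 \<in> WB k" using d0 NF_WB by auto
  have l: "?l \<in> Lab n k" using canon_Lab[OF d0W nk] .
  have a0: "aof ?l \<in> Idx n k" and b0: "bof ?l \<in> Idx n k" using aof_Idx[OF l] bof_Idx[OF l] by auto
  have ea: "emap k n (dlt (aof ?l)) = dlt (aof ?l)" by (rule emap_dlt) (use canon_pairs(1)[OF d0] in auto)
  have "phi k n (bdb d) (dlt (aof ?l)) (bof ?l) = emap k n (phi k n (dbas d) (dlt (aof ?l))) (bof ?l)"
    using phi_bxb[OF dlt_Mvec[OF a0]] ea by simp
  also have "\<dots> = phi k n (dbas d) (dlt (aof ?l)) (bof ?l)"
    unfolding emap_def by (rule eprod_at) (use canon_pairs(2)[OF d0] in auto)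
  also have "\<dots> = chi k d (aof ?l) (bof ?l)"
    using phi_dlt[OF a0 b0, of "dbas d"] d by (simp add: dbas_def if_distrib[of "\<lambda>x. x * _"] sum.delta cong: if_cong)
  also have "\<dots> = (if d = d0 then 1 else 0)" using chi_chiL chiL_canon[OF d d0W] by simp
  finally show ?thesis .
qed

lemma indep:
  assumes z: "\<forall>d'. (\<Sum>d\<in>NF. c d * bdb d d') = 0"
  shows "\<forall>d\<in>NF. c d = 0"
proof
  fix d0 assume d0: "d0 \<in> NF"
  let ?l = "canon k d0"
  have zf: "(\<lambda>d'. \<Sum>d\<in>NF. c d * bdb d d') = (\<lambda>d'. 0)" using z by auto
  have "phi k n (\<lambda>d'. \<Sum>d\<in>NF. c d * bdb d d') (dlt (aof ?l)) (bof ?l) = (\<Sum>d\<in>NF. c d * (if d = d0 then 1 else 0))"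
    unfolding phi_sum_x using bdb_eval[OF d0] NF_WB by (intro sum.cong refl) auto
  also have "\<dots> = c d0" using d0 finite_NF by (simp add: sum.delta' if_distrib[of "\<lambda>x. _ * x"] cong: if_cong)
  finally show "c d0 = 0" using zf phi_zero_x by simp
qed

lemma inj_bdb: "inj_on bdb NF"
proof (rule inj_onI)
  fix d1 d2 assume d1: "d1 \<in> NF" and d2: "d2 \<in> NF" and e: "bdb d1 = bdb d2"
  show "d1 = d2"
  proof (rule ccontr)
    assume ne: "d1 \<noteq> d2"
    define c where "c d = (if d = d1 then 1 else if d = d2 then -1 else (0::complex))" for d
    have "\<forall>d'. (\<Sum>d\<in>NF. c d * bdb d d') = 0"
    proof
      fix d'
      have "(\<Sum>d\<in>NF. c d * bdb d d') = (\<Sum>d\<in>NF. (if d = d1 then bdb d d' else 0) - (if d = d2 then bdb d d' else 0))"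
        unfolding c_def using ne by (intro sum.cong refl) auto
      also have "\<dots> = bdb d1 d' - bdb d2 d'" using d1 d2 finite_NF by (simp add: sum_subtractf sum.delta)
      finally show "(\<Sum>d\<in>NF. c d * bdb d d') = 0" using e by simp
    qed
    then have "c d1 = 0" using indep d1 by blast
    then show False unfolding c_def by simp
  qed
qed

end

context mainctx
begin

lemma into_Endg: "\<beta> \<in> bBb k n \<Longrightarrow> restrict (phi k n \<beta>) (eM k n) \<in> Endg k n"
proof -
  assume "\<beta> \<in> bBb k n"
  then obtain x where x: "x \<in> Alg k" "\<beta> = dmul k n (dmul k n B x) B" unfolding bBb_def by auto
  let ?f = "restrict (phi k n \<beta>) (eM k n)"
  show ?thesis unfolding Endg_def
  proof (intro CollectI conjI ballI allI)
    show "?f \<in> extensional (eM k n)" by simp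
  next
    fix v assume v: "v \<in> eM k n"
    show "?f v \<in> eM k n" using v phi_bxb[OF eM_Mvec[OF v]] x(2) emap_eM[OF phi_Mvec] by simp
  next
    fix u v assume u: "u \<in> eM k n" and v: "v \<in> eM k n"
    show "?f (\<lambda>a. u a + v a) = (\<lambda>a. ?f u a + ?f v a)" using u v eM_add[OF u v] by (simp add: phi_add_v)
  next
    fix c v assume v: "v \<in> eM k n"
    show "?f (\<lambda>a. c * v a) = (\<lambda>a. c * ?f v a)" using v eM_smult[OF v] by (simp add: phi_smult_v)
  next
    fix y v assume v: "v \<in> eM k n"
    show "?f (glact k n y v) = glact k n y (?f v)" using v glact_eM[OF v] by (simp add: phi_equiv)
  qed
qed

lemma inj_Phi: "inj_on (\<lambda>\<beta>. restrict (phi k n \<beta>) (eM k n)) (bBb k n)"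
proof (rule inj_onI)
  fix \<beta>1 \<beta>2 assume b1: "\<beta>1 \<in> bBb k n" and b2: "\<beta>2 \<in> bBb k n"
    and e: "restrict (phi k n \<beta>1) (eM k n) = restrict (phi k n \<beta>2) (eM k n)"
  obtain x1 where x1: "x1 \<in> Alg k" "\<beta>1 = dmul k n (dmul k n B x1) B" using b1 unfolding bBb_def by auto
  obtain x2 where x2: "x2 \<in> Alg k" "\<beta>2 = dmul k n (dmul k n B x2) B" using b2 unfolding bBb_def by auto
  have eq: "phi k n \<beta>1 v = phi k n \<beta>2 v" if v: "v \<in> Mvec n k" for v
  proof -
    have ev: "emap k n v \<in> eM k n" using emap_eM[OF v] .
    have "phi k n \<beta>1 v = phi k n \<beta>1 (emap k n v)" using phi_bxb_e[OF v] x1 by simp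
    also have "\<dots> = phi k n \<beta>2 (emap k n v)" using fun_cong[OF e, of "emap k n v"] ev by simp
    also have "\<dots> = phi k n \<beta>2 v" using phi_bxb_e[OF v] x2 by simp
    finally show ?thesis .
  qed
  have "(\<lambda>d. \<beta>1 d - \<beta>2 d) \<in> Alg k" using bBb_Alg[OF b1] bBb_Alg[OF b2] unfolding Alg_def by auto
  moreover have "phi k n (\<lambda>d. \<beta>1 d - \<beta>2 d) v = (\<lambda>b. 0)" if "v \<in> Mvec n k" for v
    using eq[OF that] by (simp add: phi_diff_x)
  ultimately have "(\<lambda>d. \<beta>1 d - \<beta>2 d) = (\<lambda>d. 0)" using phi_inj[OF nk] by blast
  then show "\<beta>1 = \<beta>2" by (metis eq_iff_diff_eq_0 ext)
qed

lemma onto_Endg: "f \<in> Endg k n \<Longrightarrow> \<exists>\<beta>\<in>bBb k n. f = restrict (phi k n \<beta>) (eM k n)"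
proof -
  assume f: "f \<in> Endg k n"
  have fext: "f \<in> extensional (eM k n)" and fM: "\<And>v. v \<in> eM k n \<Longrightarrow> f v \<in> eM k n"
    and fadd: "\<And>u v. u \<in> eM k n \<Longrightarrow> v \<in> eM k n \<Longrightarrow> f (\<lambda>a. u a + v a) = (\<lambda>a. f u a + f v a)"
    and fsm: "\<And>c v. v \<in> eM k n \<Longrightarrow> f (\<lambda>a. c * v a) = (\<lambda>a. c * f v a)"
    and feq: "\<And>y v. v \<in> eM k n \<Longrightarrow> f (glact k n y v) = glact k n y (f v)"
    using f unfolding Endg_def by auto
  define F where "F v = f (emap k n v)" for v
  have FM: "F v \<in> Mvec n k" if "v \<in> Mvec n k" for v
    unfolding F_def using fM[OF emap_eM[OF that]] eM_Mvec by blast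
  have Fadd: "F (\<lambda>a. u a + w a) = (\<lambda>b. F u b + F w b)" if "u \<in> Mvec n k" "w \<in> Mvec n k" for u w
    unfolding F_def emap_add using fadd[OF emap_eM[OF that(1)] emap_eM[OF that(2)]] .
  have Fsm: "F (\<lambda>a. c * v a) = (\<lambda>b. c * F v b)" if "v \<in> Mvec n k" for c v
    unfolding F_def emap_smult using fsm[OF emap_eM[OF that]] .
  have Feq: "F (glact k n (gE r s) v) = glact k n (gE r s) (F v)" if "r < n" "s < n" "v \<in> Mvec n k" for r s v
    unfolding F_def using emap_equiv[OF that(3)] feq[OF emap_eM[OF that(3)]] by simp
  obtain x where x: "x \<in> Alg k" "\<forall>v\<in>Mvec n k. F v = phi k n x v"
    using represent[OF nk FM Fadd Fsm Feq] by blast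
  define \<beta> where "\<beta> = dmul k n (dmul k n B x) B"
  have \<beta>: "\<beta> \<in> bBb k n" unfolding bBb_def \<beta>_def using x(1) by blast
  have "f = restrict (phi k n \<beta>) (eM k n)"
  proof
    fix v show "f v = restrict (phi k n \<beta>) (eM k n) v"
    proof (cases "v \<in> eM k n")
      case False then show ?thesis using fext by (simp add: extensional_def)
    next
      case True
      have vM: "v \<in> Mvec n k" using eM_Mvec[OF True] .
      have "phi k n \<beta> v = emap k n (phi k n x (emap k n v))" unfolding \<beta>_def using phi_bxb[OF vM] .
      also have "\<dots> = emap k n (F (emap k n v))" using x(2) emap_Mvec[OF vM] by simp
      also have "\<dots> = emap k n (f v)" unfolding F_def using eM_fix2[OF True] by simp
      also have "\<dots> = f v" using eM_fix2[OF fM[OF True]] .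
      finally show ?thesis using True by simp
    qed
  qed
  then show ?thesis using \<beta> by blast
qed

lemma bij_Phi: "bij_betw (\<lambda>\<beta>. restrict (phi k n \<beta>) (eM k n)) (bBb k n) (Endg k n)"
  unfolding bij_betw_def
proof
  show "inj_on (\<lambda>\<beta>. restrict (phi k n \<beta>) (eM k n)) (bBb k n)" by (rule inj_Phi)
  show "(\<lambda>\<beta>. restrict (phi k n \<beta>) (eM k n)) ` bBb k n = Endg k n"
    using into_Endg onto_Endg by blast
qed

end

theorem proposition3p3:
  fixes k n :: nat
  assumes "2 * k \<le> n"
  shows "bij_betw (\<lambda>\<beta>. restrict (phi k n \<beta>) (eM k n)) (bBb k n) (Endg k n)
   \<and> (\<forall>\<beta>1\<in>bBb k n. \<forall>\<beta>2\<in>bBb k n.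
        restrict (phi k n (dmul k n \<beta>1 \<beta>2)) (eM k n) = restrict (phi k n \<beta>1 \<circ> phi k n \<beta>2) (eM k n))
   \<and> (\<forall>\<beta>1\<in>bBb k n. \<forall>\<beta>2\<in>bBb k n.
        restrict (phi k n (\<lambda>d. \<beta>1 d + \<beta>2 d)) (eM k n)
          = restrict (\<lambda>v a. phi k n \<beta>1 v a + phi k n \<beta>2 v a) (eM k n))
   \<and> (\<forall>c. \<forall>\<beta>\<in>bBb k n.
        restrict (phi k n (\<lambda>d. c * \<beta> d)) (eM k n) = restrict (\<lambda>v a. c * phi k n \<beta> v a) (eM k n))
   \<and> restrict (phi k n (b_elem k n)) (eM k n) = restrict id (eM k n)
   \<and> inj_on (\<lambda>d. dmul k n (dmul k n (b_elem k n) (dbas d)) (b_elem k n))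
        {d \<in> WB k. \<not> has_forbidden k d}
   \<and> (\<forall>c. (\<forall>d'. (\<Sum>d\<in>{d \<in> WB k. \<not> has_forbidden k d}.
              c d * dmul k n (dmul k n (b_elem k n) (dbas d)) (b_elem k n) d') = 0)
          \<longrightarrow> (\<forall>d\<in>{d \<in> WB k. \<not> has_forbidden k d}. c d = 0))
   \<and> bBb k n = {(\<lambda>d'. \<Sum>d\<in>{d \<in> WB k. \<not> has_forbidden k d}.
              c d * dmul k n (dmul k n (b_elem k n) (dbas d)) (b_elem k n) d') | c. True}"
proof -
  interpret mainctx k n by unfold_locales (rule assms)
  have NFe: "{d \<in> WB k. \<not> has_forbidden k d} = NF" unfolding NF_def ..
  have p2: "\<forall>\<beta>1\<in>bBb k n. \<forall>\<beta>2\<in>bBb k n.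
        restrict (phi k n (dmul k n \<beta>1 \<beta>2)) (eM k n) = restrict (phi k n \<beta>1 \<circ> phi k n \<beta>2) (eM k n)"
    by (intro ballI restrict_ext) (simp add: phi_dmul)
  have p3: "\<forall>\<beta>1\<in>bBb k n. \<forall>\<beta>2\<in>bBb k n.
        restrict (phi k n (\<lambda>d. \<beta>1 d + \<beta>2 d)) (eM k n)
          = restrict (\<lambda>v a. phi k n \<beta>1 v a + phi k n \<beta>2 v a) (eM k n)"
    by (intro ballI restrict_ext) (simp add: phi_add_x)
  have p4: "\<forall>c. \<forall>\<beta>\<in>bBb k n.
        restrict (phi k n (\<lambda>d. c * \<beta> d)) (eM k n) = restrict (\<lambda>v a. c * phi k n \<beta> v a) (eM k n)"
    by (intro allI ballI restrict_ext) (simp add: phi_smult_x)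
  have p5: "restrict (phi k n (b_elem k n)) (eM k n) = restrict id (eM k n)"
    by (rule restrict_ext) (simp add: phiB eM_Mvec eM_fix2)
  show ?thesis unfolding NFe
    using bij_Phi p2 p3 p4 p5 inj_bdb indep bBb_char by blast
qed

end
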